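(* Let $C_3$ be the quotient of the group algebra $\mathbb{Q}(t_0,t_1)[B_3]$ by the two-sided ideal generated by the elements \[ s_k^2+(1-t_0-t_1)s_k+(t_0t_1-t_0-t_1)\cdot1+t_0t_1\,\overline{s}_k\quad(k=1,2) \] and \[ \overline{s}_is_js_i-s_is_j\overline{s}_i-\overline{s}_i\overline{s}_js_i+s_i\overline{s}_j\overline{s}_i-\big(s_is_j-s_i\overline{s}_j-\overline{s}_is_j+\overline{s}_i\overline{s}_j-s_js_i+s_j\overline{s}_i+\overline{s}_js_i-\overline{s}_j\overline{s}_i\big)\quad((i,j)=(1,2),(2,1)). \] Let $x$ be either $\overline{s}_1s_2\overline{s}_1$ or $s_1\overline{s}_2s_1$. Then the images in $C_3$ of \[ 1,\ s_1,\ \overline{s}_1,\ s_2,\ \overline{s}_2,\ s_2s_1,\ s_2\overline{s}_1,\ \overline{s}_2s_1,\ \overline{s}_2\overline{s}_1,\ s_1s_2,\ \overline{s}_1s_2,\ s_1\overline{s}_2,\ \overline{s}_1\overline{s}_2,\ s_1s_2s_1,\ s_1s_2\overline{s}_1,\ s_1\overline{s}_2\overline{s}_1,\ \overline{s}_1\overline{s}_2s_1,\ \overline{s}_1\overline{s}_2\overline{s}_1,\ x,\ \overline{s}_2s_1\overline{s}_2 \] form a $\mathbb{Q}(t_0,t_1)$-basis of $C_3$. In particular $\dim_{\mathbb{Q}(t_0,t_1)}C_3=20$.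
   Context: $B_3$ is the braid group with standard generators $s_1,s_2$ (relation $s_1s_2s_1=s_2s_1s_2$) and $\overline{s}_k=s_k^{-1}$. *)

theory Defs
  imports "HOL-Library.Poly_Mapping" "HOL-Computational_Algebra.Fraction_Field"
          "HOL-Computational_Algebra.Polynomial"
begin

datatype gen3 = G1 | G2

text \<open>A letter (g, True) is the generator s_g, (g, False) its inverse.\<close>
type_synonym bword = "(gen3 \<times> bool) list"

inductive braid_eq :: "bword \<Rightarrow> bword \<Rightarrow> bool" where
  refl: "braid_eq u u"
| sym: "braid_eq u v \<Longrightarrow> braid_eq v u"
| trans: "braid_eq u v \<Longrightarrow> braid_eq v w \<Longrightarrow> braid_eq u w"
| cancel: "braid_eq (u @ [(g, e), (g, \<not> e)] @ v) (u @ v)"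
| braid: "braid_eq (u @ [(G1, True), (G2, True), (G1, True)] @ v)
                    (u @ [(G2, True), (G1, True), (G2, True)] @ v)"

lemma braid_eq_equivp: "equivp braid_eq"
  by (intro equivpI reflpI sympI transpI) (auto intro: braid_eq.intros)

lemma braid_eq_append_right: "braid_eq u v \<Longrightarrow> braid_eq (u @ w) (v @ w)"
proof (induction rule: braid_eq.induct)
  case (cancel u g e v) then show ?case using braid_eq.cancel[of u g e "v @ w"] by simp
next
  case (braid u v) then show ?case using braid_eq.braid[of u "v @ w"] by simp
qed (auto intro: braid_eq.intros)

lemma braid_eq_append_left: "braid_eq u v \<Longrightarrow> braid_eq (w @ u) (w @ v)"
proof (induction rule: braid_eq.induct)
  case (cancel u g e v) then show ?case using braid_eq.cancel[of "w @ u" g e v] by simp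
next
  case (braid u v) then show ?case using braid_eq.braid[of "w @ u" v] by simp
qed (auto intro: braid_eq.intros)

quotient_type braid3 = bword / braid_eq
  by (rule braid_eq_equivp)

text \<open>The group operation of B_3 is written additively (concatenation of words), so that
  the monoid algebra (B_3 =>0 K) of Poly_Mapping is the group algebra K[B_3].\<close>

instantiation braid3 :: monoid_add
begin

lift_definition zero_braid3 :: braid3 is "[]" .

lift_definition plus_braid3 :: "braid3 \<Rightarrow> braid3 \<Rightarrow> braid3" is "(@)"
  by (meson braid_eq.trans braid_eq_append_left braid_eq_append_right)

instance
  by standard (transfer; simp add: braid_eq.refl)+

end

definition bgen :: "gen3 \<Rightarrow> bool \<Rightarrow> braid3" where
  "bgen g e = abs_braid3 [(g, e)]"

text \<open>Q(t_0,t_1) is the fraction field of Q[t_1][t_0] (bivariate polynomials, t_0 inner).\<close>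
type_synonym QT = "rat poly poly fract"

definition t0 :: QT where "t0 = Fraction_Field.Fract [:[:0, 1:]:] 1"
definition t1 :: QT where "t1 = Fraction_Field.Fract [:0, 1:] 1"

type_synonym alg3 = "braid3 \<Rightarrow>\<^sub>0 QT"

definition scal :: "QT \<Rightarrow> alg3" where "scal c = Poly_Mapping.single 0 c"
definition grp :: "braid3 \<Rightarrow> alg3" where "grp b = Poly_Mapping.single b 1"

definition sg :: "gen3 \<Rightarrow> alg3" where "sg g = grp (bgen g True)"
definition sgb :: "gen3 \<Rightarrow> alg3" where "sgb g = grp (bgen g False)"

inductive_set two_sided_ideal :: "'a::ring_1 set \<Rightarrow> 'a set" for R where
  gen: "r \<in> R \<Longrightarrow> r \<in> two_sided_ideal R"
| zero: "0 \<in> two_sided_ideal R"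
| add: "a \<in> two_sided_ideal R \<Longrightarrow> b \<in> two_sided_ideal R \<Longrightarrow> a + b \<in> two_sided_ideal R"
| mult: "a \<in> two_sided_ideal R \<Longrightarrow> x * a * y \<in> two_sided_ideal R"

definition quad_rel :: "gen3 \<Rightarrow> alg3" where
  "quad_rel k = sg k * sg k + scal (1 - t0 - t1) * sg k + scal (t0 * t1 - t0 - t1)
               + scal (t0 * t1) * sgb k"

definition cub_rel :: "gen3 \<Rightarrow> gen3 \<Rightarrow> alg3" where
  "cub_rel i j =
     sgb i * sg j * sg i - sg i * sg j * sgb i - sgb i * sgb j * sg i + sg i * sgb j * sgb i
     - (sg i * sg j - sg i * sgb j - sgb i * sg j + sgb i * sgb j
        - sg j * sg i + sg j * sgb i + sgb j * sg i - sgb j * sgb i)"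

definition C3_ideal :: "alg3 set" where
  "C3_ideal = two_sided_ideal ({quad_rel G1, quad_rel G2} \<union> {cub_rel G1 G2, cub_rel G2 G1})"

definition C3_basis :: "alg3 \<Rightarrow> alg3 list" where
  "C3_basis x =
    [1, sg G1, sgb G1, sg G2, sgb G2,
     sg G2 * sg G1, sg G2 * sgb G1, sgb G2 * sg G1, sgb G2 * sgb G1,
     sg G1 * sg G2, sgb G1 * sg G2, sg G1 * sgb G2, sgb G1 * sgb G2,
     sg G1 * sg G2 * sg G1, sg G1 * sg G2 * sgb G1, sg G1 * sgb G2 * sgb G1,
     sgb G1 * sgb G2 * sg G1, sgb G1 * sgb G2 * sgb G1,
     x, sgb G2 * sg G1 * sgb G2]"

end

theory Submission
  imports Defs
begin

lemma t0_nz: "t0 \<noteq> 0"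
  by (simp add: t0_def Zero_fract_def eq_fract)
lemma t1_nz: "t1 \<noteq> 0"
  by (simp add: t1_def Zero_fract_def eq_fract)

type_synonym mono = "(int \<times> int) \<times> int"
type_synonym lp = "mono list"

fun mon :: "mono \<Rightarrow> QT" where
  "mon ((i,j),c) = of_int c * power_int t0 i * power_int t1 j"

definition ev :: "lp \<Rightarrow> QT" where "ev p = sum_list (map mon p)"

definition mless :: "int \<times> int \<Rightarrow> int \<times> int \<Rightarrow> bool" where
  "mless m n = (fst m < fst n \<or> (fst m = fst n \<and> snd m < snd n))"

fun ins_mono :: "(int \<times> int) \<Rightarrow> int \<Rightarrow> lp \<Rightarrow> lp" where
  "ins_mono m c [] = (if c = 0 then [] else [(m,c)])"
| "ins_mono m c ((m',c') # p) =
     (if m = m' then (if c + c' = 0 then p else (m, c + c') # p)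
      else if mless m m' then (if c = 0 then (m',c') # p else (m,c) # (m',c') # p)
      else (m',c') # ins_mono m c p)"

definition lp_norm :: "lp \<Rightarrow> lp" where
  "lp_norm p = foldr (\<lambda>x acc. ins_mono (fst x) (snd x) acc) p []"

fun mmul :: "mono \<Rightarrow> mono \<Rightarrow> mono" where
  "mmul ((i,j),c) ((k,l),d) = ((i+k,j+l), c*d)"

definition lp_mul :: "lp \<Rightarrow> lp \<Rightarrow> lp" where
  "lp_mul p q = lp_norm (concat (map (\<lambda>x. map (mmul x) q) p))"

definition lp_add :: "lp \<Rightarrow> lp \<Rightarrow> lp" where
  "lp_add p q = lp_norm (p @ q)"

lemma mon_add: "mon (m, c) + mon (m, d) = mon (m, c + d)"
  by (cases m) (simp add: algebra_simps)

lemma mon_zero: "mon (m, 0) = 0"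
  by (cases m) simp

lemma ev_ins: "ev (ins_mono m c p) = mon (m,c) + ev p"
proof (induction p)
  case Nil then show ?case by (simp add: ev_def mon_zero)
next
  case (Cons a p)
  obtain m' c' where a: "a = (m',c')" by (cases a)
  show ?case
  proof (cases "m = m'")
    case True
    then show ?thesis using a mon_add[of m c c'] mon_zero[of m]
      by (auto simp: ev_def algebra_simps)
  next
    case False
    then show ?thesis using a Cons mon_zero[of m]
      by (auto simp: ev_def algebra_simps)
  qed
qed

lemma ev_Cons: "ev (a # p) = mon a + ev p" by (simp add: ev_def)

lemma ev_norm: "ev (lp_norm p) = ev p"
proof (induction p)
  case Nil then show ?case by (simp add: lp_norm_def ev_def)
next
  case (Cons a p)
  then show ?case by (cases a) (simp add: lp_norm_def ev_ins ev_Cons)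
qed

lemma ev_append: "ev (p @ q) = ev p + ev q"
  by (simp add: ev_def)

lemma ev_add: "ev (lp_add p q) = ev p + ev q"
  by (simp add: lp_add_def ev_norm ev_append)

lemma mon_mmul: "mon (mmul x y) = mon x * mon y"
proof -
  obtain i j c where x: "x = ((i,j),c)" by (metis prod.collapse)
  obtain k l d where y: "y = ((k,l),d)" by (metis prod.collapse)
  show ?thesis using t0_nz t1_nz
    by (simp add: x y power_int_add algebra_simps)
qed

lemma ev_mul: "ev (lp_mul p q) = ev p * ev q"
proof -
  have "ev (concat (map (\<lambda>x. map (mmul x) q) p)) = ev p * ev q"
  proof (induction p)
    case Nil then show ?case by (simp add: ev_def)
  next
    case (Cons a p)
    have "ev (map (mmul a) q) = mon a * ev q"
      by (induction q) (simp_all add: ev_def mon_mmul algebra_simps)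
    then show ?case using Cons by (simp add: ev_append algebra_simps ev_def)
  qed
  then show ?thesis by (simp add: lp_mul_def ev_norm)
qed

lemma ev_Nil[simp]: "ev [] = 0" by (simp add: ev_def)
lemma ev_one: "ev [((0,0),1)] = 1" by (simp add: ev_def)

lemma ev_nz_mono: "c \<noteq> 0 \<Longrightarrow> ev [((i,j),c)] \<noteq> 0"
  using t0_nz t1_nz by (simp add: ev_def)

fun lp_merge :: "lp \<Rightarrow> lp \<Rightarrow> lp" where
  "lp_merge [] q = q"
| "lp_merge p [] = p"
| "lp_merge ((m,c)#p) ((m',c')#q) =
    (if m = m' then (if c + c' = 0 then lp_merge p q else (m, c + c') # lp_merge p q)
     else if mless m m' then (m,c) # lp_merge p ((m',c')#q)
     else (m',c') # lp_merge ((m,c)#p) q)"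

lemma ev_merge: "ev (lp_merge p q) = ev p + ev q"
proof (induction p q rule: lp_merge.induct)
  case (3 m c p m' c' q)
  show ?case
  proof (cases "m = m'")
    case True
    then show ?thesis using 3 mon_add[of m c c'] mon_zero[of m]
      by (auto simp: ev_Cons algebra_simps)
  next
    case False
    then show ?thesis using 3 by (auto simp: ev_Cons algebra_simps)
  qed
qed (simp_all)

definition lp_mulm :: "lp \<Rightarrow> lp \<Rightarrow> lp" where
  "lp_mulm p q = foldr (\<lambda>x acc. lp_merge (map (mmul x) q) acc) p []"

lemma ev_map_mmul: "ev (map (mmul x) q) = mon x * ev q"
  by (induction q) (simp_all add: ev_Cons mon_mmul algebra_simps)

lemma ev_mulm: "ev (lp_mulm p q) = ev p * ev q"
  by (induction p) (simp_all add: lp_mulm_def ev_merge ev_map_mmul ev_Cons algebra_simps)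

type_synonym V = "nat \<Rightarrow> QT"
type_synonym cols = "gen3 \<Rightarrow> bool \<Rightarrow> lp list list"

definition lone :: lp where "lone = [((0,0),1)]"
lemma ev_lone: "ev lone = 1" by (simp add: lone_def ev_def)

definition evv :: "lp list \<Rightarrow> V" where
  "evv xs k = (if k < length xs then ev (xs ! k) else 0)"

definition vadd :: "lp list \<Rightarrow> lp list \<Rightarrow> lp list" where
  "vadd xs ys = map2 lp_merge xs ys"
definition vsmul :: "lp \<Rightarrow> lp list \<Rightarrow> lp list" where
  "vsmul c xs = map (lp_mulm c) xs"
definition zero20 :: "lp list" where "zero20 = replicate 20 []"
definition unitL :: "nat \<Rightarrow> lp list" where
  "unitL i = map (\<lambda>k. if k = i then lone else []) [0..<20]"

lemma length_vadd[simp]: "length (vadd xs ys) = min (length xs) (length ys)"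
  by (simp add: vadd_def)
lemma length_vsmul[simp]: "length (vsmul c xs) = length xs"
  by (simp add: vsmul_def)
lemma length_zero20[simp]: "length zero20 = 20" by (simp add: zero20_def)
lemma length_unitL[simp]: "length (unitL i) = 20" by (simp add: unitL_def)

lemma evv_vadd: "length xs = length ys \<Longrightarrow> evv (vadd xs ys) k = evv xs k + evv ys k"
  by (simp add: evv_def vadd_def ev_merge)
lemma evv_vsmul: "evv (vsmul c xs) k = ev c * evv xs k"
  by (simp add: evv_def vsmul_def ev_mulm)
lemma evv_zero20: "evv zero20 k = 0"
  by (simp add: evv_def zero20_def)

definition ee :: "nat \<Rightarrow> V" where "ee i = (\<lambda>k. if k = i then 1 else 0)"

lemma evv_unitL: "i < 20 \<Longrightarrow> evv (unitL i) = ee i"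
  by (auto simp: evv_def unitL_def ee_def ev_lone fun_eq_iff)

definition wf1 :: "lp list list \<Rightarrow> bool" where
  "wf1 cs = (length cs = 20 \<and> list_all (\<lambda>c. length c = 20) cs)"

definition wfc :: "cols \<Rightarrow> bool" where
  "wfc C = (wf1 (C G1 True) \<and> wf1 (C G1 False) \<and> wf1 (C G2 True) \<and> wf1 (C G2 False))"

lemma wfcD: "wfc C \<Longrightarrow> length (C g e) = 20 \<and> (\<forall>c\<in>set (C g e). length c = 20)"
  by (cases g; cases e) (auto simp: wfc_def wf1_def list_all_iff)

definition trunc :: "V \<Rightarrow> V" where "trunc v = (\<lambda>k. if k < 20 then v k else 0)"

definition act :: "cols \<Rightarrow> gen3 \<Rightarrow> bool \<Rightarrow> V \<Rightarrow> V" where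
  "act C g e v = (\<lambda>k. if k < 20 then (\<Sum>i<20. v i * evv (C g e ! i) k) else 0)"

fun Rw :: "cols \<Rightarrow> bword \<Rightarrow> V \<Rightarrow> V" where
  "Rw C [] v = trunc v"
| "Rw C ((g,e) # w) v = act C g e (Rw C w v)"

definition actL :: "cols \<Rightarrow> gen3 \<Rightarrow> bool \<Rightarrow> lp list \<Rightarrow> lp list" where
  "actL C g e xs = foldr (\<lambda>xc acc. if fst xc = [] then acc else vadd (vsmul (fst xc) (snd xc)) acc)
      (zip xs (C g e)) zero20"

fun RwL :: "cols \<Rightarrow> bword \<Rightarrow> lp list \<Rightarrow> lp list" where
  "RwL C [] xs = xs"
| "RwL C ((g,e) # w) xs = actL C g e (RwL C w xs)"

lemma foldr_zip:
  assumes "length xs = length cs" "\<forall>c\<in>set cs. length c = 20"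
  shows "length (foldr (\<lambda>xc acc. if fst xc = [] then acc else vadd (vsmul (fst xc) (snd xc)) acc) (zip xs cs) zero20) = 20
     \<and> (\<forall>k. evv (foldr (\<lambda>xc acc. if fst xc = [] then acc else vadd (vsmul (fst xc) (snd xc)) acc) (zip xs cs) zero20) k
        = (\<Sum>i<length xs. ev (xs ! i) * evv (cs ! i) k))"
  using assms
proof (induction xs cs rule: list_induct2)
  case Nil then show ?case by (simp add: evv_zero20)
next
  case (Cons x xs c cs)
  then show ?case
    by (auto simp: evv_vadd evv_vsmul sum.lessThan_Suc_shift simp del: sum.lessThan_Suc)
qed

lemma actL_len: "wfc C \<Longrightarrow> length xs = 20 \<Longrightarrow> length (actL C g e xs) = 20"
  using foldr_zip[of xs "C g e"] wfcD[of C g e] by (simp add: actL_def)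

lemma actL_sound: "wfc C \<Longrightarrow> length xs = 20 \<Longrightarrow> evv (actL C g e xs) = act C g e (evv xs)"
proof
  fix k assume w: "wfc C" and l: "length xs = 20"
  then have "evv (actL C g e xs) k = (\<Sum>i<20. ev (xs ! i) * evv (C g e ! i) k)"
    using foldr_zip[of xs "C g e"] wfcD[of C g e] by (simp add: actL_def)
  moreover have "k \<ge> 20 \<Longrightarrow> evv (actL C g e xs) k = 0"
    using actL_len[OF w l] by (simp add: evv_def)
  ultimately show "evv (actL C g e xs) k = act C g e (evv xs) k"
    using l by (auto simp: act_def evv_def)
qed

lemma RwL_len: "wfc C \<Longrightarrow> length xs = 20 \<Longrightarrow> length (RwL C w xs) = 20"
  by (induction w) (auto simp: actL_len)

lemma trunc_evv: "length xs = 20 \<Longrightarrow> trunc (evv xs) = evv xs"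
  by (auto simp: trunc_def evv_def fun_eq_iff)

lemma RwL_sound: "wfc C \<Longrightarrow> length xs = 20 \<Longrightarrow> evv (RwL C w xs) = Rw C w (evv xs)"
proof (induction w)
  case Nil then show ?case by (simp add: trunc_evv)
next
  case (Cons a w)
  obtain g e where a: "a = (g,e)" by (cases a)
  show ?case using Cons by (simp add: a actL_sound RwL_len)
qed

lemma Rw_lin: "Rw C w v k = (\<Sum>i<20. v i * Rw C w (ee i) k)"
proof (induction w arbitrary: k)
  case Nil
  show ?case
  proof (cases "k < 20")
    case True
    have "(\<Sum>i<20. v i * trunc (ee i) k) = (\<Sum>i<20. if i = k then v k else 0)"
      by (rule sum.cong) (auto simp: trunc_def ee_def True)
    then show ?thesis using True by (simp add: trunc_def)
  next
    case False then show ?thesis by (simp add: trunc_def)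
  qed
next
  case (Cons a w)
  obtain g e where a: "a = (g,e)" by (cases a)
  have "Rw C (a # w) v k = (if k < 20 then (\<Sum>j<20. (\<Sum>i<20. v i * Rw C w (ee i) j) * evv (C g e ! j) k) else 0)"
    using Cons by (simp add: a act_def)
  also have "\<dots> = (\<Sum>i<20. v i * Rw C (a # w) (ee i) k)"
    by (auto simp: a act_def sum_distrib_left sum_distrib_right mult.assoc intro: sum.swap)
  finally show ?case .
qed

definition chk1 :: "cols \<Rightarrow> (lp \<times> bword) list \<Rightarrow> lp list \<Rightarrow> bool" where
  "chk1 C ops u = list_all (\<lambda>p. p = [])
       (foldr (\<lambda>cw acc. vadd (vsmul (fst cw) (RwL C (snd cw) u)) acc) ops zero20)"

fun chk_list :: "cols \<Rightarrow> (lp \<times> bword) list \<Rightarrow> lp list list \<Rightarrow> bool" where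
  "chk_list C ops [] = True"
| "chk_list C ops (u # us) = (chk1 C ops u \<and> chk_list C ops us)"

definition units20 :: "lp list list" where "units20 = map unitL [0..<20]"

definition chk :: "cols \<Rightarrow> (lp \<times> bword) list \<Rightarrow> bool" where
  "chk C ops = chk_list C ops units20"

lemma chk_list_iff: "chk_list C ops us = (\<forall>u\<in>set us. chk1 C ops u)"
  by (induction us) auto

lemma chk_foldr:
  assumes "wfc C" "length u = 20"
  shows "length (foldr (\<lambda>cw acc. vadd (vsmul (fst cw) (RwL C (snd cw) u)) acc) ops zero20) = 20
    \<and> (\<forall>k. evv (foldr (\<lambda>cw acc. vadd (vsmul (fst cw) (RwL C (snd cw) u)) acc) ops zero20) k
        = sum_list (map (\<lambda>cw. ev (fst cw) * Rw C (snd cw) (evv u) k) ops))"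
proof (induction ops)
  case Nil then show ?case by (simp add: evv_zero20)
next
  case (Cons a ops)
  then show ?case using assms
    by (auto simp: evv_vadd evv_vsmul RwL_len RwL_sound)
qed

lemma chk_sound:
  assumes "wfc C" "chk C ops"
  shows "sum_list (map (\<lambda>cw. ev (fst cw) * Rw C (snd cw) v k) ops) = 0"
proof -
  have z: "sum_list (map (\<lambda>cw. ev (fst cw) * Rw C (snd cw) (ee i) k) ops) = 0" if "i < 20" for i
  proof -
    let ?F = "foldr (\<lambda>cw acc. vadd (vsmul (fst cw) (RwL C (snd cw) (unitL i))) acc) ops zero20"
    have "unitL i \<in> set units20" using that by (simp add: units20_def)
    then have "chk1 C ops (unitL i)" using assms(2) by (simp add: chk_def chk_list_iff)
    then have "list_all (\<lambda>p. p = []) ?F" by (simp add: chk1_def)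
    then have "evv ?F k = 0" by (auto simp: evv_def list_all_iff dest!: nth_mem)
    then show ?thesis using chk_foldr[OF assms(1), of "unitL i" ops] evv_unitL[OF that] by simp
  qed
  have "sum_list (map (\<lambda>cw. ev (fst cw) * Rw C (snd cw) v k) ops)
      = sum_list (map (\<lambda>cw. (\<Sum>i<20. v i * (ev (fst cw) * Rw C (snd cw) (ee i) k))) ops)"
    by (subst Rw_lin) (simp add: sum_distrib_left mult.left_commute)
  also have "\<dots> = (\<Sum>i<20. v i * sum_list (map (\<lambda>cw. ev (fst cw) * Rw C (snd cw) (ee i) k) ops))"
    by (induction ops) (simp_all add: sum.distrib distrib_left)
  also have "\<dots> = 0" using z by simp
  finally show ?thesis .
qed

definition lmone :: lp where "lmone = [((0,0),-1)]"
definition lpal :: lp where "lpal = [((0,0),1),((0,1),-1),((1,0),-1)]"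
definition lpbe :: lp where "lpbe = [((0,1),-1),((1,0),-1),((1,1),1)]"
definition lpga :: lp where "lpga = [((1,1),1)]"

lemma ev_lmone: "ev lmone = -1" by (simp add: lmone_def ev_def)
lemma ev_lpal: "ev lpal = 1 - t0 - t1" by (simp add: lpal_def ev_def)
lemma ev_lpbe: "ev lpbe = t0 * t1 - t0 - t1" by (simp add: lpbe_def ev_def)
lemma ev_lpga: "ev lpga = t0 * t1" by (simp add: lpga_def ev_def)

definition quadL :: "gen3 \<Rightarrow> (lp \<times> bword) list" where
  "quadL g = [(lone,[(g,True),(g,True)]), (lpal,[(g,True)]), (lpbe,[]), (lpga,[(g,False)])]"
definition invL :: "gen3 \<Rightarrow> bool \<Rightarrow> (lp \<times> bword) list" where
  "invL g e = [(lone,[(g,e),(g,\<not>e)]), (lmone,[])]"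
definition brL :: "(lp \<times> bword) list" where
  "brL = [(lone,[(G1,True),(G2,True),(G1,True)]), (lmone,[(G2,True),(G1,True),(G2,True)])]"
definition cub12L :: "(lp \<times> bword) list" where
  "cub12L = [(lone,[(G1,False),(G2,True),(G1,True)]), (lmone,[(G1,True),(G2,True),(G1,False)]),
     (lmone,[(G1,False),(G2,False),(G1,True)]), (lone,[(G1,True),(G2,False),(G1,False)]),
     (lmone,[(G1,True),(G2,True)]), (lone,[(G1,True),(G2,False)]), (lone,[(G1,False),(G2,True)]),
     (lmone,[(G1,False),(G2,False)]), (lone,[(G2,True),(G1,True)]), (lmone,[(G2,True),(G1,False)]),
     (lmone,[(G2,False),(G1,True)]), (lone,[(G2,False),(G1,False)])]"

definition goodC :: "cols \<Rightarrow> bool" where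
  "goodC C = (wfc C \<and> chk C (invL G1 True) \<and> chk C (invL G1 False) \<and> chk C (invL G2 True)
     \<and> chk C (invL G2 False) \<and> chk C brL \<and> chk C (quadL G1) \<and> chk C (quadL G2) \<and> chk C cub12L)"

lemma chk2_eq:
  assumes "wfc C" "chk C [(lone, w1), (lmone, w2)]"
  shows "Rw C w1 = Rw C w2"
proof (intro ext)
  fix v k
  have "ev lone * Rw C w1 v k + (ev lmone * Rw C w2 v k + 0) = 0"
    using chk_sound[OF assms, of v k] by simp
  then show "Rw C w1 v k = Rw C w2 v k" by (simp add: ev_lone ev_lmone)
qed

lemma Rw_trunc_in: "Rw C w (trunc v) = Rw C w v"
proof (induction w)
  case Nil then show ?case by (simp add: trunc_def fun_eq_iff)
next
  case (Cons a w) then show ?case by (cases a) simp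
qed

lemma trunc_Rw: "trunc (Rw C w v) = Rw C w v"
proof (cases w)
  case Nil then show ?thesis by (simp add: trunc_def fun_eq_iff)
next
  case (Cons a w') then show ?thesis by (cases a) (simp add: trunc_def act_def fun_eq_iff)
qed

lemma Rw_append: "Rw C (u @ w) v = Rw C u (Rw C w v)"
proof (induction u)
  case Nil then show ?case by (simp add: trunc_Rw)
next
  case (Cons a u) then show ?case by (cases a) simp
qed

lemma Rw_inv:
  assumes "goodC C"
  shows "Rw C [(g,e),(g,\<not>e)] = Rw C []"
proof -
  have "chk C (invL g e)" using assms by (cases g; cases e) (simp_all add: goodC_def)
  then show ?thesis using chk2_eq[of C] assms by (simp add: invL_def goodC_def)
qed

lemma Rw_braid:
  assumes "goodC C"
  shows "Rw C [(G1,True),(G2,True),(G1,True)] = Rw C [(G2,True),(G1,True),(G2,True)]"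
  using chk2_eq[of C] assms by (simp add: brL_def goodC_def)

lemma Rw_braid_eq:
  assumes "goodC C" "braid_eq u w"
  shows "Rw C u = Rw C w"
  using assms(2)
proof (induction rule: braid_eq.induct)
  case (cancel u g e v)
  show ?case
  proof
    fix x
    have "Rw C (u @ [(g, e), (g, \<not> e)] @ v) x = Rw C u (Rw C [(g, e), (g, \<not> e)] (Rw C v x))"
      by (simp only: Rw_append)
    also have "\<dots> = Rw C u (Rw C [] (Rw C v x))" by (simp only: Rw_inv[OF assms(1)])
    also have "\<dots> = Rw C (u @ v) x" by (simp add: Rw_append Rw_trunc_in)
    finally show "Rw C (u @ [(g, e), (g, \<not> e)] @ v) x = Rw C (u @ v) x" .
  qed
next
  case (braid u v)
  show ?case
  proof
    fix x
    show "Rw C (u @ [(G1, True), (G2, True), (G1, True)] @ v) x = Rw C (u @ [(G2, True), (G1, True), (G2, True)] @ v) x"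
      using Rw_braid[OF assms(1)] by (simp only: Rw_append)
  qed
qed auto

definition R :: "cols \<Rightarrow> braid3 \<Rightarrow> V \<Rightarrow> V" where
  "R C b = Rw C (rep_braid3 b)"

lemma R_abs: "goodC C \<Longrightarrow> R C (abs_braid3 w) = Rw C w"
  unfolding R_def
  by (rule Rw_braid_eq) (auto intro: Quotient3_rep_abs[OF Quotient3_braid3] braid_eq.refl)

lemma braid3_cases: obtains w where "b = abs_braid3 w"
  by (metis Quotient3_abs_rep[OF Quotient3_braid3])

lemma abs_plus: "abs_braid3 u + abs_braid3 w = abs_braid3 (u @ w)"
  by (simp add: plus_braid3.abs_eq)

lemma abs_zero: "0 = abs_braid3 []"
  by (simp add: zero_braid3_def)

lemma R_plus: "goodC C \<Longrightarrow> R C (x + y) v = R C x (R C y v)"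
proof -
  assume g: "goodC C"
  obtain u where u: "x = abs_braid3 u" by (rule braid3_cases)
  obtain w where w: "y = abs_braid3 w" by (rule braid3_cases)
  show ?thesis using g by (simp add: u w abs_plus R_abs Rw_append)
qed

lemma R_lin: "R C b v k = (\<Sum>i<20. v i * R C b (ee i) k)"
  unfolding R_def by (rule Rw_lin)

lemma R_lin_sum:
  assumes "finite S"
  shows "R C b (\<lambda>j. \<Sum>s\<in>S. c s * f s j) k = (\<Sum>s\<in>S. c s * R C b (f s) k)"
proof -
  have "R C b (\<lambda>j. \<Sum>s\<in>S. c s * f s j) k = (\<Sum>i<20. (\<Sum>s\<in>S. c s * f s i) * R C b (ee i) k)"
    by (rule R_lin)
  also have "\<dots> = (\<Sum>s\<in>S. c s * (\<Sum>i<20. f s i * R C b (ee i) k))"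
    by (simp add: sum_distrib_right sum_distrib_left mult.assoc) (rule sum.swap)
  also have "\<dots> = (\<Sum>s\<in>S. c s * R C b (f s) k)"
    by (simp add: R_lin[symmetric])
  finally show ?thesis .
qed

lemma R_zero_vec: "R C b (\<lambda>j. 0) k = 0"
  by (subst R_lin) simp

definition Phi :: "cols \<Rightarrow> alg3 \<Rightarrow> V \<Rightarrow> V" where
  "Phi C a v = (\<lambda>k. \<Sum>b\<in>Poly_Mapping.keys a. Poly_Mapping.lookup a b * R C b v k)"

lemma Phi_superset:
  assumes "finite S" "Poly_Mapping.keys a \<subseteq> S"
  shows "Phi C a v k = (\<Sum>b\<in>S. Poly_Mapping.lookup a b * R C b v k)"
  unfolding Phi_def
  by (rule sum.mono_neutral_left) (use assms in \<open>auto simp: in_keys_iff\<close>)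

lemma Phi_add: "Phi C (a + a') v k = Phi C a v k + Phi C a' v k"
proof -
  let ?S = "Poly_Mapping.keys a \<union> Poly_Mapping.keys a'"
  have f: "finite ?S" by simp
  have "Phi C (a + a') v k = (\<Sum>b\<in>?S. Poly_Mapping.lookup (a + a') b * R C b v k)"
    by (rule Phi_superset[OF f]) (rule keys_add)
  also have "\<dots> = (\<Sum>b\<in>?S. Poly_Mapping.lookup a b * R C b v k) + (\<Sum>b\<in>?S. Poly_Mapping.lookup a' b * R C b v k)"
    by (simp add: lookup_add distrib_right sum.distrib)
  also have "\<dots> = Phi C a v k + Phi C a' v k"
    by (simp add: Phi_superset[OF f])
  finally show ?thesis .
qed

lemma Phi_zero: "Phi C 0 v k = 0"
  by (simp add: Phi_def)

lemma Phi_sum: "finite I \<Longrightarrow> Phi C (\<Sum>i\<in>I. f i) v k = (\<Sum>i\<in>I. Phi C (f i) v k)"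
  by (induction I rule: finite_induct) (simp_all add: Phi_zero Phi_add)

lemma Phi_single: "Phi C (Poly_Mapping.single b c) v k = c * R C b v k"
proof -
  have "Phi C (Poly_Mapping.single b c) v k = (\<Sum>b'\<in>{b}. Poly_Mapping.lookup (Poly_Mapping.single b c) b' * R C b' v k)"
    by (rule Phi_superset) auto
  then show ?thesis by simp
qed

lemma pm_decomp: "a = (\<Sum>b\<in>Poly_Mapping.keys a. Poly_Mapping.single b (Poly_Mapping.lookup a b))"
proof (rule poly_mapping_eqI)
  fix k
  show "Poly_Mapping.lookup a k = Poly_Mapping.lookup (\<Sum>b\<in>Poly_Mapping.keys a. Poly_Mapping.single b (Poly_Mapping.lookup a b)) k"
    by (simp add: lookup_sum lookup_single when_def in_keys_iff)
qed

lemma Phi_mult: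
  assumes "goodC C"
  shows "Phi C (a * a') v k = Phi C a (Phi C a' v) k"
proof -
  let ?S = "Poly_Mapping.keys a" and ?T = "Poly_Mapping.keys a'"
  have "a * a' = (\<Sum>b\<in>?S. Poly_Mapping.single b (Poly_Mapping.lookup a b)) * (\<Sum>b'\<in>?T. Poly_Mapping.single b' (Poly_Mapping.lookup a' b'))"
    using pm_decomp[of a] pm_decomp[of a'] by simp
  also have "\<dots> = (\<Sum>b\<in>?S. \<Sum>b'\<in>?T. Poly_Mapping.single (b + b') (Poly_Mapping.lookup a b * Poly_Mapping.lookup a' b'))"
    by (simp add: sum_distrib_left sum_distrib_right mult_single) (rule sum.swap)
  finally have e: "a * a' = \<dots>" .
  have "Phi C (a * a') v k = (\<Sum>b\<in>?S. \<Sum>b'\<in>?T. Poly_Mapping.lookup a b * (Poly_Mapping.lookup a' b' * R C b (R C b' v) k))"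
    by (simp add: e Phi_sum Phi_single R_plus[OF assms] mult.assoc)
  also have "\<dots> = (\<Sum>b\<in>?S. Poly_Mapping.lookup a b * R C b (\<lambda>j. \<Sum>b'\<in>?T. Poly_Mapping.lookup a' b' * R C b' v j) k)"
    by (simp add: R_lin_sum sum_distrib_left)
  also have "\<dots> = Phi C a (Phi C a' v) k"
    by (simp add: Phi_def)
  finally show ?thesis .
qed

lemma Phi_zero_vec: "Phi C a (\<lambda>j. 0) k = 0"
  by (simp add: Phi_def R_zero_vec)

definition relA :: "(lp \<times> bword) list \<Rightarrow> alg3" where
  "relA ops = sum_list (map (\<lambda>cw. scal (ev (fst cw)) * grp (abs_braid3 (snd cw))) ops)"

lemma scal_grp: "scal c * grp b = Poly_Mapping.single b c"
  by (simp add: scal_def grp_def mult_single)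

lemma Phi_relA:
  assumes "goodC C"
  shows "Phi C (relA ops) v k = sum_list (map (\<lambda>cw. ev (fst cw) * Rw C (snd cw) v k) ops)"
  by (induction ops) (simp_all add: relA_def Phi_zero Phi_add scal_grp Phi_single R_abs[OF assms])

lemma grp_mult: "grp x * grp y = grp (x + y)"
  by (simp add: grp_def mult_single)

lemma grp_word: "grp (abs_braid3 ((g,e) # w)) = grp (bgen g e) * grp (abs_braid3 w)"
  by (simp add: grp_mult bgen_def abs_plus)

lemma grp_nil: "grp (abs_braid3 []) = 1"
  by (simp add: grp_def abs_zero[symmetric] one_poly_mapping_def)

lemma scal_one: "scal 1 = 1" by (simp add: scal_def one_poly_mapping_def)

lemma be_del: "braid_eq (u @ v) y \<Longrightarrow> braid_eq (u @ [(g,e),(g,\<not>e)] @ v) y"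
  by (rule braid_eq.trans[OF braid_eq.cancel])
lemma be_ins: "braid_eq (u @ [(g,e),(g,\<not>e)] @ v) y \<Longrightarrow> braid_eq (u @ v) y"
  by (rule braid_eq.trans[OF braid_eq.sym[OF braid_eq.cancel]])
lemma be_bf: "braid_eq (u @ [(G2,True),(G1,True),(G2,True)] @ v) y \<Longrightarrow> braid_eq (u @ [(G1,True),(G2,True),(G1,True)] @ v) y"
  by (rule braid_eq.trans[OF braid_eq.braid])
lemma be_bb: "braid_eq (u @ [(G1,True),(G2,True),(G1,True)] @ v) y \<Longrightarrow> braid_eq (u @ [(G2,True),(G1,True),(G2,True)] @ v) y"
  by (rule braid_eq.trans[OF braid_eq.sym[OF braid_eq.braid]])

lemma be_c1: "braid_eq [(G2,False),(G1,True),(G2,True)] [(G1,True),(G2,True),(G1,False)]"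
  apply (rule be_ins[where u="[(G2,False),(G1,True),(G2,True)]" and g=G1 and e=True and v="[]", simplified])
  apply (rule be_bf[where u="[(G2,False)]" and v="[(G1,False)]", simplified])
  apply (rule be_del[where u="[]" and g=G2 and e=False and v="[(G1,True),(G2,True),(G1,False)]", simplified])
  apply (rule braid_eq.refl)
  done
lemma be_c2: "braid_eq [(G2,True),(G1,True),(G2,False)] [(G1,False),(G2,True),(G1,True)]"
  apply (rule be_ins[where u="[]" and g=G1 and e=False and v="[(G2,True),(G1,True),(G2,False)]", simplified])
  apply (rule be_bf[where u="[(G1,False)]" and v="[(G2,False)]", simplified])
  apply (rule be_del[where u="[(G1,False),(G2,True),(G1,True)]" and g=G2 and e=True and v="[]", simplified])
  apply (rule braid_eq.refl)
  done
lemma be_c3: "braid_eq [(G2,False),(G1,False),(G2,True)] [(G1,True),(G2,False),(G1,False)]"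
  apply (rule be_ins[where u="[(G2,False),(G1,False),(G2,True)]" and g=G1 and e=True and v="[]", simplified])
  apply (rule be_ins[where u="[(G2,False),(G1,False),(G2,True),(G1,True)]" and g=G2 and e=True and v="[(G1,False)]", simplified])
  apply (rule be_bb[where u="[(G2,False),(G1,False)]" and v="[(G2,False),(G1,False)]", simplified])
  apply (rule be_del[where u="[(G2,False)]" and g=G1 and e=False and v="[(G2,True),(G1,True),(G2,False),(G1,False)]", simplified])
  apply (rule be_del[where u="[]" and g=G2 and e=False and v="[(G1,True),(G2,False),(G1,False)]", simplified])
  apply (rule braid_eq.refl)
  done
lemma be_c4: "braid_eq [(G2,True),(G1,False),(G2,False)] [(G1,False),(G2,False),(G1,True)]"
  apply (rule be_ins[where u="[]" and g=G1 and e=False and v="[(G2,True),(G1,False),(G2,False)]", simplified])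
  apply (rule be_ins[where u="[(G1,False)]" and g=G2 and e=False and v="[(G1,True),(G2,True),(G1,False),(G2,False)]", simplified])
  apply (rule be_bb[where u="[(G1,False),(G2,False)]" and v="[(G1,False),(G2,False)]", simplified])
  apply (rule be_del[where u="[(G1,False),(G2,False),(G1,True),(G2,True)]" and g=G1 and e=True and v="[(G2,False)]", simplified])
  apply (rule be_del[where u="[(G1,False),(G2,False),(G1,True)]" and g=G2 and e=True and v="[]", simplified])
  apply (rule braid_eq.refl)
  done

lemma abs_eqI: "braid_eq u w \<Longrightarrow> abs_braid3 u = abs_braid3 w"
  by (simp add: braid3.abs_eq_iff)

lemma sg_grp: "sg g = grp (abs_braid3 [(g,True)])" by (simp add: sg_def bgen_def)
lemma sgb_grp: "sgb g = grp (abs_braid3 [(g,False)])" by (simp add: sgb_def bgen_def)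
lemma grp_app: "grp (abs_braid3 u) * grp (abs_braid3 w) = grp (abs_braid3 (u @ w))"
  by (simp add: grp_mult abs_plus)

lemma scal_neg: "scal (- c) = - scal c"
  by (simp add: scal_def single_uminus)

definition cub21L :: "(lp \<times> bword) list" where
  "cub21L = [(lone,[(G2,False),(G1,True),(G2,True)]), (lmone,[(G2,True),(G1,True),(G2,False)]),
     (lmone,[(G2,False),(G1,False),(G2,True)]), (lone,[(G2,True),(G1,False),(G2,False)]),
     (lmone,[(G2,True),(G1,True)]), (lone,[(G2,True),(G1,False)]), (lone,[(G2,False),(G1,True)]),
     (lmone,[(G2,False),(G1,False)]), (lone,[(G1,True),(G2,True)]), (lmone,[(G1,True),(G2,False)]),
     (lmone,[(G1,False),(G2,True)]), (lone,[(G1,False),(G2,False)])]"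

lemma words3: "grp (abs_braid3 [x,y,z]) = grp (abs_braid3 [x]) * grp (abs_braid3 [y]) * grp (abs_braid3 [z])"
  by (simp add: grp_app)
lemma words2: "grp (abs_braid3 [x,y]) = grp (abs_braid3 [x]) * grp (abs_braid3 [y])"
  by (simp add: grp_app)

lemma quad_relA: "quad_rel g = relA (quadL g)"
  by (simp add: quad_rel_def relA_def quadL_def sg_grp sgb_grp grp_app grp_nil ev_lone ev_lpal ev_lpbe
      ev_lpga scal_one add.assoc)

lemma cub12_relA: "cub_rel G1 G2 = relA cub12L"
  unfolding cub_rel_def relA_def cub12L_def
  by (simp add: sg_grp sgb_grp words3 words2 ev_lone ev_lmone scal_one scal_neg algebra_simps)

lemma cub21_relA: "cub_rel G2 G1 = relA cub21L"
  unfolding cub_rel_def relA_def cub21L_def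
  by (simp add: sg_grp sgb_grp words3 words2 ev_lone ev_lmone scal_one scal_neg algebra_simps)

lemma cub21_neg: "relA cub21L = - relA cub12L"
  unfolding relA_def cub21L_def cub12L_def
  using abs_eqI[OF be_c1] abs_eqI[OF be_c2] abs_eqI[OF be_c3] abs_eqI[OF be_c4]
  by (simp add: ev_lone ev_lmone scal_one scal_neg algebra_simps)

lemma Phi_neg: "Phi C (- a) v k = - Phi C a v k"
  using Phi_add[of C a "- a" v k] by (simp add: Phi_zero)

lemma Phi_ideal:
  assumes g: "goodC C" and a: "a \<in> C3_ideal"
  shows "Phi C a v k = 0"
  using a unfolding C3_ideal_def
proof (induction arbitrary: v k rule: two_sided_ideal.induct)
  case (gen r)
  have w: "wfc C" using g by (simp add: goodC_def)
  have q: "Phi C (quad_rel g') v k = 0" for g' v k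
  proof -
    have "chk C (quadL g')" using g by (cases g') (simp_all add: goodC_def)
    then show ?thesis using chk_sound[OF w] by (simp add: quad_relA Phi_relA[OF g])
  qed
  have c: "Phi C (cub_rel G1 G2) v k = 0" for v k
    using g chk_sound[OF w] by (simp add: goodC_def cub12_relA Phi_relA[OF g])
  have c2: "Phi C (cub_rel G2 G1) v k = 0" for v k
    using c[of v k] by (simp add: cub21_relA cub21_neg cub12_relA Phi_neg)
  from gen show ?case using q c c2 by auto
next
  case zero then show ?case by (simp add: Phi_zero)
next
  case (add a b) then show ?case by (simp add: Phi_add)
next
  case (mult a x y)
  have "Phi C (x * a * y) v k = Phi C x (Phi C a (Phi C y v)) k"
    by (simp add: Phi_mult[OF g])
  also have "Phi C a (Phi C y v) = (\<lambda>j. 0)" using mult.IH by (simp add: fun_eq_iff)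
  finally show ?case by (simp add: Phi_zero_vec)
qed

theorem indep_generic:
  assumes g: "goodC C" and l: "length bs = 20"
    and u: "map (\<lambda>w. RwL C w (unitL 0)) bs = units20"
    and mem: "(\<Sum>i<20. scal (c i) * grp (abs_braid3 (bs ! i))) \<in> C3_ideal"
  shows "\<forall>i<20. c i = 0"
proof (intro allI impI)
  fix k assume k: "k < (20::nat)"
  have w: "wfc C" using g by (simp add: goodC_def)
  have ui: "Rw C (bs ! i) (ee 0) = ee i" if "i < 20" for i
  proof -
    have "RwL C (bs ! i) (unitL 0) = unitL i"
      using arg_cong[OF u, of "\<lambda>xs. xs ! i"] that l by (simp add: units20_def)
    then have "evv (RwL C (bs ! i) (unitL 0)) = evv (unitL i)" by simp
    then show ?thesis using that by (simp add: RwL_sound[OF w] evv_unitL)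
  qed
  have "0 = Phi C (\<Sum>i<20. scal (c i) * grp (abs_braid3 (bs ! i))) (ee 0) k"
    using Phi_ideal[OF g mem] by simp
  also have "\<dots> = (\<Sum>i<20. c i * Rw C (bs ! i) (ee 0) k)"
    by (simp add: Phi_sum scal_grp Phi_single R_abs[OF g])
  also have "\<dots> = (\<Sum>i<20. c i * ee i k)"
    by (rule sum.cong) (simp_all add: ui)
  also have "\<dots> = (\<Sum>i<20. if i = k then c k else 0)"
    by (rule sum.cong) (auto simp: ee_def)
  also have "\<dots> = c k" using k by simp
  finally show "c k = 0" by simp
qed

section \<open>Ideal calculus\<close>

lemma I_mult: "a \<in> C3_ideal \<Longrightarrow> x * a * y \<in> C3_ideal"
  unfolding C3_ideal_def by (rule two_sided_ideal.mult)
lemma I_lmul: "a \<in> C3_ideal \<Longrightarrow> x * a \<in> C3_ideal"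
  using I_mult[of a x 1] by simp
lemma I_rmul: "a \<in> C3_ideal \<Longrightarrow> a * y \<in> C3_ideal"
  using I_mult[of a 1 y] by simp
lemma I_add: "a \<in> C3_ideal \<Longrightarrow> b \<in> C3_ideal \<Longrightarrow> a + b \<in> C3_ideal"
  unfolding C3_ideal_def by (rule two_sided_ideal.add)
lemma I_zero: "0 \<in> C3_ideal"
  unfolding C3_ideal_def by (rule two_sided_ideal.zero)
lemma I_neg: "a \<in> C3_ideal \<Longrightarrow> - a \<in> C3_ideal"
  using I_mult[of a "-1" 1] by simp
lemma I_diff: "a \<in> C3_ideal \<Longrightarrow> b \<in> C3_ideal \<Longrightarrow> a - b \<in> C3_ideal"
  using I_add[of a "- b"] I_neg[of b] by simp
lemma I_sum: "finite S \<Longrightarrow> (\<And>i. i \<in> S \<Longrightarrow> f i \<in> C3_ideal) \<Longrightarrow> (\<Sum>i\<in>S. f i) \<in> C3_ideal"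
  by (induction S rule: finite_induct) (auto intro: I_zero I_add)
lemma I_eq: "a \<in> C3_ideal \<Longrightarrow> a = b \<Longrightarrow> b \<in> C3_ideal" by simp

lemma I_quad: "relA (quadL g) \<in> C3_ideal"
  unfolding C3_ideal_def quad_relA[symmetric] by (rule two_sided_ideal.gen) (cases g, auto)
lemma I_cub: "relA cub12L \<in> C3_ideal"
  unfolding C3_ideal_def cub12_relA[symmetric] by (rule two_sided_ideal.gen) auto

lemma scal_comm: "scal c * a = a * scal c"
proof -
  have "scal c * Poly_Mapping.single b d = Poly_Mapping.single b d * scal c" for b d
    by (simp add: scal_def mult_single mult.commute)
  then have "scal c * (\<Sum>b\<in>Poly_Mapping.keys a. Poly_Mapping.single b (Poly_Mapping.lookup a b))
     = (\<Sum>b\<in>Poly_Mapping.keys a. Poly_Mapping.single b (Poly_Mapping.lookup a b)) * scal c"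
    by (simp add: sum_distrib_left sum_distrib_right)
  then show ?thesis using pm_decomp[of a] by simp
qed

lemma scal_mult: "scal (c * d) = scal c * scal d"
  by (simp add: scal_def mult_single)
lemma scal_add: "scal (c + d) = scal c + scal d"
  by (simp add: scal_def single_add)
lemma scal_zero: "scal 0 = 0"
  by (simp add: scal_def)
lemma scal_sum: "finite S \<Longrightarrow> scal (\<Sum>i\<in>S. f i) = (\<Sum>i\<in>S. scal (f i))"
  by (induction S rule: finite_induct) (simp_all add: scal_zero scal_add)

section \<open>Linear combinations of basis words\<close>

definition linQ :: "bword list \<Rightarrow> (nat \<Rightarrow> QT) \<Rightarrow> alg3" where
  "linQ bs c = (\<Sum>j<20. scal (c j) * grp (abs_braid3 (bs ! j)))"

definition linA :: "bword list \<Rightarrow> lp list \<Rightarrow> alg3" where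
  "linA bs xs = linQ bs (\<lambda>j. ev (xs ! j))"

lemma linQ_add: "linQ bs c + linQ bs d = linQ bs (\<lambda>j. c j + d j)"
  by (simp add: linQ_def scal_add distrib_right sum.distrib)

lemma linQ_smul: "scal a * linQ bs c = linQ bs (\<lambda>j. a * c j)"
  by (simp add: linQ_def sum_distrib_left scal_mult mult.assoc)

lemma linQ_cong: "(\<And>j. j < 20 \<Longrightarrow> c j = d j) \<Longrightarrow> linQ bs c = linQ bs d"
  by (simp add: linQ_def)

lemma linQ_zero: "linQ bs (\<lambda>j. 0) = 0"
  by (simp add: linQ_def scal_zero)

lemma linQ_sum: "finite S \<Longrightarrow> (\<Sum>s\<in>S. linQ bs (f s)) = linQ bs (\<lambda>j. \<Sum>s\<in>S. f s j)"
  by (induction S rule: finite_induct) (simp_all add: linQ_zero linQ_add)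

lemma linQ_unit: "i < 20 \<Longrightarrow> linQ bs (\<lambda>j. if j = i then 1 else 0) = grp (abs_braid3 (bs ! i))"
proof -
  assume i: "i < 20"
  have "linQ bs (\<lambda>j. if j = i then 1 else 0) = (\<Sum>j<20. if j = i then grp (abs_braid3 (bs ! i)) else 0)"
    unfolding linQ_def by (rule sum.cong) (auto simp: scal_one scal_zero)
  then show ?thesis using i by simp
qed

lemma linA_unit: "i < 20 \<Longrightarrow> linA bs (unitL i) = grp (abs_braid3 (bs ! i))"
  unfolding linA_def
  by (subst linQ_unit[symmetric], assumption, rule linQ_cong) (simp add: unitL_def ev_lone)

definition inst :: "bword \<Rightarrow> bword \<Rightarrow> (lp \<times> bword) list \<Rightarrow> (lp \<times> bword) list" where
  "inst u v RR = map (\<lambda>cw. (fst cw, u @ snd cw @ v)) RR"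

lemma relA_inst: "relA (inst u v RR) = grp (abs_braid3 u) * relA RR * grp (abs_braid3 v)"
proof (induction RR)
  case Nil then show ?case by (simp add: relA_def inst_def)
next
  case (Cons a RR)
  have "scal c * grp (abs_braid3 (u @ w @ v)) = grp (abs_braid3 u) * (scal c * grp (abs_braid3 w)) * grp (abs_braid3 v)" for c w
    by (simp add: grp_app[symmetric] mult.assoc scal_comm)
  then show ?case using Cons by (simp add: relA_def inst_def distrib_left distrib_right)
qed

lemma inst_quad: "relA (inst u v (quadL g)) \<in> C3_ideal"
  by (simp add: relA_inst I_mult I_quad)
lemma inst_cub: "relA (inst u v cub12L) \<in> C3_ideal"
  by (simp add: relA_inst I_mult I_cub)

section \<open>One derivation step\<close>

definition vsum :: "lp list list \<Rightarrow> lp list" where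
  "vsum xss = foldr vadd xss zero20"

definition stepchk :: "(lp \<times> bword) list \<Rightarrow> lp list list \<Rightarrow> lp \<Rightarrow> lp list \<Rightarrow> bool" where
  "stepchk ts xss cp ys = (length ts = length xss \<and> list_all (\<lambda>xs. length xs = 20) xss \<and> length ys = 20
     \<and> list_all (\<lambda>p. p = []) (vadd (vsum (map2 (\<lambda>cw xs. vsmul (fst cw) xs) ts xss)) (vsmul cp ys)))"

lemma vsum_sound:
  assumes "list_all (\<lambda>xs. length xs = 20) xss"
  shows "length (vsum xss) = 20 \<and> (\<forall>k. evv (vsum xss) k = sum_list (map (\<lambda>xs. evv xs k) xss))"
  using assms by (induction xss) (auto simp: vsum_def evv_zero20 evv_vadd)

lemma relA_append: "relA (xs @ ys) = relA xs + relA ys"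
  by (simp add: relA_def)
lemma relA_Cons: "relA (cw # ys) = scal (ev (fst cw)) * grp (abs_braid3 (snd cw)) + relA ys"
  by (simp add: relA_def)

lemma linA_evv: "length xs = 20 \<Longrightarrow> linA bs xs = linQ bs (evv xs)"
  unfolding linA_def by (rule linQ_cong) (simp add: evv_def)

lemma rest_approx:
  assumes "list_all2 (\<lambda>cw xs. grp (abs_braid3 (snd cw)) - linA bs xs \<in> C3_ideal) ts xss"
    "list_all (\<lambda>xs. length xs = 20) xss"
  shows "relA ts - linQ bs (\<lambda>k. sum_list (map2 (\<lambda>cw xs. ev (fst cw) * evv xs k) ts xss)) \<in> C3_ideal"
  using assms
proof (induction ts xss rule: list_all2_induct)
  case Nil then show ?case by (simp add: relA_def linQ_zero I_zero)
next
  case (Cons cw ts xs xss)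
  have l: "length xs = 20" using Cons.prems by simp
  have h1: "scal (ev (fst cw)) * (grp (abs_braid3 (snd cw)) - linA bs xs) \<in> C3_ideal"
    using Cons.hyps(1) by (rule I_lmul)
  have h2: "relA ts - linQ bs (\<lambda>k. sum_list (map2 (\<lambda>cw xs. ev (fst cw) * evv xs k) ts xss)) \<in> C3_ideal"
    using Cons by simp
  have e: "relA (cw # ts) - linQ bs (\<lambda>k. sum_list (map2 (\<lambda>cw xs. ev (fst cw) * evv xs k) (cw # ts) (xs # xss)))
     = scal (ev (fst cw)) * (grp (abs_braid3 (snd cw)) - linA bs xs)
       + (relA ts - linQ bs (\<lambda>k. sum_list (map2 (\<lambda>cw xs. ev (fst cw) * evv xs k) ts xss)))"
    by (simp add: relA_Cons linA_evv[OF l] linQ_add[symmetric] linQ_smul[symmetric] algebra_simps)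
  show ?case using I_add[OF h1 h2] e by simp
qed

lemma scal_inv_cancel: "c \<noteq> 0 \<Longrightarrow> scal c * x \<in> C3_ideal \<Longrightarrow> x \<in> C3_ideal"
  using I_lmul[of "scal c * x" "scal (inverse c)"] by (simp add: mult.assoc[symmetric] scal_mult[symmetric] scal_one)

lemma step:
  assumes inst: "relA (pre @ (cp, wp) # post) \<in> C3_ideal"
    and rest: "list_all2 (\<lambda>cw xs. grp (abs_braid3 (snd cw)) - linA bs xs \<in> C3_ideal) (pre @ post) xss"
    and nz: "ev cp \<noteq> 0"
    and chk: "stepchk (pre @ post) xss cp ys"
  shows "grp (abs_braid3 wp) - linA bs ys \<in> C3_ideal"
proof -
  let ?ts = "pre @ post"
  let ?Z = "vsum (map2 (\<lambda>cw xs. vsmul (fst cw) xs) ?ts xss)"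
  have lens: "length ?ts = length xss" "list_all (\<lambda>xs. length xs = 20) xss" "length ys = 20"
    and z: "list_all (\<lambda>p. p = []) (vadd ?Z (vsmul cp ys))"
    using chk by (simp_all add: stepchk_def)
  have la: "list_all (\<lambda>xs. length xs = 20) (map2 (\<lambda>cw xs. vsmul (fst cw) xs) ?ts xss)"
    using lens(2) by (auto simp: list_all_iff set_zip)
  have vz: "length ?Z = 20" "\<And>k. evv ?Z k = sum_list (map (\<lambda>xs. evv xs k) (map2 (\<lambda>cw xs. vsmul (fst cw) xs) ?ts xss))"
    using vsum_sound[OF la] by auto
  have evz: "evv ?Z k + ev cp * evv ys k = 0" for k
  proof -
    have "evv (vadd ?Z (vsmul cp ys)) k = 0" using z by (simp add: evv_def list_all_length)
    then show ?thesis using vz lens by (simp add: evv_vadd evv_vsmul)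
  qed
  have sumeq: "sum_list (map (\<lambda>xs. evv xs k) (map2 (\<lambda>cw xs. vsmul (fst cw) xs) ts xss))
      = sum_list (map2 (\<lambda>cw xs. ev (fst cw) * evv xs k) ts xss)" for k and ts :: "(lp \<times> bword) list"
    and xss :: "lp list list"
  proof (induction ts arbitrary: xss)
    case Nil then show ?case by simp
  next
    case (Cons a ts) then show ?case by (cases xss) (simp_all add: evv_vsmul)
  qed
  have R: "relA ?ts - linQ bs (\<lambda>k. sum_list (map2 (\<lambda>cw xs. ev (fst cw) * evv xs k) ?ts xss)) \<in> C3_ideal"
    by (rule rest_approx[OF rest lens(2)])
  have lq: "linQ bs (\<lambda>k. sum_list (map2 (\<lambda>cw xs. ev (fst cw) * evv xs k) ?ts xss)) = - (scal (ev cp) * linA bs ys)"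
  proof -
    have "linQ bs (\<lambda>k. sum_list (map2 (\<lambda>cw xs. ev (fst cw) * evv xs k) ?ts xss)) = linQ bs (\<lambda>k. - (ev cp * evv ys k))"
    proof (rule linQ_cong)
      fix k :: nat
      have "sum_list (map2 (\<lambda>cw xs. ev (fst cw) * evv xs k) ?ts xss) = evv ?Z k"
        using vz(2)[of k] sumeq[of k ?ts xss] by simp
      then show "sum_list (map2 (\<lambda>cw xs. ev (fst cw) * evv xs k) ?ts xss) = - (ev cp * evv ys k)"
        using evz[of k] by (simp add: eq_neg_iff_add_eq_0)
    qed
    also have "\<dots> = - (scal (ev cp) * linA bs ys)"
      using linQ_smul[of "- ev cp" bs "evv ys"] by (simp add: linA_evv[OF lens(3)] scal_neg)
    finally show ?thesis .
  qed
  have "relA (pre @ (cp, wp) # post) = scal (ev cp) * grp (abs_braid3 wp) + relA ?ts"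
    by (simp add: relA_append relA_Cons algebra_simps)
  then have "scal (ev cp) * grp (abs_braid3 wp) + relA ?ts \<in> C3_ideal" using inst by simp
  from I_diff[OF this R] have "scal (ev cp) * (grp (abs_braid3 wp) - linA bs ys) \<in> C3_ideal"
    by (simp add: lq algebra_simps)
  then show ?thesis by (rule scal_inv_cancel[OF nz])
qed

definition Sp :: "bword list \<Rightarrow> alg3 \<Rightarrow> bool" where
  "Sp bs a = (\<exists>c. a - linQ bs c \<in> C3_ideal)"

lemma Sp_lin: "Sp bs (linQ bs c)"
  unfolding Sp_def using I_zero by (intro exI[of _ c]) simp

lemma Sp_approx: "a - a' \<in> C3_ideal \<Longrightarrow> Sp bs a' \<Longrightarrow> Sp bs a"
  unfolding Sp_def
proof -
  assume h: "a - a' \<in> C3_ideal" and "\<exists>c. a' - linQ bs c \<in> C3_ideal"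
  then obtain c where c: "a' - linQ bs c \<in> C3_ideal" by blast
  have "a - linQ bs c = (a - a') + (a' - linQ bs c)" by simp
  then show "\<exists>c. a - linQ bs c \<in> C3_ideal" using I_add[OF h c] by metis
qed

lemma Sp_add: "Sp bs a \<Longrightarrow> Sp bs b \<Longrightarrow> Sp bs (a + b)"
  unfolding Sp_def
proof -
  assume "\<exists>c. a - linQ bs c \<in> C3_ideal" "\<exists>c. b - linQ bs c \<in> C3_ideal"
  then obtain c d where c: "a - linQ bs c \<in> C3_ideal" and d: "b - linQ bs d \<in> C3_ideal" by blast
  have "a + b - linQ bs (\<lambda>j. c j + d j) = (a - linQ bs c) + (b - linQ bs d)"
    by (simp add: linQ_add[symmetric])
  then show "\<exists>c. a + b - linQ bs c \<in> C3_ideal" using I_add[OF c d] by metis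
qed

lemma Sp_smul: "Sp bs a \<Longrightarrow> Sp bs (scal e * a)"
  unfolding Sp_def
proof -
  assume "\<exists>c. a - linQ bs c \<in> C3_ideal"
  then obtain c where c: "a - linQ bs c \<in> C3_ideal" by blast
  have "scal e * a - linQ bs (\<lambda>j. e * c j) = scal e * (a - linQ bs c)"
    by (simp add: linQ_smul[symmetric] algebra_simps)
  then show "\<exists>c. scal e * a - linQ bs c \<in> C3_ideal" using I_lmul[OF c] by metis
qed

lemma Sp_sum: "finite S \<Longrightarrow> (\<And>s. s \<in> S \<Longrightarrow> Sp bs (f s)) \<Longrightarrow> Sp bs (\<Sum>s\<in>S. f s)"
proof (induction S rule: finite_induct)
  case empty then show ?case using Sp_lin[of bs "\<lambda>j. 0"] by (simp add: linQ_zero)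
next
  case (insert x F) then show ?case by (simp add: Sp_add)
qed

lemma grp_cons: "grp (bgen g e) * grp (abs_braid3 w) = grp (abs_braid3 ((g,e) # w))"
  by (simp add: grp_word)

lemma Sp_gen_pos:
  assumes tab: "\<forall>i<20. grp (abs_braid3 ((g,True) # bs ! i)) - linA bs (C g True ! i) \<in> C3_ideal"
    and a: "Sp bs a"
  shows "Sp bs (grp (bgen g True) * a)"
proof -
  obtain c where c: "a - linQ bs c \<in> C3_ideal" using a by (auto simp: Sp_def)
  have "grp (bgen g True) * linQ bs c = (\<Sum>i<20. scal (c i) * grp (abs_braid3 ((g,True) # bs ! i)))"
    by (simp add: linQ_def sum_distrib_left mult.assoc[symmetric] scal_comm grp_cons)
  moreover have "Sp bs (\<Sum>i<20. scal (c i) * grp (abs_braid3 ((g,True) # bs ! i)))"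
  proof (rule Sp_sum)
    fix i assume "i \<in> {..<(20::nat)}"
    then have "scal (c i) * grp (abs_braid3 ((g,True) # bs ! i)) - scal (c i) * linA bs (C g True ! i) \<in> C3_ideal"
      using I_lmul[OF tab[rule_format, of i], of "scal (c i)"] by (simp add: algebra_simps)
    moreover have "Sp bs (scal (c i) * linA bs (C g True ! i))"
      by (simp add: linA_def Sp_smul Sp_lin)
    ultimately show "Sp bs (scal (c i) * grp (abs_braid3 ((g,True) # bs ! i)))"
      by (rule Sp_approx)
  qed simp
  moreover have "grp (bgen g True) * a - grp (bgen g True) * linQ bs c \<in> C3_ideal"
    using I_lmul[OF c, of "grp (bgen g True)"] by (simp add: algebra_simps)
  ultimately show ?thesis using Sp_approx by metis
qed

lemma lpga_nz: "ev lpga \<noteq> 0" using t0_nz t1_nz by (simp add: ev_lpga)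

lemma Sp_gen_neg:
  assumes pos: "\<And>a. Sp bs a \<Longrightarrow> Sp bs (grp (bgen g True) * a)"
    and a: "Sp bs a"
  shows "Sp bs (grp (bgen g False) * a)"
proof -
  let ?p = "grp (bgen g True)" and ?n = "grp (bgen g False)"
  have q: "relA (quadL g) = ?p * ?p + (scal (ev lpal) * ?p + (scal (ev lpbe) + scal (ev lpga) * ?n))"
    by (simp add: relA_def quadL_def ev_lone scal_one words2 grp_nil bgen_def[symmetric])
  have i: "relA (quadL g) * a \<in> C3_ideal" using I_rmul[OF I_quad] .
  have s: "Sp bs (scal (-1) * (?p * (?p * a)) + (scal (- ev lpal) * (?p * a) + scal (- ev lpbe) * a))"
      using pos[OF pos[OF a]] pos[OF a] a by (intro Sp_add Sp_smul)
  have r: "relA (quadL g) * a = ?p * (?p * a) + (scal (ev lpal) * (?p * a) + (scal (ev lpbe) * a + scal (ev lpga) * (?n * a)))"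
    unfolding q by (simp only: distrib_right mult.assoc)
  have ab: "\<And>(P::alg3) Q R S. S - (- P + (- Q + - R)) = P + (Q + (R + S))"
    by (simp add: algebra_simps)
  have "scal (ev lpga) * (?n * a) - (scal (-1) * (?p * (?p * a)) + (scal (- ev lpal) * (?p * a) + scal (- ev lpbe) * a))
      = relA (quadL g) * a"
    unfolding r scal_neg scal_one mult_minus_left mult_1_left by (rule ab)
  then have "scal (ev lpga) * (?n * a) - (scal (-1) * (?p * (?p * a)) + (scal (- ev lpal) * (?p * a) + scal (- ev lpbe) * a))
      \<in> C3_ideal" using i by simp
  from Sp_approx[OF this s] have "Sp bs (scal (ev lpga) * (?n * a))" .
  then have "Sp bs (scal (inverse (ev lpga)) * (scal (ev lpga) * (?n * a)))" by (rule Sp_smul)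
  then show ?thesis using lpga_nz by (simp add: mult.assoc[symmetric] scal_mult[symmetric] scal_one)
qed

theorem span_generic:
  assumes tab1: "\<forall>i<20. grp (abs_braid3 ((G1,True) # bs ! i)) - linA bs (C G1 True ! i) \<in> C3_ideal"
    and tab2: "\<forall>i<20. grp (abs_braid3 ((G2,True) # bs ! i)) - linA bs (C G2 True ! i) \<in> C3_ideal"
    and b0: "bs ! 0 = []"
  shows "Sp bs a"
proof -
  have pos: "Sp bs (grp (bgen g True) * a)" if "Sp bs a" for g a
    using that tab1 tab2 by (cases g) (auto intro: Sp_gen_pos)
  have gen: "Sp bs (grp (bgen g e) * a)" if "Sp bs a" for g e a
    using that by (cases e) (auto intro: pos Sp_gen_neg)
  have words: "Sp bs (grp (abs_braid3 w))" for w
  proof (induction w)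
    case Nil
    have "grp (abs_braid3 []) = linQ bs (\<lambda>j. if j = 0 then 1 else 0)"
      using linQ_unit[of 0 bs] b0 by simp
    then show ?case using Sp_lin by metis
  next
    case (Cons l w)
    obtain g e where l: "l = (g,e)" by (cases l)
    show ?case using gen[OF Cons] by (simp add: l grp_cons)
  qed
  have grps: "Sp bs (grp b)" for b
    using words by (metis braid3_cases)
  have "a = (\<Sum>b\<in>Poly_Mapping.keys a. scal (Poly_Mapping.lookup a b) * grp b)"
    using pm_decomp[of a] by (simp add: scal_grp)
  moreover have "Sp bs (\<Sum>b\<in>Poly_Mapping.keys a. scal (Poly_Mapping.lookup a b) * grp b)"
    by (rule Sp_sum) (simp_all add: Sp_smul grps)
  ultimately show ?thesis by simp
qed

section \<open>Exchanging one basis element\<close>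

lemma linQ_split:
  assumes "length bs = 20"
  shows "linQ (bs[18 := w']) c = linQ bs (\<lambda>j. if j = 18 then 0 else c j) + scal (c 18) * grp (abs_braid3 w')"
    and "linQ bs c = linQ bs (\<lambda>j. if j = 18 then 0 else c j) + scal (c 18) * grp (abs_braid3 (bs ! 18))"
proof -
  have sp: "(\<Sum>j<20. f j) = f 18 + (\<Sum>j\<in>{..<20} - {18}. f j)" for f :: "nat \<Rightarrow> alg3"
    by (subst sum.remove[of _ 18]) auto
  have e1: "(\<Sum>j\<in>{..<20} - {18}. scal (c j) * grp (abs_braid3 (bs[18 := w'] ! j)))
      = (\<Sum>j\<in>{..<20} - {18}. scal (if j = 18 then 0 else c j) * grp (abs_braid3 (bs ! j)))"
    by (rule sum.cong) (auto simp: assms)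
  have e2: "(\<Sum>j\<in>{..<20} - {18}. scal (c j) * grp (abs_braid3 (bs ! j)))
      = (\<Sum>j\<in>{..<20} - {18}. scal (if j = 18 then 0 else c j) * grp (abs_braid3 (bs ! j)))"
    by (rule sum.cong) auto
  show "linQ (bs[18 := w']) c = linQ bs (\<lambda>j. if j = 18 then 0 else c j) + scal (c 18) * grp (abs_braid3 w')"
    unfolding linQ_def sp[of "\<lambda>j. scal (c j) * grp (abs_braid3 (bs[18 := w'] ! j))"]
      sp[of "\<lambda>j. scal (if j = 18 then 0 else c j) * grp (abs_braid3 (bs ! j))"] e1
    using assms by (simp add: scal_zero)
  show "linQ bs c = linQ bs (\<lambda>j. if j = 18 then 0 else c j) + scal (c 18) * grp (abs_braid3 (bs ! 18))"
    unfolding linQ_def sp[of "\<lambda>j. scal (c j) * grp (abs_braid3 (bs ! j))"]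
      sp[of "\<lambda>j. scal (if j = 18 then 0 else c j) * grp (abs_braid3 (bs ! j))"] e2
    by (simp add: scal_zero)
qed

lemma linQ_exchange:
  assumes "length bs = 20"
  shows "linQ (bs[18 := w']) c - linQ bs (\<lambda>j. (if j = 18 then 0 else c j) + c 18 * d j)
     = scal (c 18) * (grp (abs_braid3 w') - linQ bs d)"
proof -
  have "linQ bs (\<lambda>j. (if j = 18 then 0 else c j) + c 18 * d j)
      = linQ bs (\<lambda>j. if j = 18 then 0 else c j) + scal (c 18) * linQ bs d"
    by (simp add: linQ_smul linQ_add)
  then show ?thesis using linQ_split(1)[OF assms, of w' c] by (simp add: algebra_simps)
qed

theorem exchange:
  assumes l: "length bs = 20"
    and w: "grp (abs_braid3 w') - linQ bs d \<in> C3_ideal" and d: "d 18 \<noteq> 0"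
    and spanA: "\<And>a. Sp bs a"
    and indA: "\<And>c. linQ bs c \<in> C3_ideal \<Longrightarrow> \<forall>i<20. c i = 0"
  shows "Sp (bs[18 := w']) a"
    and "linQ (bs[18 := w']) c \<in> C3_ideal \<Longrightarrow> \<forall>i<20. c i = 0"
proof -
  let ?bs = "bs[18 := w']"
  have ex: "linQ ?bs c - linQ bs (\<lambda>j. (if j = 18 then 0 else c j) + c 18 * d j) \<in> C3_ideal" for c
    using linQ_exchange[OF l, of w' c d] I_lmul[OF w, of "scal (c 18)"] by simp
  {
    obtain c where c: "a - linQ bs c \<in> C3_ideal" using spanA[of a] by (auto simp: Sp_def)
    define e where "e j = (if j = 18 then c 18 / d 18 else c j - c 18 / d 18 * d j)" for j
    have "(\<lambda>j. (if j = 18 then 0 else e j) + e 18 * d j) = c"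
      using d by (auto simp: e_def fun_eq_iff)
    then have ee: "linQ ?bs e - linQ bs c \<in> C3_ideal" using ex[of e] by simp
    have "a - linQ ?bs e \<in> C3_ideal" using I_diff[OF c ee] by (simp add: algebra_simps)
    then show "Sp ?bs a" by (auto simp: Sp_def)
  }
  assume m: "linQ ?bs c \<in> C3_ideal"
  have "linQ bs (\<lambda>j. (if j = 18 then 0 else c j) + c 18 * d j) \<in> C3_ideal"
    using I_diff[OF m ex[of c]] by simp
  then have z: "\<forall>i<20. (if i = 18 then 0 else c i) + c 18 * d i = 0" by (rule indA)
  have "c 18 * d 18 = 0" using z[rule_format, of 18] by simp
  then have c18: "c 18 = 0" using d by simp
  show "\<forall>i<20. c i = 0"
  proof (intro allI impI)
    fix i :: nat assume "i < 20"
    then show "c i = 0" using z[rule_format, of i] c18 by (cases "i = 18") simp_all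
  qed
qed

lemma basis_fact: "j < 20 \<Longrightarrow> grp (abs_braid3 (bs ! j)) - linA bs (unitL j) \<in> C3_ideal"
  by (simp add: linA_unit I_zero)

definition colA_a :: "lp list list" where "colA_a = [[[],[((0,0),1)],[],[],[],[],[],[],[],[],[],[],[],[],[],[],[],[],[],[]],
      [[((0,1),1),((1,0),1),((1,1),-1)],[((0,0),-1),((0,1),1),((1,0),1)],[((1,1),-1)],[],[],[],[],[],[],[],[],[],[],[],[],[],[],[],[],[]],
      [[((0,0),1)],[],[],[],[],[],[],[],[],[],[],[],[],[],[],[],[],[],[],[]],
      [[],[],[],[],[],[],[],[],[],[((0,0),1)],[],[],[],[],[],[],[],[],[],[]],
      [[],[],[],[],[],[],[],[],[],[],[],[((0,0),1)],[],[],[],[],[],[],[],[]],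
      [[],[],[],[],[],[],[],[],[],[],[],[],[],[((0,0),1)],[],[],[],[],[],[]],
      [[],[],[],[],[],[],[],[],[],[],[],[],[],[],[((0,0),1)],[],[],[],[],[]],
      [[],[],[],[((0,0),1),((0,1),-1),((1,0),-1),((1,1),1)],[((0,0),-1),((0,1),1),((1,0),1),((1,1),-1)],[((0,0),1)],[((0,1),-1),((1,0),-1),((1,1),1)],[((0,0),-1)],[((0,1),1),((1,0),1),((1,1),-1)],[((0,0),1),((0,1),-1),((1,0),-1)],[((1,1),1)],[((0,0),-1),((0,1),1),((1,0),1)],[((1,1),-1)],[((0,0),1)],[((0,1),-1),((1,0),-1)],[((0,1),1),((1,0),1)],[],[((1,1),-1)],[((1,1),1)],[]],
      [[],[],[],[],[],[],[],[],[],[],[],[],[],[],[],[((0,0),1)],[],[],[],[]],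
      [[],[],[],[((0,1),1),((1,0),1),((1,1),-1)],[],[],[],[],[],[((0,0),-1),((0,1),1),((1,0),1)],[((1,1),-1)],[],[],[],[],[],[],[],[],[]],
      [[],[],[],[((0,0),1)],[],[],[],[],[],[],[],[],[],[],[],[],[],[],[],[]],
      [[],[],[],[],[((0,1),1),((1,0),1),((1,1),-1)],[],[],[],[],[],[],[((0,0),-1),((0,1),1),((1,0),1)],[((1,1),-1)],[],[],[],[],[],[],[]],
      [[],[],[],[],[((0,0),1)],[],[],[],[],[],[],[],[],[],[],[],[],[],[],[]],
      [[],[],[],[],[],[((0,1),1),((1,0),1)],[((1,1),-1)],[((1,1),-1)],[((1,1),1)],[((1,1),-1)],[((1,1),1)],[((1,1),1)],[((1,1),-1)],[((0,0),-1),((0,1),1),((1,0),1)],[((1,1),-1)],[((1,1),1)],[((1,1),-1)],[],[],[]],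
      [[],[],[],[],[],[],[((0,1),1),((1,0),1),((1,1),-1)],[],[],[],[],[],[],[],[((0,0),-1),((0,1),1),((1,0),1)],[],[],[],[((1,1),-1)],[]],
      [[],[],[],[],[],[],[],[],[((0,1),1),((1,0),1),((1,1),-1)],[],[],[],[],[],[],[((0,0),-1),((0,1),1),((1,0),1)],[],[((1,1),-1)],[],[]],
      [[],[],[],[],[],[],[],[((0,0),1)],[],[],[],[],[],[],[],[],[],[],[],[]],
      [[],[],[],[],[],[],[],[],[((0,0),1)],[],[],[],[],[],[],[],[],[],[],[]],
      [[],[],[],[],[],[],[((0,0),1)],[],[],[],[],[],[],[],[],[],[],[],[],[]],
      [[((-1,-1),1),((-1,0),-2),((-1,1),1),((0,-1),-2),((0,0),4),((0,1),-2),((1,-1),1),((1,0),-2),((1,1),1)],[((-1,-1),1),((-1,0),-2),((-1,1),1),((0,-1),-2),((0,0),3),((0,1),-1),((1,-1),1),((1,0),-1)],[((0,0),1),((0,1),-1),((1,0),-1),((1,1),1)],[((-1,-1),1),((-1,0),-1),((0,-1),-1),((0,1),1),((1,0),1),((1,1),-1)],[((-1,0),-1),((-1,1),1),((0,-1),-1),((0,0),4),((0,1),-3),((1,-1),1),((1,0),-3),((1,1),2)],[((0,0),-1)],[((0,0),1),((0,1),1),((1,0),1),((1,1),-1)],[((0,0),1)],[((0,1),-1),((1,0),-1),((1,1),1)],[((-1,-1),1),((-1,0),-1),((0,-1),-1),((0,1),1),((1,0),1)],[((1,1),-1)],[((-1,0),-1),((-1,1),1),((0,-1),-1),((0,0)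,3),((0,1),-2),((1,-1),1),((1,0),-2)],[((0,0),1),((0,1),-1),((1,0),-1),((1,1),2)],[((0,0),-1)],[((0,0),1),((0,1),1),((1,0),1)],[((0,1),-1),((1,0),-1)],[((0,0),1)],[((1,1),1)],[((1,1),-1)],[((0,0),-1)]]]"

definition colA_ai :: "lp list list" where "colA_ai = [[[],[],[((0,0),1)],[],[],[],[],[],[],[],[],[],[],[],[],[],[],[],[],[]],
      [[((0,0),1)],[],[],[],[],[],[],[],[],[],[],[],[],[],[],[],[],[],[],[]],
      [[((-1,-1),-1),((-1,0),1),((0,-1),1)],[((-1,-1),-1)],[((-1,0),1),((0,-1),1),((0,0),-1)],[],[],[],[],[],[],[],[],[],[],[],[],[],[],[],[],[]],
      [[],[],[],[],[],[],[],[],[],[],[((0,0),1)],[],[],[],[],[],[],[],[],[]],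
      [[],[],[],[],[],[],[],[],[],[],[],[],[((0,0),1)],[],[],[],[],[],[],[]],
      [[],[],[],[],[],[((0,0),-1)],[((0,0),1)],[((0,0),1)],[((0,0),-1)],[((0,0),1)],[((0,0),-1)],[((0,0),-1)],[((0,0),1)],[],[((0,0),1)],[((0,0),-1)],[((0,0),1)],[],[],[]],
      [[],[],[],[],[],[],[],[],[],[],[],[],[],[],[],[],[],[],[((0,0),1)],[]],
      [[],[],[],[],[],[],[],[],[],[],[],[],[],[],[],[],[((0,0),1)],[],[],[]],
      [[],[],[],[],[],[],[],[],[],[],[],[],[],[],[],[],[],[((0,0),1)],[],[]],
      [[],[],[],[((0,0),1)],[],[],[],[],[],[],[],[],[],[],[],[],[],[],[],[]],
      [[],[],[],[((-1,-1),-1),((-1,0),1),((0,-1),1)],[],[],[],[],[],[((-1,-1),-1)],[((-1,0),1),((0,-1),1),((0,0),-1)],[],[],[],[],[],[],[],[],[]],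
      [[],[],[],[],[((0,0),1)],[],[],[],[],[],[],[],[],[],[],[],[],[],[],[]],
      [[],[],[],[],[((-1,-1),-1),((-1,0),1),((0,-1),1)],[],[],[],[],[],[],[((-1,-1),-1)],[((-1,0),1),((0,-1),1),((0,0),-1)],[],[],[],[],[],[],[]],
      [[],[],[],[],[],[((0,0),1)],[],[],[],[],[],[],[],[],[],[],[],[],[],[]],
      [[],[],[],[],[],[],[((0,0),1)],[],[],[],[],[],[],[],[],[],[],[],[],[]],
      [[],[],[],[],[],[],[],[],[((0,0),1)],[],[],[],[],[],[],[],[],[],[],[]],
      [[],[],[],[((-1,-1),-1),((-1,0),1),((0,-1),1),((0,0),-1)],[((-1,-1),1),((-1,0),-1),((0,-1),-1),((0,0),1)],[((-1,-1),-1)],[((-1,0),1),((0,-1),1),((0,0),-1)],[((-1,0),1),((0,-1),1)],[((-1,0),-1),((0,-1),-1),((0,0),1)],[((-1,-1),-1),((-1,0),1),((0,-1),1)],[((0,0),-1)],[((-1,-1),1),((-1,0),-1),((0,-1),-1)],[((0,0),1)],[((-1,-1),-1)],[((-1,0),1),((0,-1),1)],[((-1,0),-1),((0,-1),-1)],[((-1,0),1),((0,-1),1),((0,0),-1)],[((0,0),1)],[((0,0),-1)],[]],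
      [[],[],[],[],[],[],[],[],[((-1,-1),-1),((-1,0),1),((0,-1),1)],[],[],[],[],[],[],[((-1,-1),-1)],[],[((-1,0),1),((0,-1),1),((0,0),-1)],[],[]],
      [[],[],[],[],[],[],[((-1,-1),-1),((-1,0),1),((0,-1),1)],[],[],[],[],[],[],[],[((-1,-1),-1)],[],[],[],[((-1,0),1),((0,-1),1),((0,0),-1)],[]],
      [[],[((-1,-1),-1),((-1,0),1),((0,-1),1),((0,0),-1)],[((-1,-1),1),((-1,0),-1),((0,-1),-1),((0,0),1)],[],[],[((-1,-1),-1)],[((-1,0),1),((0,-1),1)],[((-1,0),1),((0,-1),1),((0,0),-1)],[((-1,0),-1),((0,-1),-1),((0,0),1)],[((-1,-1),-1),((-1,0),1),((0,-1),1)],[((-1,-1),1),((-1,0),-1),((0,-1),-1)],[((0,0),-1)],[((0,0),1)],[((-1,-1),-1)],[((-1,0),1),((0,-1),1)],[((-1,0),-1),((0,-1),-1)],[((-1,0),1),((0,-1),1),((0,0),-1)],[((0,0),1)],[],[((0,0),-1)]]]"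

definition colA_b :: "lp list list" where "colA_b = [[[],[],[],[((0,0),1)],[],[],[],[],[],[],[],[],[],[],[],[],[],[],[],[]],
      [[],[],[],[],[],[((0,0),1)],[],[],[],[],[],[],[],[],[],[],[],[],[],[]],
      [[],[],[],[],[],[],[((0,0),1)],[],[],[],[],[],[],[],[],[],[],[],[],[]],
      [[((0,1),1),((1,0),1),((1,1),-1)],[],[],[((0,0),-1),((0,1),1),((1,0),1)],[((1,1),-1)],[],[],[],[],[],[],[],[],[],[],[],[],[],[],[]],
      [[((0,0),1)],[],[],[],[],[],[],[],[],[],[],[],[],[],[],[],[],[],[],[]],
      [[],[((0,1),1),((1,0),1),((1,1),-1)],[],[],[],[((0,0),-1),((0,1),1),((1,0),1)],[],[((1,1),-1)],[],[],[],[],[],[],[],[],[],[],[],[]],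
      [[],[],[((0,1),1),((1,0),1),((1,1),-1)],[],[],[],[((0,0),-1),((0,1),1),((1,0),1)],[],[((1,1),-1)],[],[],[],[],[],[],[],[],[],[],[]],
      [[],[((0,0),1)],[],[],[],[],[],[],[],[],[],[],[],[],[],[],[],[],[],[]],
      [[],[],[((0,0),1)],[],[],[],[],[],[],[],[],[],[],[],[],[],[],[],[],[]],
      [[],[],[],[],[],[],[],[],[],[],[],[],[],[((0,0),1)],[],[],[],[],[],[]],
      [[],[((0,0),1),((0,1),-1),((1,0),-1),((1,1),1)],[((0,0),-1),((0,1),1),((1,0),1),((1,1),-1)],[],[],[((0,0),1)],[((0,0),-1)],[((0,1),-1),((1,0),-1),((1,1),1)],[((0,1),1),((1,0),1),((1,1),-1)],[((0,0),1),((0,1),-1),((1,0),-1)],[((0,0),-1),((0,1),1),((1,0),1)],[((1,1),1)],[((1,1),-1)],[((0,0),1)],[((0,1),-1),((1,0),-1)],[((0,1),1),((1,0),1)],[],[((1,1),-1)],[],[((1,1),1)]],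
      [[],[],[],[],[],[((0,0),-1)],[((0,0),1)],[((0,0),1)],[((0,0),-1)],[((0,0),1)],[((0,0),-1)],[((0,0),-1)],[((0,0),1)],[],[((0,0),1)],[((0,0),-1)],[((0,0),1)],[],[],[]],
      [[],[],[],[],[],[],[],[],[],[],[],[],[],[],[],[],[((0,0),1)],[],[],[]],
      [[],[],[],[],[],[],[],[],[],[((0,1),1),((1,0),1),((1,1),-1)],[],[],[],[((0,0),-1),((0,1),1),((1,0),1)],[((1,1),-1)],[],[],[],[],[]],
      [[],[],[],[],[],[],[],[],[],[((0,0),1)],[],[],[],[],[],[],[],[],[],[]],
      [[],[],[],[],[],[],[],[],[],[],[((0,0),1)],[],[],[],[],[],[],[],[],[]],
      [[],[],[],[],[],[],[],[],[],[],[],[],[((0,1),1),((1,0),1),((1,1),-1)],[],[],[],[((0,0),-1),((0,1),1),((1,0),1)],[((1,1),-1)],[],[]],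
      [[],[],[],[],[],[],[],[],[],[],[],[],[((0,0),1)],[],[],[],[],[],[],[]],
      [[((-1,-1),1),((-1,0),-2),((-1,1),1),((0,-1),-2),((0,0),4),((0,1),-2),((1,-1),1),((1,0),-2),((1,1),1)],[((-1,-1),1),((-1,0),-1),((0,-1),-1),((0,1),1),((1,0),1),((1,1),-1)],[((-1,0),-1),((-1,1),1),((0,-1),-1),((0,0),4),((0,1),-3),((1,-1),1),((1,0),-3),((1,1),2)],[((-1,-1),1),((-1,0),-2),((-1,1),1),((0,-1),-2),((0,0),3),((0,1),-1),((1,-1),1),((1,0),-1)],[((0,0),1),((0,1),-1),((1,0),-1),((1,1),1)],[((-1,-1),1),((-1,0),-1),((0,-1),-1),((0,0),-1)],[((-1,0),-1),((-1,1),1),((0,-1),-1),((0,0),4),((0,1),-1),((1,-1),1),((1,0),-1)],[((0,0),1),((0,1),1),((1,0),1),((1,1),-1)],[((0,1),-2),((1,0),-2),((1,1),2)],[((0,1),1),((1,0),1)],[((0,1),-1),((1,0),-1)],[((1,1),-1)],[((0,0),1),((1,1),1)],[((0,0),-1)],[((0,0),1),((0,1),1),((1,0),1)],[((0,1),-1),((1,0),-1)],[((0,0),1)],[((1,1),1)],[((0,0),-1)],[((1,1),-1)]],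
      [[],[],[],[],[],[],[],[],[],[],[],[((0,0),1)],[],[],[],[],[],[],[],[]]]"

definition colA_bi :: "lp list list" where "colA_bi = [[[],[],[],[],[((0,0),1)],[],[],[],[],[],[],[],[],[],[],[],[],[],[],[]],
      [[],[],[],[],[],[],[],[((0,0),1)],[],[],[],[],[],[],[],[],[],[],[],[]],
      [[],[],[],[],[],[],[],[],[((0,0),1)],[],[],[],[],[],[],[],[],[],[],[]],
      [[((0,0),1)],[],[],[],[],[],[],[],[],[],[],[],[],[],[],[],[],[],[],[]],
      [[((-1,-1),-1),((-1,0),1),((0,-1),1)],[],[],[((-1,-1),-1)],[((-1,0),1),((0,-1),1),((0,0),-1)],[],[],[],[],[],[],[],[],[],[],[],[],[],[],[]],
      [[],[((0,0),1)],[],[],[],[],[],[],[],[],[],[],[],[],[],[],[],[],[],[]],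
      [[],[],[((0,0),1)],[],[],[],[],[],[],[],[],[],[],[],[],[],[],[],[],[]],
      [[],[((-1,-1),-1),((-1,0),1),((0,-1),1)],[],[],[],[((-1,-1),-1)],[],[((-1,0),1),((0,-1),1),((0,0),-1)],[],[],[],[],[],[],[],[],[],[],[],[]],
      [[],[],[((-1,-1),-1),((-1,0),1),((0,-1),1)],[],[],[],[((-1,-1),-1)],[],[((-1,0),1),((0,-1),1),((0,0),-1)],[],[],[],[],[],[],[],[],[],[],[]],
      [[],[],[],[],[],[],[],[],[],[],[],[],[],[],[((0,0),1)],[],[],[],[],[]],
      [[],[],[],[],[],[],[],[],[],[],[],[],[],[],[],[((0,0),1)],[],[],[],[]],
      [[],[],[],[],[],[],[],[],[],[],[],[],[],[],[],[],[],[],[],[((0,0),1)]],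
      [[],[],[],[],[],[],[],[],[],[],[],[],[],[],[],[],[],[((0,0),1)],[],[]],
      [[],[],[],[],[],[],[],[],[],[((0,0),1)],[],[],[],[],[],[],[],[],[],[]],
      [[],[],[],[],[],[],[],[],[],[((-1,-1),-1),((-1,0),1),((0,-1),1)],[],[],[],[((-1,-1),-1)],[((-1,0),1),((0,-1),1),((0,0),-1)],[],[],[],[],[]],
      [[],[((-1,-1),-1),((-1,0),1),((0,-1),1),((0,0),-1)],[((-1,-1),1),((-1,0),-1),((0,-1),-1),((0,0),1)],[],[],[((-1,-1),-1)],[((-1,-1),1)],[((-1,0),1),((0,-1),1),((0,0),-1)],[((-1,0),-1),((0,-1),-1),((0,0),1)],[((-1,-1),-1),((-1,0),1),((0,-1),1)],[],[((0,0),-1)],[((0,0),1)],[((-1,-1),-1)],[((-1,0),1),((0,-1),1)],[((0,0),-1)],[],[((0,0),1)],[],[((0,0),-1)]],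
      [[],[],[],[],[],[],[],[],[],[],[],[],[((0,0),1)],[],[],[],[],[],[],[]],
      [[],[],[],[],[],[],[],[],[],[],[],[],[((-1,-1),-1),((-1,0),1),((0,-1),1)],[],[],[],[((-1,-1),-1)],[((-1,0),1),((0,-1),1),((0,0),-1)],[],[]],
      [[],[],[],[((-1,-1),-1),((-1,0),1),((0,-1),1),((0,0),-1)],[((-1,-1),1),((-1,0),-1),((0,-1),-1),((0,0),1)],[((-1,-1),-1)],[((-1,0),1),((0,-1),1),((0,0),-1)],[((-1,-1),1)],[((-1,0),-1),((0,-1),-1),((0,0),1)],[((-1,-1),-1),((-1,0),1),((0,-1),1)],[((0,0),-1)],[],[((0,0),1)],[((-1,-1),-1)],[((-1,0),1),((0,-1),1)],[((0,0),-1)],[],[((0,0),1)],[((0,0),-1)],[]],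
      [[],[],[],[],[],[((-1,-1),1)],[((-1,-1),-1)],[((-1,-1),-1)],[((-1,-1),1)],[((-1,-1),-1)],[((-1,-1),1)],[((-1,0),1),((0,-1),1)],[((-1,-1),-1)],[],[((-1,-1),-1)],[((-1,-1),1)],[((-1,-1),-1)],[],[],[((-1,0),1),((0,-1),1),((0,0),-1)]]]"

definition CA :: cols where
  "CA g e = (case (g,e) of (G1,True) \<Rightarrow> colA_a | (G1,False) \<Rightarrow> colA_ai | (G2,True) \<Rightarrow> colA_b | (G2,False) \<Rightarrow> colA_bi)"

definition bsA :: "bword list" where "bsA = [[],[(G1,True)],[(G1,False)],[(G2,True)],[(G2,False)],[(G2,True),(G1,True)],[(G2,True),(G1,False)],[(G2,False),(G1,True)],[(G2,False),(G1,False)],[(G1,True),(G2,True)],[(G1,False),(G2,True)],[(G1,True),(G2,False)],[(G1,False),(G2,False)],[(G1,True),(G2,True),(G1,True)],[(G1,True),(G2,True),(G1,False)],[(G1,True),(G2,False),(G1,False)],[(G1,False),(G2,False),(G1,True)],[(G1,False),(G2,False),(G1,False)],[(G1,False),(G2,True),(G1,False)],[(G2,False),(G1,True),(G2,False)]]"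

definition vA0 :: "lp list" where "vA0 = [[((0,1),1),((1,0),1),((1,1),-1)],[((0,0),-1),((0,1),1),((1,0),1)],[((1,1),-1)],[],[],[],[],[],[],[],[],[],[],[],[],[],[],[],[],[]]"

definition vA1 :: "lp list" where "vA1 = [[],[],[],[],[],[],[((0,1),1),((1,0),1),((1,1),-1)],[],[],[],[],[],[],[],[((0,0),-1),((0,1),1),((1,0),1)],[],[],[],[((1,1),-1)],[]]"

definition vA2 :: "lp list" where "vA2 = [[],[],[],[],[],[],[],[],[((0,1),1),((1,0),1),((1,1),-1)],[],[],[],[],[],[],[((0,0),-1),((0,1),1),((1,0),1)],[],[((1,1),-1)],[],[]]"

definition vA3 :: "lp list" where "vA3 = [[],[],[],[((0,1),1),((1,0),1),((1,1),-1)],[],[],[],[],[],[((0,0),-1),((0,1),1),((1,0),1)],[((1,1),-1)],[],[],[],[],[],[],[],[],[]]"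

definition vA4 :: "lp list" where "vA4 = [[],[],[],[],[((0,1),1),((1,0),1),((1,1),-1)],[],[],[],[],[],[],[((0,0),-1),((0,1),1),((1,0),1)],[((1,1),-1)],[],[],[],[],[],[],[]]"

definition vA5 :: "lp list" where "vA5 = [[],[],[],[((0,0),1),((0,1),-1),((1,0),-1),((1,1),1)],[((0,0),-1),((0,1),1),((1,0),1),((1,1),-1)],[((0,0),1)],[((0,1),-1),((1,0),-1),((1,1),1)],[((0,0),-1)],[((0,1),1),((1,0),1),((1,1),-1)],[((0,0),1),((0,1),-1),((1,0),-1)],[((1,1),1)],[((0,0),-1),((0,1),1),((1,0),1)],[((1,1),-1)],[((0,0),1)],[((0,1),-1),((1,0),-1)],[((0,1),1),((1,0),1)],[],[((1,1),-1)],[((1,1),1)],[]]"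

definition vA6 :: "lp list" where "vA6 = [[],[],[],[],[],[((0,0),-1)],[((0,0),1)],[((0,0),1)],[((0,0),-1)],[((0,0),1)],[((0,0),-1)],[((0,0),-1)],[((0,0),1)],[],[((0,0),1)],[((0,0),-1)],[((0,0),1)],[],[],[]]"

definition vA7 :: "lp list" where "vA7 = [[],[],[],[],[],[((0,1),1),((1,0),1)],[((1,1),-1)],[((1,1),-1)],[((1,1),1)],[((1,1),-1)],[((1,1),1)],[((1,1),1)],[((1,1),-1)],[((0,0),-1),((0,1),1),((1,0),1)],[((1,1),-1)],[((1,1),1)],[((1,1),-1)],[],[],[]]"

definition vA8 :: "lp list" where "vA8 = [[],[((-1,-1),-1),((-1,0),1),((0,-1),1)],[],[],[],[],[],[],[],[((-1,-1),-1)],[],[((-1,0),1),((0,-1),1),((0,0),-1)],[],[],[],[],[],[],[],[]]"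

definition vA9 :: "lp list" where "vA9 = [[((-1,-1),-1),((-1,0),1),((0,-1),1)],[],[],[((-1,-1),-1)],[((-1,0),1),((0,-1),1),((0,0),-1)],[],[],[],[],[],[],[],[],[],[],[],[],[],[],[]]"

definition vA10 :: "lp list" where "vA10 = [[],[],[((-1,-1),-1),((-1,0),1),((0,-1),1)],[],[],[],[],[],[],[],[((-1,-1),-1)],[],[((-1,0),1),((0,-1),1),((0,0),-1)],[],[],[],[],[],[],[]]"

definition vA11 :: "lp list" where "vA11 = [[((-1,0),-1),((-1,1),1),((0,-1),-1),((0,0),3),((0,1),-1),((1,-1),1),((1,0),-1)],[((-1,-1),1),((-1,0),-2),((-1,1),1),((0,-1),-2),((0,0),2),((1,-1),1)],[((0,0),1),((0,1),-1),((1,0),-1)],[((-1,0),-1),((0,-1),-1),((0,0),1)],[((-1,1),1),((0,0),2),((0,1),-2),((1,-1),1),((1,0),-2),((1,1),1)],[],[],[],[],[((-1,-1),1),((-1,0),-1),((0,-1),-1)],[((0,0),1)],[((-1,0),-1),((-1,1),1),((0,-1),-1),((0,0),3),((0,1),-1),((1,-1),1),((1,0),-1)],[((0,1),-1),((1,0),-1),((1,1),1)],[],[],[],[],[],[],[]]"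

definition vA12 :: "lp list" where "vA12 = [[((-1,-1),1),((-1,0),-2),((-1,1),1),((0,-1),-2),((0,0),4),((0,1),-2),((1,-1),1),((1,0),-2),((1,1),1)],[((-1,-1),1),((-1,0),-2),((-1,1),1),((0,-1),-2),((0,0),3),((0,1),-1),((1,-1),1),((1,0),-1)],[((0,0),1),((0,1),-1),((1,0),-1),((1,1),1)],[((-1,-1),1),((-1,0),-1),((0,-1),-1),((0,1),1),((1,0),1),((1,1),-1)],[((-1,0),-1),((-1,1),1),((0,-1),-1),((0,0),4),((0,1),-3),((1,-1),1),((1,0),-3),((1,1),2)],[((0,0),-1)],[((0,0),1),((0,1),1),((1,0),1),((1,1),-1)],[((0,0),1)],[((0,1),-1),((1,0),-1),((1,1),1)],[((-1,-1),1),((-1,0),-1),((0,-1),-1),((0,1),1),((1,0),1)],[((1,1),-1)],[((-1,0),-1),((-1,1),1),((0,-1),-1),((0,0),3),((0,1),-2),((1,-1),1),((1,0),-2)],[((0,0),1),((0,1),-1),((1,0),-1),((1,1),2)],[((0,0),-1)],[((0,0),1),((0,1),1),((1,0),1)],[((0,1),-1),((1,0),-1)],[((0,0),1)],[((1,1),1)],[((1,1),-1)],[((0,0),-1)]]"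

definition vA13 :: "lp list" where "vA13 = [[((0,1),1),((1,0),1),((1,1),-1)],[],[],[((0,0),-1),((0,1),1),((1,0),1)],[((1,1),-1)],[],[],[],[],[],[],[],[],[],[],[],[],[],[],[]]"

definition vA14 :: "lp list" where "vA14 = [[],[((0,1),1),((1,0),1),((1,1),-1)],[],[],[],[((0,0),-1),((0,1),1),((1,0),1)],[],[((1,1),-1)],[],[],[],[],[],[],[],[],[],[],[],[]]"

definition vA15 :: "lp list" where "vA15 = [[],[],[((0,1),1),((1,0),1),((1,1),-1)],[],[],[],[((0,0),-1),((0,1),1),((1,0),1)],[],[((1,1),-1)],[],[],[],[],[],[],[],[],[],[],[]]"

definition vA16 :: "lp list" where "vA16 = [[],[],[],[],[],[((0,0),1),((0,1),-1),((1,0),-1)],[((0,0),-1),((0,1),1),((1,0),1)],[((0,0),-1),((0,1),1),((1,0),1)],[((0,0),1),((0,1),-1),((1,0),-1)],[((0,0),-1),((0,1),1),((1,0),1)],[((0,0),1),((0,1),-1),((1,0),-1)],[((0,0),1),((1,1),-1)],[((0,0),-1),((0,1),1),((1,0),1)],[],[((0,0),-1),((0,1),1),((1,0),1)],[((0,0),1),((0,1),-1),((1,0),-1)],[((0,0),-1),((0,1),1),((1,0),1)],[],[],[((1,1),-1)]]"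

definition vA17 :: "lp list" where "vA17 = [[],[],[],[],[],[],[],[],[],[],[],[],[((0,1),1),((1,0),1),((1,1),-1)],[],[],[],[((0,0),-1),((0,1),1),((1,0),1)],[((1,1),-1)],[],[]]"

definition vA18 :: "lp list" where "vA18 = [[],[((0,0),1),((0,1),-1),((1,0),-1),((1,1),1)],[((0,0),-1),((0,1),1),((1,0),1),((1,1),-1)],[],[],[((0,0),1)],[((0,0),-1)],[((0,1),-1),((1,0),-1),((1,1),1)],[((0,1),1),((1,0),1),((1,1),-1)],[((0,0),1),((0,1),-1),((1,0),-1)],[((0,0),-1),((0,1),1),((1,0),1)],[((1,1),1)],[((1,1),-1)],[((0,0),1)],[((0,1),-1),((1,0),-1)],[((0,1),1),((1,0),1)],[],[((1,1),-1)],[],[((1,1),1)]]"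

definition vA19 :: "lp list" where "vA19 = [[],[],[],[],[],[],[],[],[],[((0,1),1),((1,0),1),((1,1),-1)],[],[],[],[((0,0),-1),((0,1),1),((1,0),1)],[((1,1),-1)],[],[],[],[],[]]"

definition vA20 :: "lp list" where "vA20 = [[],[],[],[((-1,-1),-1),((-1,0),1),((0,-1),1)],[],[((-1,-1),-1)],[((-1,0),1),((0,-1),1),((0,0),-1)],[],[],[],[],[],[],[],[],[],[],[],[],[]]"

definition vA21 :: "lp list" where "vA21 = [[((-1,-1),-1),((-1,0),1),((0,-1),1)],[((-1,-1),-1)],[((-1,0),1),((0,-1),1),((0,0),-1)],[],[],[],[],[],[],[],[],[],[],[],[],[],[],[],[],[]]"

definition vA22 :: "lp list" where "vA22 = [[],[],[],[],[((-1,-1),-1),((-1,0),1),((0,-1),1)],[],[],[((-1,-1),-1)],[((-1,0),1),((0,-1),1),((0,0),-1)],[],[],[],[],[],[],[],[],[],[],[]]"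

definition vA23 :: "lp list" where "vA23 = [[((-1,0),-1),((-1,1),1),((0,-1),-1),((0,0),3),((0,1),-1),((1,-1),1),((1,0),-1)],[((-1,0),-1),((0,-1),-1),((0,0),1)],[((-1,1),1),((0,0),2),((0,1),-2),((1,-1),1),((1,0),-2),((1,1),1)],[((-1,-1),1),((-1,0),-2),((-1,1),1),((0,-1),-2),((0,0),2),((1,-1),1)],[((0,0),1),((0,1),-1),((1,0),-1)],[((-1,-1),1),((-1,0),-1),((0,-1),-1)],[((-1,0),-1),((-1,1),1),((0,-1),-1),((0,0),3),((0,1),-1),((1,-1),1),((1,0),-1)],[((0,0),1)],[((0,1),-1),((1,0),-1),((1,1),1)],[],[],[],[],[],[],[],[],[],[],[]]"

definition vA24 :: "lp list" where "vA24 = [[((-1,-1),1),((-1,0),-2),((-1,1),1),((0,-1),-2),((0,0),4),((0,1),-2),((1,-1),1),((1,0),-2),((1,1),1)],[((-1,-1),1),((-1,0),-1),((0,-1),-1),((0,1),1),((1,0),1),((1,1),-1)],[((-1,0),-1),((-1,1),1),((0,-1),-1),((0,0),4),((0,1),-3),((1,-1),1),((1,0),-3),((1,1),2)],[((-1,-1),1),((-1,0),-2),((-1,1),1),((0,-1),-2),((0,0),3),((0,1),-1),((1,-1),1),((1,0),-1)],[((0,0),1),((0,1),-1),((1,0),-1),((1,1),1)],[((-1,-1),1),((-1,0),-1),((0,-1),-1),((0,0),-1)],[((-1,0),-1),((-1,1),1),((0,-1),-1),((0,0),4),((0,1),-1),((1,-1),1),((1,0),-1)],[((0,0),1),((0,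1),1),((1,0),1),((1,1),-1)],[((0,1),-2),((1,0),-2),((1,1),2)],[((0,1),1),((1,0),1)],[((0,1),-1),((1,0),-1)],[((1,1),-1)],[((0,0),1),((1,1),1)],[((0,0),-1)],[((0,0),1),((0,1),1),((1,0),1)],[((0,1),-1),((1,0),-1)],[((0,0),1)],[((1,1),1)],[((0,0),-1)],[((1,1),-1)]]"

lemma BA0: "grp (abs_braid3 []) - linA bsA (unitL 0) \<in> C3_ideal"
  using basis_fact[of 0 bsA] by (simp add: bsA_def)

lemma BA1: "grp (abs_braid3 [(G1,True)]) - linA bsA (unitL 1) \<in> C3_ideal"
  using basis_fact[of 1 bsA] by (simp add: bsA_def)

lemma BA2: "grp (abs_braid3 [(G1,False)]) - linA bsA (unitL 2) \<in> C3_ideal"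
  using basis_fact[of 2 bsA] by (simp add: bsA_def)

lemma BA3: "grp (abs_braid3 [(G2,True)]) - linA bsA (unitL 3) \<in> C3_ideal"
  using basis_fact[of 3 bsA] by (simp add: bsA_def)

lemma BA4: "grp (abs_braid3 [(G2,False)]) - linA bsA (unitL 4) \<in> C3_ideal"
  using basis_fact[of 4 bsA] by (simp add: bsA_def)

lemma BA5: "grp (abs_braid3 [(G2,True),(G1,True)]) - linA bsA (unitL 5) \<in> C3_ideal"
  using basis_fact[of 5 bsA] by (simp add: bsA_def)

lemma BA6: "grp (abs_braid3 [(G2,True),(G1,False)]) - linA bsA (unitL 6) \<in> C3_ideal"
  using basis_fact[of 6 bsA] by (simp add: bsA_def)

lemma BA7: "grp (abs_braid3 [(G2,False),(G1,True)]) - linA bsA (unitL 7) \<in> C3_ideal"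
  using basis_fact[of 7 bsA] by (simp add: bsA_def)

lemma BA8: "grp (abs_braid3 [(G2,False),(G1,False)]) - linA bsA (unitL 8) \<in> C3_ideal"
  using basis_fact[of 8 bsA] by (simp add: bsA_def)

lemma BA9: "grp (abs_braid3 [(G1,True),(G2,True)]) - linA bsA (unitL 9) \<in> C3_ideal"
  using basis_fact[of 9 bsA] by (simp add: bsA_def)

lemma BA10: "grp (abs_braid3 [(G1,False),(G2,True)]) - linA bsA (unitL 10) \<in> C3_ideal"
  using basis_fact[of 10 bsA] by (simp add: bsA_def)

lemma BA11: "grp (abs_braid3 [(G1,True),(G2,False)]) - linA bsA (unitL 11) \<in> C3_ideal"
  using basis_fact[of 11 bsA] by (simp add: bsA_def)

lemma BA12: "grp (abs_braid3 [(G1,False),(G2,False)]) - linA bsA (unitL 12) \<in> C3_ideal"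
  using basis_fact[of 12 bsA] by (simp add: bsA_def)

lemma BA13: "grp (abs_braid3 [(G1,True),(G2,True),(G1,True)]) - linA bsA (unitL 13) \<in> C3_ideal"
  using basis_fact[of 13 bsA] by (simp add: bsA_def)

lemma BA14: "grp (abs_braid3 [(G1,True),(G2,True),(G1,False)]) - linA bsA (unitL 14) \<in> C3_ideal"
  using basis_fact[of 14 bsA] by (simp add: bsA_def)

lemma BA15: "grp (abs_braid3 [(G1,True),(G2,False),(G1,False)]) - linA bsA (unitL 15) \<in> C3_ideal"
  using basis_fact[of 15 bsA] by (simp add: bsA_def)

lemma BA16: "grp (abs_braid3 [(G1,False),(G2,False),(G1,True)]) - linA bsA (unitL 16) \<in> C3_ideal"
  using basis_fact[of 16 bsA] by (simp add: bsA_def)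

lemma BA17: "grp (abs_braid3 [(G1,False),(G2,False),(G1,False)]) - linA bsA (unitL 17) \<in> C3_ideal"
  using basis_fact[of 17 bsA] by (simp add: bsA_def)

lemma BA18: "grp (abs_braid3 [(G1,False),(G2,True),(G1,False)]) - linA bsA (unitL 18) \<in> C3_ideal"
  using basis_fact[of 18 bsA] by (simp add: bsA_def)

lemma BA19: "grp (abs_braid3 [(G2,False),(G1,True),(G2,False)]) - linA bsA (unitL 19) \<in> C3_ideal"
  using basis_fact[of 19 bsA] by (simp add: bsA_def)

lemma EA0: "grp (abs_braid3 [(G1,True),(G1,True)]) - linA bsA vA0 \<in> C3_ideal"
proof (rule step[where pre="[]" and cp="lone" and post="[(lpal, [(G1,True)]), (lpbe, []), (lpga, [(G1,False)])]" and xss="[(unitL 1), (unitL 0), (unitL 2)]"])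
  show "relA ([] @ (lone, [(G1,True),(G1,True)]) # [(lpal, [(G1,True)]), (lpbe, []), (lpga, [(G1,False)])]) \<in> C3_ideal"
    by (rule I_eq[OF inst_quad[of "[]" "[]" G1]]) (simp add: inst_def quadL_def)
  show "list_all2 (\<lambda>cw xs. grp (abs_braid3 (snd cw)) - linA bsA xs \<in> C3_ideal) ([] @ [(lpal, [(G1,True)]), (lpbe, []), (lpga, [(G1,False)])]) [(unitL 1), (unitL 0), (unitL 2)]"
    using BA1 BA0 BA2 by simp
  show "ev lone \<noteq> 0" by (simp add: ev_lone)
  show "stepchk ([] @ [(lpal, [(G1,True)]), (lpbe, []), (lpga, [(G1,False)])]) [(unitL 1), (unitL 0), (unitL 2)] lone vA0" by code_simp
qed

lemma EA1: "grp (abs_braid3 [(G1,True),(G1,True),(G2,True),(G1,False)]) - linA bsA vA1 \<in> C3_ideal"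
proof (rule step[where pre="[]" and cp="lone" and post="[(lpal, [(G1,True),(G2,True),(G1,False)]), (lpbe, [(G2,True),(G1,False)]), (lpga, [(G1,False),(G2,True),(G1,False)])]" and xss="[(unitL 14), (unitL 6), (unitL 18)]"])
  show "relA ([] @ (lone, [(G1,True),(G1,True),(G2,True),(G1,False)]) # [(lpal, [(G1,True),(G2,True),(G1,False)]), (lpbe, [(G2,True),(G1,False)]), (lpga, [(G1,False),(G2,True),(G1,False)])]) \<in> C3_ideal"
    by (rule I_eq[OF inst_quad[of "[]" "[(G2,True),(G1,False)]" G1]]) (simp add: inst_def quadL_def)
  show "list_all2 (\<lambda>cw xs. grp (abs_braid3 (snd cw)) - linA bsA xs \<in> C3_ideal) ([] @ [(lpal, [(G1,True),(G2,True),(G1,False)]), (lpbe, [(G2,True),(G1,False)]), (lpga, [(G1,False),(G2,True),(G1,False)])]) [(unitL 14), (unitL 6), (unitL 18)]"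
    using BA14 BA6 BA18 by simp
  show "ev lone \<noteq> 0" by (simp add: ev_lone)
  show "stepchk ([] @ [(lpal, [(G1,True),(G2,True),(G1,False)]), (lpbe, [(G2,True),(G1,False)]), (lpga, [(G1,False),(G2,True),(G1,False)])]) [(unitL 14), (unitL 6), (unitL 18)] lone vA1" by code_simp
qed

lemma EA2: "grp (abs_braid3 [(G1,True),(G1,True),(G2,False),(G1,False)]) - linA bsA vA2 \<in> C3_ideal"
proof (rule step[where pre="[]" and cp="lone" and post="[(lpal, [(G1,True),(G2,False),(G1,False)]), (lpbe, [(G2,False),(G1,False)]), (lpga, [(G1,False),(G2,False),(G1,False)])]" and xss="[(unitL 15), (unitL 8), (unitL 17)]"])
  show "relA ([] @ (lone, [(G1,True),(G1,True),(G2,False),(G1,False)]) # [(lpal, [(G1,True),(G2,False),(G1,False)]), (lpbe, [(G2,False),(G1,False)]), (lpga, [(G1,False),(G2,False),(G1,False)])]) \<in> C3_ideal"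
    by (rule I_eq[OF inst_quad[of "[]" "[(G2,False),(G1,False)]" G1]]) (simp add: inst_def quadL_def)
  show "list_all2 (\<lambda>cw xs. grp (abs_braid3 (snd cw)) - linA bsA xs \<in> C3_ideal) ([] @ [(lpal, [(G1,True),(G2,False),(G1,False)]), (lpbe, [(G2,False),(G1,False)]), (lpga, [(G1,False),(G2,False),(G1,False)])]) [(unitL 15), (unitL 8), (unitL 17)]"
    using BA15 BA8 BA17 by simp
  show "ev lone \<noteq> 0" by (simp add: ev_lone)
  show "stepchk ([] @ [(lpal, [(G1,True),(G2,False),(G1,False)]), (lpbe, [(G2,False),(G1,False)]), (lpga, [(G1,False),(G2,False),(G1,False)])]) [(unitL 15), (unitL 8), (unitL 17)] lone vA2" by code_simp
qed

lemma EA3: "grp (abs_braid3 [(G1,True),(G1,True),(G2,True)]) - linA bsA vA3 \<in> C3_ideal"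
proof (rule step[where pre="[]" and cp="lone" and post="[(lpal, [(G1,True),(G2,True)]), (lpbe, [(G2,True)]), (lpga, [(G1,False),(G2,True)])]" and xss="[(unitL 9), (unitL 3), (unitL 10)]"])
  show "relA ([] @ (lone, [(G1,True),(G1,True),(G2,True)]) # [(lpal, [(G1,True),(G2,True)]), (lpbe, [(G2,True)]), (lpga, [(G1,False),(G2,True)])]) \<in> C3_ideal"
    by (rule I_eq[OF inst_quad[of "[]" "[(G2,True)]" G1]]) (simp add: inst_def quadL_def)
  show "list_all2 (\<lambda>cw xs. grp (abs_braid3 (snd cw)) - linA bsA xs \<in> C3_ideal) ([] @ [(lpal, [(G1,True),(G2,True)]), (lpbe, [(G2,True)]), (lpga, [(G1,False),(G2,True)])]) [(unitL 9), (unitL 3), (unitL 10)]"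
    using BA9 BA3 BA10 by simp
  show "ev lone \<noteq> 0" by (simp add: ev_lone)
  show "stepchk ([] @ [(lpal, [(G1,True),(G2,True)]), (lpbe, [(G2,True)]), (lpga, [(G1,False),(G2,True)])]) [(unitL 9), (unitL 3), (unitL 10)] lone vA3" by code_simp
qed

lemma EA4: "grp (abs_braid3 [(G1,True),(G1,True),(G2,False)]) - linA bsA vA4 \<in> C3_ideal"
proof (rule step[where pre="[]" and cp="lone" and post="[(lpal, [(G1,True),(G2,False)]), (lpbe, [(G2,False)]), (lpga, [(G1,False),(G2,False)])]" and xss="[(unitL 11), (unitL 4), (unitL 12)]"])
  show "relA ([] @ (lone, [(G1,True),(G1,True),(G2,False)]) # [(lpal, [(G1,True),(G2,False)]), (lpbe, [(G2,False)]), (lpga, [(G1,False),(G2,False)])]) \<in> C3_ideal"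
    by (rule I_eq[OF inst_quad[of "[]" "[(G2,False)]" G1]]) (simp add: inst_def quadL_def)
  show "list_all2 (\<lambda>cw xs. grp (abs_braid3 (snd cw)) - linA bsA xs \<in> C3_ideal) ([] @ [(lpal, [(G1,True),(G2,False)]), (lpbe, [(G2,False)]), (lpga, [(G1,False),(G2,False)])]) [(unitL 11), (unitL 4), (unitL 12)]"
    using BA11 BA4 BA12 by simp
  show "ev lone \<noteq> 0" by (simp add: ev_lone)
  show "stepchk ([] @ [(lpal, [(G1,True),(G2,False)]), (lpbe, [(G2,False)]), (lpga, [(G1,False),(G2,False)])]) [(unitL 11), (unitL 4), (unitL 12)] lone vA4" by code_simp
qed

lemma chA1: "braid_eq [(G1,True),(G1,False),(G2,True),(G1,True)] [(G2,True),(G1,True)]"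
  apply (rule be_del[where u="[]" and g=G1 and e=True and v="[(G2,True),(G1,True)]", simplified])
  apply (rule braid_eq.refl)
  done

lemma FA1: "grp (abs_braid3 [(G1,True),(G1,False),(G2,True),(G1,True)]) - linA bsA (unitL 5) \<in> C3_ideal"
  using BA5 abs_eqI[OF chA1] by simp

lemma chA2: "braid_eq [(G1,True),(G1,False),(G2,False),(G1,True)] [(G2,False),(G1,True)]"
  apply (rule be_del[where u="[]" and g=G1 and e=True and v="[(G2,False),(G1,True)]", simplified])
  apply (rule braid_eq.refl)
  done

lemma FA2: "grp (abs_braid3 [(G1,True),(G1,False),(G2,False),(G1,True)]) - linA bsA (unitL 7) \<in> C3_ideal"
  using BA7 abs_eqI[OF chA2] by simp

lemma chA3: "braid_eq [(G1,True),(G1,False),(G2,True)] [(G2,True)]"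
  apply (rule be_del[where u="[]" and g=G1 and e=True and v="[(G2,True)]", simplified])
  apply (rule braid_eq.refl)
  done

lemma FA3: "grp (abs_braid3 [(G1,True),(G1,False),(G2,True)]) - linA bsA (unitL 3) \<in> C3_ideal"
  using BA3 abs_eqI[OF chA3] by simp

lemma chA4: "braid_eq [(G1,True),(G1,False),(G2,False)] [(G2,False)]"
  apply (rule be_del[where u="[]" and g=G1 and e=True and v="[(G2,False)]", simplified])
  apply (rule braid_eq.refl)
  done

lemma FA4: "grp (abs_braid3 [(G1,True),(G1,False),(G2,False)]) - linA bsA (unitL 4) \<in> C3_ideal"
  using BA4 abs_eqI[OF chA4] by simp

lemma EA5: "grp (abs_braid3 [(G1,True),(G2,False),(G1,True)]) - linA bsA vA5 \<in> C3_ideal"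
proof (rule step[where pre="[(lone, [(G1,True),(G1,False),(G2,True),(G1,True)]), (lmone, [(G1,True),(G1,True),(G2,True),(G1,False)]), (lmone, [(G1,True),(G1,False),(G2,False),(G1,True)]), (lone, [(G1,True),(G1,True),(G2,False),(G1,False)]), (lmone, [(G1,True),(G1,True),(G2,True)]), (lone, [(G1,True),(G1,True),(G2,False)]), (lone, [(G1,True),(G1,False),(G2,True)]), (lmone, [(G1,True),(G1,False),(G2,False)]), (lone, [(G1,True),(G2,True),(G1,True)]), (lmone, [(G1,True),(G2,True),(G1,False)])]" and cp="lmone" and post="[(lone, [(G1,True),(G2,False),(G1,False)])]" and xss="[(unitL 5), vA1, (unitL 7), vA2, vA3, vA4, (unitL 3), (unitL 4), (unitL 13), (unitL 14), (unitL 15)]"])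
  show "relA ([(lone, [(G1,True),(G1,False),(G2,True),(G1,True)]), (lmone, [(G1,True),(G1,True),(G2,True),(G1,False)]), (lmone, [(G1,True),(G1,False),(G2,False),(G1,True)]), (lone, [(G1,True),(G1,True),(G2,False),(G1,False)]), (lmone, [(G1,True),(G1,True),(G2,True)]), (lone, [(G1,True),(G1,True),(G2,False)]), (lone, [(G1,True),(G1,False),(G2,True)]), (lmone, [(G1,True),(G1,False),(G2,False)]), (lone, [(G1,True),(G2,True),(G1,True)]), (lmone, [(G1,True),(G2,True),(G1,False)])] @ (lmone, [(G1,True),(G2,False),(G1,True)]) # [(lone, [(G1,True),(G2,False),(G1,False)])]) \<in> C3_ideal"
    by (rule I_eq[OF inst_cub[of "[(G1,True)]" "[]"]]) (simp add: inst_def cub12L_def)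
  show "list_all2 (\<lambda>cw xs. grp (abs_braid3 (snd cw)) - linA bsA xs \<in> C3_ideal) ([(lone, [(G1,True),(G1,False),(G2,True),(G1,True)]), (lmone, [(G1,True),(G1,True),(G2,True),(G1,False)]), (lmone, [(G1,True),(G1,False),(G2,False),(G1,True)]), (lone, [(G1,True),(G1,True),(G2,False),(G1,False)]), (lmone, [(G1,True),(G1,True),(G2,True)]), (lone, [(G1,True),(G1,True),(G2,False)]), (lone, [(G1,True),(G1,False),(G2,True)]), (lmone, [(G1,True),(G1,False),(G2,False)]), (lone, [(G1,True),(G2,True),(G1,True)]), (lmone, [(G1,True),(G2,True),(G1,False)])] @ [(lone, [(G1,True),(G2,False),(G1,False)])]) [(unitL 5), vA1, (unitL 7), vA2, vA3, vA4, (unitL 3), (unitL 4), (unitL 13), (unitL 14), (unitL 15)]"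
    using FA1 EA1 FA2 EA2 EA3 EA4 FA3 FA4 BA13 BA14 BA15 by simp
  show "ev lmone \<noteq> 0" by (simp add: ev_lmone)
  show "stepchk ([(lone, [(G1,True),(G1,False),(G2,True),(G1,True)]), (lmone, [(G1,True),(G1,True),(G2,True),(G1,False)]), (lmone, [(G1,True),(G1,False),(G2,False),(G1,True)]), (lone, [(G1,True),(G1,True),(G2,False),(G1,False)]), (lmone, [(G1,True),(G1,True),(G2,True)]), (lone, [(G1,True),(G1,True),(G2,False)]), (lone, [(G1,True),(G1,False),(G2,True)]), (lmone, [(G1,True),(G1,False),(G2,False)]), (lone, [(G1,True),(G2,True),(G1,True)]), (lmone, [(G1,True),(G2,True),(G1,False)])] @ [(lone, [(G1,True),(G2,False),(G1,False)])]) [(unitL 5), vA1, (unitL 7), vA2, vA3, vA4, (unitL 3), (unitL 4), (unitL 13), (unitL 14), (unitL 15)] lmone vA5" by code_simp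
qed

lemma EA6: "grp (abs_braid3 [(G1,False),(G2,True),(G1,True)]) - linA bsA vA6 \<in> C3_ideal"
proof (rule step[where pre="[]" and cp="lone" and post="[(lmone, [(G1,True),(G2,True),(G1,False)]), (lmone, [(G1,False),(G2,False),(G1,True)]), (lone, [(G1,True),(G2,False),(G1,False)]), (lmone, [(G1,True),(G2,True)]), (lone, [(G1,True),(G2,False)]), (lone, [(G1,False),(G2,True)]), (lmone, [(G1,False),(G2,False)]), (lone, [(G2,True),(G1,True)]), (lmone, [(G2,True),(G1,False)]), (lmone, [(G2,False),(G1,True)]), (lone, [(G2,False),(G1,False)])]" and xss="[(unitL 14), (unitL 16), (unitL 15), (unitL 9), (unitL 11), (unitL 10), (unitL 12), (unitL 5), (unitL 6), (unitL 7), (unitL 8)]"])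
  show "relA ([] @ (lone, [(G1,False),(G2,True),(G1,True)]) # [(lmone, [(G1,True),(G2,True),(G1,False)]), (lmone, [(G1,False),(G2,False),(G1,True)]), (lone, [(G1,True),(G2,False),(G1,False)]), (lmone, [(G1,True),(G2,True)]), (lone, [(G1,True),(G2,False)]), (lone, [(G1,False),(G2,True)]), (lmone, [(G1,False),(G2,False)]), (lone, [(G2,True),(G1,True)]), (lmone, [(G2,True),(G1,False)]), (lmone, [(G2,False),(G1,True)]), (lone, [(G2,False),(G1,False)])]) \<in> C3_ideal"
    by (rule I_eq[OF inst_cub[of "[]" "[]"]]) (simp add: inst_def cub12L_def)
  show "list_all2 (\<lambda>cw xs. grp (abs_braid3 (snd cw)) - linA bsA xs \<in> C3_ideal) ([] @ [(lmone, [(G1,True),(G2,True),(G1,False)]), (lmone, [(G1,False),(G2,False),(G1,True)]), (lone, [(G1,True),(G2,False),(G1,False)]), (lmone, [(G1,True),(G2,True)]), (lone, [(G1,True),(G2,False)]), (lone, [(G1,False),(G2,True)]), (lmone, [(G1,False),(G2,False)]), (lone, [(G2,True),(G1,True)]), (lmone, [(G2,True),(G1,False)]), (lmone, [(G2,False),(G1,True)]), (lone, [(G2,False),(G1,False)])]) [(unitL 14), (unitL 16), (unitL 15), (unitL 9), (unitL 11), (unitL 10), (unitL 12), (unitL 5), (unitL 6), (unitL 7), (unitL 8)]"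
    using BA14 BA16 BA15 BA9 BA11 BA10 BA12 BA5 BA6 BA7 BA8 by simp
  show "ev lone \<noteq> 0" by (simp add: ev_lone)
  show "stepchk ([] @ [(lmone, [(G1,True),(G2,True),(G1,False)]), (lmone, [(G1,False),(G2,False),(G1,True)]), (lone, [(G1,True),(G2,False),(G1,False)]), (lmone, [(G1,True),(G2,True)]), (lone, [(G1,True),(G2,False)]), (lone, [(G1,False),(G2,True)]), (lmone, [(G1,False),(G2,False)]), (lone, [(G2,True),(G1,True)]), (lmone, [(G2,True),(G1,False)]), (lmone, [(G2,False),(G1,True)]), (lone, [(G2,False),(G1,False)])]) [(unitL 14), (unitL 16), (unitL 15), (unitL 9), (unitL 11), (unitL 10), (unitL 12), (unitL 5), (unitL 6), (unitL 7), (unitL 8)] lone vA6" by code_simp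
qed

lemma EA7: "grp (abs_braid3 [(G1,True),(G1,True),(G2,True),(G1,True)]) - linA bsA vA7 \<in> C3_ideal"
proof (rule step[where pre="[]" and cp="lone" and post="[(lpal, [(G1,True),(G2,True),(G1,True)]), (lpbe, [(G2,True),(G1,True)]), (lpga, [(G1,False),(G2,True),(G1,True)])]" and xss="[(unitL 13), (unitL 5), vA6]"])
  show "relA ([] @ (lone, [(G1,True),(G1,True),(G2,True),(G1,True)]) # [(lpal, [(G1,True),(G2,True),(G1,True)]), (lpbe, [(G2,True),(G1,True)]), (lpga, [(G1,False),(G2,True),(G1,True)])]) \<in> C3_ideal"
    by (rule I_eq[OF inst_quad[of "[]" "[(G2,True),(G1,True)]" G1]]) (simp add: inst_def quadL_def)
  show "list_all2 (\<lambda>cw xs. grp (abs_braid3 (snd cw)) - linA bsA xs \<in> C3_ideal) ([] @ [(lpal, [(G1,True),(G2,True),(G1,True)]), (lpbe, [(G2,True),(G1,True)]), (lpga, [(G1,False),(G2,True),(G1,True)])]) [(unitL 13), (unitL 5), vA6]"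
    using BA13 BA5 EA6 by simp
  show "ev lone \<noteq> 0" by (simp add: ev_lone)
  show "stepchk ([] @ [(lpal, [(G1,True),(G2,True),(G1,True)]), (lpbe, [(G2,True),(G1,True)]), (lpga, [(G1,False),(G2,True),(G1,True)])]) [(unitL 13), (unitL 5), vA6] lone vA7" by code_simp
qed

lemma chA5: "braid_eq [(G1,True),(G2,True),(G2,True),(G2,False)] [(G1,True),(G2,True)]"
  apply (rule be_del[where u="[(G1,True),(G2,True)]" and g=G2 and e=True and v="[]", simplified])
  apply (rule braid_eq.refl)
  done

lemma FA5: "grp (abs_braid3 [(G1,True),(G2,True),(G2,True),(G2,False)]) - linA bsA (unitL 9) \<in> C3_ideal"
  using BA9 abs_eqI[OF chA5] by simp

lemma chA6: "braid_eq [(G1,True),(G2,True),(G2,False)] [(G1,True)]"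
  apply (rule be_del[where u="[(G1,True)]" and g=G2 and e=True and v="[]", simplified])
  apply (rule braid_eq.refl)
  done

lemma FA6: "grp (abs_braid3 [(G1,True),(G2,True),(G2,False)]) - linA bsA (unitL 1) \<in> C3_ideal"
  using BA1 abs_eqI[OF chA6] by simp

lemma EA8: "grp (abs_braid3 [(G1,True),(G2,False),(G2,False)]) - linA bsA vA8 \<in> C3_ideal"
proof (rule step[where pre="[(lone, [(G1,True),(G2,True),(G2,True),(G2,False)]), (lpal, [(G1,True),(G2,True),(G2,False)]), (lpbe, [(G1,True),(G2,False)])]" and cp="lpga" and post="[]" and xss="[(unitL 9), (unitL 1), (unitL 11)]"])
  show "relA ([(lone, [(G1,True),(G2,True),(G2,True),(G2,False)]), (lpal, [(G1,True),(G2,True),(G2,False)]), (lpbe, [(G1,True),(G2,False)])] @ (lpga, [(G1,True),(G2,False),(G2,False)]) # []) \<in> C3_ideal"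
    by (rule I_eq[OF inst_quad[of "[(G1,True)]" "[(G2,False)]" G2]]) (simp add: inst_def quadL_def)
  show "list_all2 (\<lambda>cw xs. grp (abs_braid3 (snd cw)) - linA bsA xs \<in> C3_ideal) ([(lone, [(G1,True),(G2,True),(G2,True),(G2,False)]), (lpal, [(G1,True),(G2,True),(G2,False)]), (lpbe, [(G1,True),(G2,False)])] @ []) [(unitL 9), (unitL 1), (unitL 11)]"
    using FA5 FA6 BA11 by simp
  show "ev lpga \<noteq> 0" by (rule lpga_nz)
  show "stepchk ([(lone, [(G1,True),(G2,True),(G2,True),(G2,False)]), (lpal, [(G1,True),(G2,True),(G2,False)]), (lpbe, [(G1,True),(G2,False)])] @ []) [(unitL 9), (unitL 1), (unitL 11)] lpga vA8" by code_simp
qed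

lemma chA7: "braid_eq [(G2,True),(G2,True),(G2,False)] [(G2,True)]"
  apply (rule be_del[where u="[(G2,True)]" and g=G2 and e=True and v="[]", simplified])
  apply (rule braid_eq.refl)
  done

lemma FA7: "grp (abs_braid3 [(G2,True),(G2,True),(G2,False)]) - linA bsA (unitL 3) \<in> C3_ideal"
  using BA3 abs_eqI[OF chA7] by simp

lemma chA8: "braid_eq [(G2,True),(G2,False)] []"
  apply (rule be_del[where u="[]" and g=G2 and e=True and v="[]", simplified])
  apply (rule braid_eq.refl)
  done

lemma FA8: "grp (abs_braid3 [(G2,True),(G2,False)]) - linA bsA (unitL 0) \<in> C3_ideal"
  using BA0 abs_eqI[OF chA8] by simp

lemma EA9: "grp (abs_braid3 [(G2,False),(G2,False)]) - linA bsA vA9 \<in> C3_ideal"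
proof (rule step[where pre="[(lone, [(G2,True),(G2,True),(G2,False)]), (lpal, [(G2,True),(G2,False)]), (lpbe, [(G2,False)])]" and cp="lpga" and post="[]" and xss="[(unitL 3), (unitL 0), (unitL 4)]"])
  show "relA ([(lone, [(G2,True),(G2,True),(G2,False)]), (lpal, [(G2,True),(G2,False)]), (lpbe, [(G2,False)])] @ (lpga, [(G2,False),(G2,False)]) # []) \<in> C3_ideal"
    by (rule I_eq[OF inst_quad[of "[]" "[(G2,False)]" G2]]) (simp add: inst_def quadL_def)
  show "list_all2 (\<lambda>cw xs. grp (abs_braid3 (snd cw)) - linA bsA xs \<in> C3_ideal) ([(lone, [(G2,True),(G2,True),(G2,False)]), (lpal, [(G2,True),(G2,False)]), (lpbe, [(G2,False)])] @ []) [(unitL 3), (unitL 0), (unitL 4)]"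
    using FA7 FA8 BA4 by simp
  show "ev lpga \<noteq> 0" by (rule lpga_nz)
  show "stepchk ([(lone, [(G2,True),(G2,True),(G2,False)]), (lpal, [(G2,True),(G2,False)]), (lpbe, [(G2,False)])] @ []) [(unitL 3), (unitL 0), (unitL 4)] lpga vA9" by code_simp
qed

lemma chA9: "braid_eq [(G1,False),(G2,True),(G2,True),(G2,False)] [(G1,False),(G2,True)]"
  apply (rule be_del[where u="[(G1,False),(G2,True)]" and g=G2 and e=True and v="[]", simplified])
  apply (rule braid_eq.refl)
  done

lemma FA9: "grp (abs_braid3 [(G1,False),(G2,True),(G2,True),(G2,False)]) - linA bsA (unitL 10) \<in> C3_ideal"
  using BA10 abs_eqI[OF chA9] by simp

lemma chA10: "braid_eq [(G1,False),(G2,True),(G2,False)] [(G1,False)]"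
  apply (rule be_del[where u="[(G1,False)]" and g=G2 and e=True and v="[]", simplified])
  apply (rule braid_eq.refl)
  done

lemma FA10: "grp (abs_braid3 [(G1,False),(G2,True),(G2,False)]) - linA bsA (unitL 2) \<in> C3_ideal"
  using BA2 abs_eqI[OF chA10] by simp

lemma EA10: "grp (abs_braid3 [(G1,False),(G2,False),(G2,False)]) - linA bsA vA10 \<in> C3_ideal"
proof (rule step[where pre="[(lone, [(G1,False),(G2,True),(G2,True),(G2,False)]), (lpal, [(G1,False),(G2,True),(G2,False)]), (lpbe, [(G1,False),(G2,False)])]" and cp="lpga" and post="[]" and xss="[(unitL 10), (unitL 2), (unitL 12)]"])
  show "relA ([(lone, [(G1,False),(G2,True),(G2,True),(G2,False)]), (lpal, [(G1,False),(G2,True),(G2,False)]), (lpbe, [(G1,False),(G2,False)])] @ (lpga, [(G1,False),(G2,False),(G2,False)]) # []) \<in> C3_ideal"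
    by (rule I_eq[OF inst_quad[of "[(G1,False)]" "[(G2,False)]" G2]]) (simp add: inst_def quadL_def)
  show "list_all2 (\<lambda>cw xs. grp (abs_braid3 (snd cw)) - linA bsA xs \<in> C3_ideal) ([(lone, [(G1,False),(G2,True),(G2,True),(G2,False)]), (lpal, [(G1,False),(G2,True),(G2,False)]), (lpbe, [(G1,False),(G2,False)])] @ []) [(unitL 10), (unitL 2), (unitL 12)]"
    using FA9 FA10 BA12 by simp
  show "ev lpga \<noteq> 0" by (rule lpga_nz)
  show "stepchk ([(lone, [(G1,False),(G2,True),(G2,True),(G2,False)]), (lpal, [(G1,False),(G2,True),(G2,False)]), (lpbe, [(G1,False),(G2,False)])] @ []) [(unitL 10), (unitL 2), (unitL 12)] lpga vA10" by code_simp
qed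

lemma EA11: "grp (abs_braid3 [(G1,True),(G1,True),(G2,False),(G2,False)]) - linA bsA vA11 \<in> C3_ideal"
proof (rule step[where pre="[]" and cp="lone" and post="[(lpal, [(G1,True),(G2,False),(G2,False)]), (lpbe, [(G2,False),(G2,False)]), (lpga, [(G1,False),(G2,False),(G2,False)])]" and xss="[vA8, vA9, vA10]"])
  show "relA ([] @ (lone, [(G1,True),(G1,True),(G2,False),(G2,False)]) # [(lpal, [(G1,True),(G2,False),(G2,False)]), (lpbe, [(G2,False),(G2,False)]), (lpga, [(G1,False),(G2,False),(G2,False)])]) \<in> C3_ideal"
    by (rule I_eq[OF inst_quad[of "[]" "[(G2,False),(G2,False)]" G1]]) (simp add: inst_def quadL_def)
  show "list_all2 (\<lambda>cw xs. grp (abs_braid3 (snd cw)) - linA bsA xs \<in> C3_ideal) ([] @ [(lpal, [(G1,True),(G2,False),(G2,False)]), (lpbe, [(G2,False),(G2,False)]), (lpga, [(G1,False),(G2,False),(G2,False)])]) [vA8, vA9, vA10]"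
    using EA8 EA9 EA10 by simp
  show "ev lone \<noteq> 0" by (simp add: ev_lone)
  show "stepchk ([] @ [(lpal, [(G1,True),(G2,False),(G2,False)]), (lpbe, [(G2,False),(G2,False)]), (lpga, [(G1,False),(G2,False),(G2,False)])]) [vA8, vA9, vA10] lone vA11" by code_simp
qed

lemma chA11: "braid_eq [(G1,True),(G1,False),(G2,True),(G1,True),(G2,False)] [(G1,False),(G2,True),(G1,True)]"
  apply (rule be_del[where u="[]" and g=G1 and e=True and v="[(G2,True),(G1,True),(G2,False)]", simplified])
  apply (rule be_ins[where u="[]" and g=G1 and e=False and v="[(G2,True),(G1,True),(G2,False)]", simplified])
  apply (rule be_bf[where u="[(G1,False)]" and v="[(G2,False)]", simplified])
  apply (rule be_del[where u="[(G1,False),(G2,True),(G1,True)]" and g=G2 and e=True and v="[]", simplified])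
  apply (rule braid_eq.refl)
  done

lemma FA11: "grp (abs_braid3 [(G1,True),(G1,False),(G2,True),(G1,True),(G2,False)]) - linA bsA vA6 \<in> C3_ideal"
  using EA6 abs_eqI[OF chA11] by simp

lemma chA12: "braid_eq [(G1,True),(G1,True),(G2,True),(G1,False),(G2,False)] [(G1,True),(G2,False),(G1,True)]"
  apply (rule be_ins[where u="[(G1,True)]" and g=G2 and e=False and v="[(G1,True),(G2,True),(G1,False),(G2,False)]", simplified])
  apply (rule be_bb[where u="[(G1,True),(G2,False)]" and v="[(G1,False),(G2,False)]", simplified])
  apply (rule be_del[where u="[(G1,True),(G2,False),(G1,True),(G2,True)]" and g=G1 and e=True and v="[(G2,False)]", simplified])
  apply (rule be_del[where u="[(G1,True),(G2,False),(G1,True)]" and g=G2 and e=True and v="[]", simplified])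
  apply (rule braid_eq.refl)
  done

lemma FA12: "grp (abs_braid3 [(G1,True),(G1,True),(G2,True),(G1,False),(G2,False)]) - linA bsA vA5 \<in> C3_ideal"
  using EA5 abs_eqI[OF chA12] by simp

lemma chA13: "braid_eq [(G1,True),(G1,False),(G2,False),(G1,True),(G2,False)] [(G2,False),(G1,True),(G2,False)]"
  apply (rule be_del[where u="[]" and g=G1 and e=True and v="[(G2,False),(G1,True),(G2,False)]", simplified])
  apply (rule braid_eq.refl)
  done

lemma FA13: "grp (abs_braid3 [(G1,True),(G1,False),(G2,False),(G1,True),(G2,False)]) - linA bsA (unitL 19) \<in> C3_ideal"
  using BA19 abs_eqI[OF chA13] by simp

lemma chA14: "braid_eq [(G1,True),(G1,True),(G2,False),(G1,False),(G2,False)] [(G1,True),(G2,False),(G1,False)]"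
  apply (rule be_ins[where u="[(G1,True)]" and g=G2 and e=False and v="[(G1,True),(G2,False),(G1,False),(G2,False)]", simplified])
  apply (rule be_ins[where u="[(G1,True),(G2,False)]" and g=G1 and e=False and v="[(G2,True),(G1,True),(G2,False),(G1,False),(G2,False)]", simplified])
  apply (rule be_bf[where u="[(G1,True),(G2,False),(G1,False)]" and v="[(G2,False),(G1,False),(G2,False)]", simplified])
  apply (rule be_del[where u="[(G1,True),(G2,False),(G1,False),(G2,True),(G1,True)]" and g=G2 and e=True and v="[(G1,False),(G2,False)]", simplified])
  apply (rule be_del[where u="[(G1,True),(G2,False),(G1,False),(G2,True)]" and g=G1 and e=True and v="[(G2,False)]", simplified])
  apply (rule be_del[where u="[(G1,True),(G2,False),(G1,False)]" and g=G2 and e=True and v="[]", simplified])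
  apply (rule braid_eq.refl)
  done

lemma FA14: "grp (abs_braid3 [(G1,True),(G1,True),(G2,False),(G1,False),(G2,False)]) - linA bsA (unitL 15) \<in> C3_ideal"
  using BA15 abs_eqI[OF chA14] by simp

lemma chA15: "braid_eq [(G1,True),(G1,True),(G2,True),(G2,False)] [(G1,True),(G1,True)]"
  apply (rule be_del[where u="[(G1,True),(G1,True)]" and g=G2 and e=True and v="[]", simplified])
  apply (rule braid_eq.refl)
  done

lemma FA15: "grp (abs_braid3 [(G1,True),(G1,True),(G2,True),(G2,False)]) - linA bsA vA0 \<in> C3_ideal"
  using EA0 abs_eqI[OF chA15] by simp

lemma chA16: "braid_eq [(G1,True),(G1,False),(G2,True),(G2,False)] []"
  apply (rule be_del[where u="[]" and g=G1 and e=True and v="[(G2,True),(G2,False)]", simplified])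
  apply (rule be_del[where u="[]" and g=G2 and e=True and v="[]", simplified])
  apply (rule braid_eq.refl)
  done

lemma FA16: "grp (abs_braid3 [(G1,True),(G1,False),(G2,True),(G2,False)]) - linA bsA (unitL 0) \<in> C3_ideal"
  using BA0 abs_eqI[OF chA16] by simp

lemma chA17: "braid_eq [(G1,True),(G1,False),(G2,False),(G2,False)] [(G2,False),(G2,False)]"
  apply (rule be_del[where u="[]" and g=G1 and e=True and v="[(G2,False),(G2,False)]", simplified])
  apply (rule braid_eq.refl)
  done

lemma FA17: "grp (abs_braid3 [(G1,True),(G1,False),(G2,False),(G2,False)]) - linA bsA vA9 \<in> C3_ideal"
  using EA9 abs_eqI[OF chA17] by simp

lemma chA18: "braid_eq [(G1,True),(G2,True),(G1,True),(G2,False)] [(G2,True),(G1,True)]"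
  apply (rule be_bf[where u="[]" and v="[(G2,False)]", simplified])
  apply (rule be_del[where u="[(G2,True),(G1,True)]" and g=G2 and e=True and v="[]", simplified])
  apply (rule braid_eq.refl)
  done

lemma FA18: "grp (abs_braid3 [(G1,True),(G2,True),(G1,True),(G2,False)]) - linA bsA (unitL 5) \<in> C3_ideal"
  using BA5 abs_eqI[OF chA18] by simp

lemma chA19: "braid_eq [(G1,True),(G2,True),(G1,False),(G2,False)] [(G2,False),(G1,True)]"
  apply (rule be_ins[where u="[]" and g=G2 and e=False and v="[(G1,True),(G2,True),(G1,False),(G2,False)]", simplified])
  apply (rule be_bb[where u="[(G2,False)]" and v="[(G1,False),(G2,False)]", simplified])
  apply (rule be_del[where u="[(G2,False),(G1,True),(G2,True)]" and g=G1 and e=True and v="[(G2,False)]", simplified])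
  apply (rule be_del[where u="[(G2,False),(G1,True)]" and g=G2 and e=True and v="[]", simplified])
  apply (rule braid_eq.refl)
  done

lemma FA19: "grp (abs_braid3 [(G1,True),(G2,True),(G1,False),(G2,False)]) - linA bsA (unitL 7) \<in> C3_ideal"
  using BA7 abs_eqI[OF chA19] by simp

lemma chA20: "braid_eq [(G1,True),(G2,False),(G1,False),(G2,False)] [(G2,False),(G1,False)]"
  apply (rule be_ins[where u="[]" and g=G2 and e=False and v="[(G1,True),(G2,False),(G1,False),(G2,False)]", simplified])
  apply (rule be_ins[where u="[(G2,False)]" and g=G1 and e=False and v="[(G2,True),(G1,True),(G2,False),(G1,False),(G2,False)]", simplified])
  apply (rule be_bf[where u="[(G2,False),(G1,False)]" and v="[(G2,False),(G1,False),(G2,False)]", simplified])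
  apply (rule be_del[where u="[(G2,False),(G1,False),(G2,True),(G1,True)]" and g=G2 and e=True and v="[(G1,False),(G2,False)]", simplified])
  apply (rule be_del[where u="[(G2,False),(G1,False),(G2,True)]" and g=G1 and e=True and v="[(G2,False)]", simplified])
  apply (rule be_del[where u="[(G2,False),(G1,False)]" and g=G2 and e=True and v="[]", simplified])
  apply (rule braid_eq.refl)
  done

lemma FA20: "grp (abs_braid3 [(G1,True),(G2,False),(G1,False),(G2,False)]) - linA bsA (unitL 8) \<in> C3_ideal"
  using BA8 abs_eqI[OF chA20] by simp

lemma EA12: "grp (abs_braid3 [(G1,True),(G2,False),(G1,True),(G2,False)]) - linA bsA vA12 \<in> C3_ideal"
proof (rule step[where pre="[(lone, [(G1,True),(G1,False),(G2,True),(G1,True),(G2,False)]), (lmone, [(G1,True),(G1,True),(G2,True),(G1,False),(G2,False)]), (lmone, [(G1,True),(G1,False),(G2,False),(G1,True),(G2,False)]), (lone, [(G1,True),(G1,True),(G2,False),(G1,False),(G2,False)]), (lmone, [(G1,True),(G1,True),(G2,True),(G2,False)]), (lone, [(G1,True),(G1,True),(G2,False),(G2,False)]), (lone, [(G1,True),(G1,False),(G2,True),(G2,False)]), (lmone, [(G1,True),(G1,False),(G2,False),(G2,False)]), (lone, [(G1,True),(G2,True),(G1,True),(G2,False)]), (lmone, [(G1,True),(G2,True),(G1,False),(G2,False)])]" and cp="lmone" and post="[(lone, [(G1,True),(G2,False),(G1,False),(G2,False)])]" and xss="[vA6, vA5, (unitL 19), (unitL 15), vA0, vA11, (unitL 0),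 vA9, (unitL 5), (unitL 7), (unitL 8)]"])
  show "relA ([(lone, [(G1,True),(G1,False),(G2,True),(G1,True),(G2,False)]), (lmone, [(G1,True),(G1,True),(G2,True),(G1,False),(G2,False)]), (lmone, [(G1,True),(G1,False),(G2,False),(G1,True),(G2,False)]), (lone, [(G1,True),(G1,True),(G2,False),(G1,False),(G2,False)]), (lmone, [(G1,True),(G1,True),(G2,True),(G2,False)]), (lone, [(G1,True),(G1,True),(G2,False),(G2,False)]), (lone, [(G1,True),(G1,False),(G2,True),(G2,False)]), (lmone, [(G1,True),(G1,False),(G2,False),(G2,False)]), (lone, [(G1,True),(G2,True),(G1,True),(G2,False)]), (lmone, [(G1,True),(G2,True),(G1,False),(G2,False)])] @ (lmone, [(G1,True),(G2,False),(G1,True),(G2,False)]) # [(lone, [(G1,True),(G2,False),(G1,False),(G2,False)])]) \<in> C3_ideal"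
    by (rule I_eq[OF inst_cub[of "[(G1,True)]" "[(G2,False)]"]]) (simp add: inst_def cub12L_def)
  show "list_all2 (\<lambda>cw xs. grp (abs_braid3 (snd cw)) - linA bsA xs \<in> C3_ideal) ([(lone, [(G1,True),(G1,False),(G2,True),(G1,True),(G2,False)]), (lmone, [(G1,True),(G1,True),(G2,True),(G1,False),(G2,False)]), (lmone, [(G1,True),(G1,False),(G2,False),(G1,True),(G2,False)]), (lone, [(G1,True),(G1,True),(G2,False),(G1,False),(G2,False)]), (lmone, [(G1,True),(G1,True),(G2,True),(G2,False)]), (lone, [(G1,True),(G1,True),(G2,False),(G2,False)]), (lone, [(G1,True),(G1,False),(G2,True),(G2,False)]), (lmone, [(G1,True),(G1,False),(G2,False),(G2,False)]), (lone, [(G1,True),(G2,True),(G1,True),(G2,False)]), (lmone, [(G1,True),(G2,True),(G1,False),(G2,False)])] @ [(lone, [(G1,True),(G2,False),(G1,False),(G2,False)])]) [vA6, vA5, (unitL 19), (unitL 15), vA0, vA11, (unitL 0), vA9, (unitL 5), (unitL 7), (unitL 8)]"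
    using FA11 FA12 FA13 FA14 FA15 EA11 FA16 FA17 FA18 FA19 FA20 by simp
  show "ev lmone \<noteq> 0" by (simp add: ev_lmone)
  show "stepchk ([(lone, [(G1,True),(G1,False),(G2,True),(G1,True),(G2,False)]), (lmone, [(G1,True),(G1,True),(G2,True),(G1,False),(G2,False)]), (lmone, [(G1,True),(G1,False),(G2,False),(G1,True),(G2,False)]), (lone, [(G1,True),(G1,True),(G2,False),(G1,False),(G2,False)]), (lmone, [(G1,True),(G1,True),(G2,True),(G2,False)]), (lone, [(G1,True),(G1,True),(G2,False),(G2,False)]), (lone, [(G1,True),(G1,False),(G2,True),(G2,False)]), (lmone, [(G1,True),(G1,False),(G2,False),(G2,False)]), (lone, [(G1,True),(G2,True),(G1,True),(G2,False)]), (lmone, [(G1,True),(G2,True),(G1,False),(G2,False)])] @ [(lone, [(G1,True),(G2,False),(G1,False),(G2,False)])]) [vA6, vA5, (unitL 19), (unitL 15), vA0, vA11, (unitL 0), vA9, (unitL 5), (unitL 7), (unitL 8)] lmone vA12" by code_simp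
qed

lemma EA13: "grp (abs_braid3 [(G2,True),(G2,True)]) - linA bsA vA13 \<in> C3_ideal"
proof (rule step[where pre="[]" and cp="lone" and post="[(lpal, [(G2,True)]), (lpbe, []), (lpga, [(G2,False)])]" and xss="[(unitL 3), (unitL 0), (unitL 4)]"])
  show "relA ([] @ (lone, [(G2,True),(G2,True)]) # [(lpal, [(G2,True)]), (lpbe, []), (lpga, [(G2,False)])]) \<in> C3_ideal"
    by (rule I_eq[OF inst_quad[of "[]" "[]" G2]]) (simp add: inst_def quadL_def)
  show "list_all2 (\<lambda>cw xs. grp (abs_braid3 (snd cw)) - linA bsA xs \<in> C3_ideal) ([] @ [(lpal, [(G2,True)]), (lpbe, []), (lpga, [(G2,False)])]) [(unitL 3), (unitL 0), (unitL 4)]"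
    using BA3 BA0 BA4 by simp
  show "ev lone \<noteq> 0" by (simp add: ev_lone)
  show "stepchk ([] @ [(lpal, [(G2,True)]), (lpbe, []), (lpga, [(G2,False)])]) [(unitL 3), (unitL 0), (unitL 4)] lone vA13" by code_simp
qed

lemma EA14: "grp (abs_braid3 [(G2,True),(G2,True),(G1,True)]) - linA bsA vA14 \<in> C3_ideal"
proof (rule step[where pre="[]" and cp="lone" and post="[(lpal, [(G2,True),(G1,True)]), (lpbe, [(G1,True)]), (lpga, [(G2,False),(G1,True)])]" and xss="[(unitL 5), (unitL 1), (unitL 7)]"])
  show "relA ([] @ (lone, [(G2,True),(G2,True),(G1,True)]) # [(lpal, [(G2,True),(G1,True)]), (lpbe, [(G1,True)]), (lpga, [(G2,False),(G1,True)])]) \<in> C3_ideal"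
    by (rule I_eq[OF inst_quad[of "[]" "[(G1,True)]" G2]]) (simp add: inst_def quadL_def)
  show "list_all2 (\<lambda>cw xs. grp (abs_braid3 (snd cw)) - linA bsA xs \<in> C3_ideal) ([] @ [(lpal, [(G2,True),(G1,True)]), (lpbe, [(G1,True)]), (lpga, [(G2,False),(G1,True)])]) [(unitL 5), (unitL 1), (unitL 7)]"
    using BA5 BA1 BA7 by simp
  show "ev lone \<noteq> 0" by (simp add: ev_lone)
  show "stepchk ([] @ [(lpal, [(G2,True),(G1,True)]), (lpbe, [(G1,True)]), (lpga, [(G2,False),(G1,True)])]) [(unitL 5), (unitL 1), (unitL 7)] lone vA14" by code_simp
qed

lemma EA15: "grp (abs_braid3 [(G2,True),(G2,True),(G1,False)]) - linA bsA vA15 \<in> C3_ideal"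
proof (rule step[where pre="[]" and cp="lone" and post="[(lpal, [(G2,True),(G1,False)]), (lpbe, [(G1,False)]), (lpga, [(G2,False),(G1,False)])]" and xss="[(unitL 6), (unitL 2), (unitL 8)]"])
  show "relA ([] @ (lone, [(G2,True),(G2,True),(G1,False)]) # [(lpal, [(G2,True),(G1,False)]), (lpbe, [(G1,False)]), (lpga, [(G2,False),(G1,False)])]) \<in> C3_ideal"
    by (rule I_eq[OF inst_quad[of "[]" "[(G1,False)]" G2]]) (simp add: inst_def quadL_def)
  show "list_all2 (\<lambda>cw xs. grp (abs_braid3 (snd cw)) - linA bsA xs \<in> C3_ideal) ([] @ [(lpal, [(G2,True),(G1,False)]), (lpbe, [(G1,False)]), (lpga, [(G2,False),(G1,False)])]) [(unitL 6), (unitL 2), (unitL 8)]"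
    using BA6 BA2 BA8 by simp
  show "ev lone \<noteq> 0" by (simp add: ev_lone)
  show "stepchk ([] @ [(lpal, [(G2,True),(G1,False)]), (lpbe, [(G1,False)]), (lpga, [(G2,False),(G1,False)])]) [(unitL 6), (unitL 2), (unitL 8)] lone vA15" by code_simp
qed

lemma chA21: "braid_eq [(G2,True),(G1,True),(G2,False)] [(G1,False),(G2,True),(G1,True)]"
  apply (rule be_ins[where u="[]" and g=G1 and e=False and v="[(G2,True),(G1,True),(G2,False)]", simplified])
  apply (rule be_bf[where u="[(G1,False)]" and v="[(G2,False)]", simplified])
  apply (rule be_del[where u="[(G1,False),(G2,True),(G1,True)]" and g=G2 and e=True and v="[]", simplified])
  apply (rule braid_eq.refl)
  done

lemma FA21: "grp (abs_braid3 [(G2,True),(G1,True),(G2,False)]) - linA bsA vA6 \<in> C3_ideal"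
  using EA6 abs_eqI[OF chA21] by simp

lemma EA16: "grp (abs_braid3 [(G2,True),(G2,True),(G1,True),(G2,False)]) - linA bsA vA16 \<in> C3_ideal"
proof (rule step[where pre="[]" and cp="lone" and post="[(lpal, [(G2,True),(G1,True),(G2,False)]), (lpbe, [(G1,True),(G2,False)]), (lpga, [(G2,False),(G1,True),(G2,False)])]" and xss="[vA6, (unitL 11), (unitL 19)]"])
  show "relA ([] @ (lone, [(G2,True),(G2,True),(G1,True),(G2,False)]) # [(lpal, [(G2,True),(G1,True),(G2,False)]), (lpbe, [(G1,True),(G2,False)]), (lpga, [(G2,False),(G1,True),(G2,False)])]) \<in> C3_ideal"
    by (rule I_eq[OF inst_quad[of "[]" "[(G1,True),(G2,False)]" G2]]) (simp add: inst_def quadL_def)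
  show "list_all2 (\<lambda>cw xs. grp (abs_braid3 (snd cw)) - linA bsA xs \<in> C3_ideal) ([] @ [(lpal, [(G2,True),(G1,True),(G2,False)]), (lpbe, [(G1,True),(G2,False)]), (lpga, [(G2,False),(G1,True),(G2,False)])]) [vA6, (unitL 11), (unitL 19)]"
    using FA21 BA11 BA19 by simp
  show "ev lone \<noteq> 0" by (simp add: ev_lone)
  show "stepchk ([] @ [(lpal, [(G2,True),(G1,True),(G2,False)]), (lpbe, [(G1,True),(G2,False)]), (lpga, [(G2,False),(G1,True),(G2,False)])]) [vA6, (unitL 11), (unitL 19)] lone vA16" by code_simp
qed

lemma chA22: "braid_eq [(G2,True),(G1,False),(G2,False)] [(G1,False),(G2,False),(G1,True)]"
  apply (rule be_ins[where u="[]" and g=G1 and e=False and v="[(G2,True),(G1,False),(G2,False)]", simplified])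
  apply (rule be_ins[where u="[(G1,False)]" and g=G2 and e=False and v="[(G1,True),(G2,True),(G1,False),(G2,False)]", simplified])
  apply (rule be_bb[where u="[(G1,False),(G2,False)]" and v="[(G1,False),(G2,False)]", simplified])
  apply (rule be_del[where u="[(G1,False),(G2,False),(G1,True),(G2,True)]" and g=G1 and e=True and v="[(G2,False)]", simplified])
  apply (rule be_del[where u="[(G1,False),(G2,False),(G1,True)]" and g=G2 and e=True and v="[]", simplified])
  apply (rule braid_eq.refl)
  done

lemma FA22: "grp (abs_braid3 [(G2,True),(G1,False),(G2,False)]) - linA bsA (unitL 16) \<in> C3_ideal"
  using BA16 abs_eqI[OF chA22] by simp

lemma chA23: "braid_eq [(G2,False),(G1,False),(G2,False)] [(G1,False),(G2,False),(G1,False)]"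
  apply (rule be_ins[where u="[]" and g=G1 and e=False and v="[(G2,False),(G1,False),(G2,False)]", simplified])
  apply (rule be_ins[where u="[(G1,False)]" and g=G2 and e=False and v="[(G1,True),(G2,False),(G1,False),(G2,False)]", simplified])
  apply (rule be_ins[where u="[(G1,False),(G2,False)]" and g=G1 and e=False and v="[(G2,True),(G1,True),(G2,False),(G1,False),(G2,False)]", simplified])
  apply (rule be_bf[where u="[(G1,False),(G2,False),(G1,False)]" and v="[(G2,False),(G1,False),(G2,False)]", simplified])
  apply (rule be_del[where u="[(G1,False),(G2,False),(G1,False),(G2,True),(G1,True)]" and g=G2 and e=True and v="[(G1,False),(G2,False)]", simplified])
  apply (rule be_del[where u="[(G1,False),(G2,False),(G1,False),(G2,True)]" and g=G1 and e=True and v="[(G2,False)]", simplified])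
  apply (rule be_del[where u="[(G1,False),(G2,False),(G1,False)]" and g=G2 and e=True and v="[]", simplified])
  apply (rule braid_eq.refl)
  done

lemma FA23: "grp (abs_braid3 [(G2,False),(G1,False),(G2,False)]) - linA bsA (unitL 17) \<in> C3_ideal"
  using BA17 abs_eqI[OF chA23] by simp

lemma EA17: "grp (abs_braid3 [(G2,True),(G2,True),(G1,False),(G2,False)]) - linA bsA vA17 \<in> C3_ideal"
proof (rule step[where pre="[]" and cp="lone" and post="[(lpal, [(G2,True),(G1,False),(G2,False)]), (lpbe, [(G1,False),(G2,False)]), (lpga, [(G2,False),(G1,False),(G2,False)])]" and xss="[(unitL 16), (unitL 12), (unitL 17)]"])
  show "relA ([] @ (lone, [(G2,True),(G2,True),(G1,False),(G2,False)]) # [(lpal, [(G2,True),(G1,False),(G2,False)]), (lpbe, [(G1,False),(G2,False)]), (lpga, [(G2,False),(G1,False),(G2,False)])]) \<in> C3_ideal"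
    by (rule I_eq[OF inst_quad[of "[]" "[(G1,False),(G2,False)]" G2]]) (simp add: inst_def quadL_def)
  show "list_all2 (\<lambda>cw xs. grp (abs_braid3 (snd cw)) - linA bsA xs \<in> C3_ideal) ([] @ [(lpal, [(G2,True),(G1,False),(G2,False)]), (lpbe, [(G1,False),(G2,False)]), (lpga, [(G2,False),(G1,False),(G2,False)])]) [(unitL 16), (unitL 12), (unitL 17)]"
    using FA22 BA12 FA23 by simp
  show "ev lone \<noteq> 0" by (simp add: ev_lone)
  show "stepchk ([] @ [(lpal, [(G2,True),(G1,False),(G2,False)]), (lpbe, [(G1,False),(G2,False)]), (lpga, [(G2,False),(G1,False),(G2,False)])]) [(unitL 16), (unitL 12), (unitL 17)] lone vA17" by code_simp
qed

lemma chA24: "braid_eq [(G2,True),(G1,False),(G2,True),(G1,True)] [(G2,True),(G2,True),(G1,True),(G2,False)]"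
  apply (rule be_ins[where u="[(G2,True),(G1,False),(G2,True),(G1,True)]" and g=G2 and e=True and v="[]", simplified])
  apply (rule be_bb[where u="[(G2,True),(G1,False)]" and v="[(G2,False)]", simplified])
  apply (rule be_del[where u="[(G2,True)]" and g=G1 and e=False and v="[(G2,True),(G1,True),(G2,False)]", simplified])
  apply (rule braid_eq.refl)
  done

lemma FA24: "grp (abs_braid3 [(G2,True),(G1,False),(G2,True),(G1,True)]) - linA bsA vA16 \<in> C3_ideal"
  using EA16 abs_eqI[OF chA24] by simp

lemma chA25: "braid_eq [(G2,True),(G1,True),(G2,True),(G1,False)] [(G1,True),(G2,True)]"
  apply (rule be_bb[where u="[]" and v="[(G1,False)]", simplified])
  apply (rule be_del[where u="[(G1,True),(G2,True)]" and g=G1 and e=True and v="[]", simplified])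
  apply (rule braid_eq.refl)
  done

lemma FA25: "grp (abs_braid3 [(G2,True),(G1,True),(G2,True),(G1,False)]) - linA bsA (unitL 9) \<in> C3_ideal"
  using BA9 abs_eqI[OF chA25] by simp

lemma chA26: "braid_eq [(G2,True),(G1,False),(G2,False),(G1,True)] [(G2,True),(G2,True),(G1,False),(G2,False)]"
  apply (rule be_ins[where u="[(G2,True),(G1,False),(G2,False),(G1,True)]" and g=G2 and e=True and v="[]", simplified])
  apply (rule be_ins[where u="[(G2,True),(G1,False),(G2,False),(G1,True),(G2,True)]" and g=G1 and e=True and v="[(G2,False)]", simplified])
  apply (rule be_bf[where u="[(G2,True),(G1,False),(G2,False)]" and v="[(G1,False),(G2,False)]", simplified])
  apply (rule be_del[where u="[(G2,True),(G1,False)]" and g=G2 and e=False and v="[(G1,True),(G2,True),(G1,False),(G2,False)]", simplified])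
  apply (rule be_del[where u="[(G2,True)]" and g=G1 and e=False and v="[(G2,True),(G1,False),(G2,False)]", simplified])
  apply (rule braid_eq.refl)
  done

lemma FA26: "grp (abs_braid3 [(G2,True),(G1,False),(G2,False),(G1,True)]) - linA bsA vA17 \<in> C3_ideal"
  using EA17 abs_eqI[OF chA26] by simp

lemma chA27: "braid_eq [(G2,True),(G1,True),(G2,False),(G1,False)] [(G1,False),(G2,True)]"
  apply (rule be_ins[where u="[]" and g=G1 and e=False and v="[(G2,True),(G1,True),(G2,False),(G1,False)]", simplified])
  apply (rule be_bf[where u="[(G1,False)]" and v="[(G2,False),(G1,False)]", simplified])
  apply (rule be_del[where u="[(G1,False),(G2,True),(G1,True)]" and g=G2 and e=True and v="[(G1,False)]", simplified])
  apply (rule be_del[where u="[(G1,False),(G2,True)]" and g=G1 and e=True and v="[]", simplified])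
  apply (rule braid_eq.refl)
  done

lemma FA27: "grp (abs_braid3 [(G2,True),(G1,True),(G2,False),(G1,False)]) - linA bsA (unitL 10) \<in> C3_ideal"
  using BA10 abs_eqI[OF chA27] by simp

lemma chA28: "braid_eq [(G2,True),(G1,True),(G2,True)] [(G1,True),(G2,True),(G1,True)]"
  apply (rule be_bb[where u="[]" and v="[]", simplified])
  apply (rule braid_eq.refl)
  done

lemma FA28: "grp (abs_braid3 [(G2,True),(G1,True),(G2,True)]) - linA bsA (unitL 13) \<in> C3_ideal"
  using BA13 abs_eqI[OF chA28] by simp

lemma chA29: "braid_eq [(G2,True),(G2,False),(G1,True)] [(G1,True)]"
  apply (rule be_del[where u="[]" and g=G2 and e=True and v="[(G1,True)]", simplified])
  apply (rule braid_eq.refl)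
  done

lemma FA29: "grp (abs_braid3 [(G2,True),(G2,False),(G1,True)]) - linA bsA (unitL 1) \<in> C3_ideal"
  using BA1 abs_eqI[OF chA29] by simp

lemma chA30: "braid_eq [(G2,True),(G2,False),(G1,False)] [(G1,False)]"
  apply (rule be_del[where u="[]" and g=G2 and e=True and v="[(G1,False)]", simplified])
  apply (rule braid_eq.refl)
  done

lemma FA30: "grp (abs_braid3 [(G2,True),(G2,False),(G1,False)]) - linA bsA (unitL 2) \<in> C3_ideal"
  using BA2 abs_eqI[OF chA30] by simp

lemma EA18: "grp (abs_braid3 [(G2,True),(G1,False),(G2,True)]) - linA bsA vA18 \<in> C3_ideal"
proof (rule step[where pre="[(lone, [(G2,True),(G1,False),(G2,True),(G1,True)]), (lmone, [(G2,True),(G1,True),(G2,True),(G1,False)]), (lmone, [(G2,True),(G1,False),(G2,False),(G1,True)]), (lone, [(G2,True),(G1,True),(G2,False),(G1,False)]), (lmone, [(G2,True),(G1,True),(G2,True)]), (lone, [(G2,True),(G1,True),(G2,False)])]" and cp="lone" and post="[(lmone, [(G2,True),(G1,False),(G2,False)]), (lone, [(G2,True),(G2,True),(G1,True)]), (lmone, [(G2,True),(G2,True),(G1,False)]), (lmone, [(G2,True),(G2,False),(G1,True)]), (lone, [(G2,True),(G2,False),(G1,False)])]" and xss="[vA16, (unitL 9), vA17, (unitL 10), (unitL 13), vA6, (unitL 16), vA14, vA15, (unitL 1), (unitL 2)]"])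
  show "relA ([(lone, [(G2,True),(G1,False),(G2,True),(G1,True)]), (lmone, [(G2,True),(G1,True),(G2,True),(G1,False)]), (lmone, [(G2,True),(G1,False),(G2,False),(G1,True)]), (lone, [(G2,True),(G1,True),(G2,False),(G1,False)]), (lmone, [(G2,True),(G1,True),(G2,True)]), (lone, [(G2,True),(G1,True),(G2,False)])] @ (lone, [(G2,True),(G1,False),(G2,True)]) # [(lmone, [(G2,True),(G1,False),(G2,False)]), (lone, [(G2,True),(G2,True),(G1,True)]), (lmone, [(G2,True),(G2,True),(G1,False)]), (lmone, [(G2,True),(G2,False),(G1,True)]), (lone, [(G2,True),(G2,False),(G1,False)])]) \<in> C3_ideal"
    by (rule I_eq[OF inst_cub[of "[(G2,True)]" "[]"]]) (simp add: inst_def cub12L_def)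
  show "list_all2 (\<lambda>cw xs. grp (abs_braid3 (snd cw)) - linA bsA xs \<in> C3_ideal) ([(lone, [(G2,True),(G1,False),(G2,True),(G1,True)]), (lmone, [(G2,True),(G1,True),(G2,True),(G1,False)]), (lmone, [(G2,True),(G1,False),(G2,False),(G1,True)]), (lone, [(G2,True),(G1,True),(G2,False),(G1,False)]), (lmone, [(G2,True),(G1,True),(G2,True)]), (lone, [(G2,True),(G1,True),(G2,False)])] @ [(lmone, [(G2,True),(G1,False),(G2,False)]), (lone, [(G2,True),(G2,True),(G1,True)]), (lmone, [(G2,True),(G2,True),(G1,False)]), (lmone, [(G2,True),(G2,False),(G1,True)]), (lone, [(G2,True),(G2,False),(G1,False)])]) [vA16, (unitL 9), vA17, (unitL 10), (unitL 13), vA6, (unitL 16), vA14, vA15, (unitL 1), (unitL 2)]"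
    using FA24 FA25 FA26 FA27 FA28 FA21 FA22 EA14 EA15 FA29 FA30 by simp
  show "ev lone \<noteq> 0" by (simp add: ev_lone)
  show "stepchk ([(lone, [(G2,True),(G1,False),(G2,True),(G1,True)]), (lmone, [(G2,True),(G1,True),(G2,True),(G1,False)]), (lmone, [(G2,True),(G1,False),(G2,False),(G1,True)]), (lone, [(G2,True),(G1,True),(G2,False),(G1,False)]), (lmone, [(G2,True),(G1,True),(G2,True)]), (lone, [(G2,True),(G1,True),(G2,False)])] @ [(lmone, [(G2,True),(G1,False),(G2,False)]), (lone, [(G2,True),(G2,True),(G1,True)]), (lmone, [(G2,True),(G2,True),(G1,False)]), (lmone, [(G2,True),(G2,False),(G1,True)]), (lone, [(G2,True),(G2,False),(G1,False)])]) [vA16, (unitL 9), vA17, (unitL 10), (unitL 13), vA6, (unitL 16), vA14, vA15, (unitL 1), (unitL 2)] lone vA18" by code_simp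
qed

lemma chA31: "braid_eq [(G2,False),(G1,True),(G2,True)] [(G1,True),(G2,True),(G1,False)]"
  apply (rule be_ins[where u="[(G2,False),(G1,True),(G2,True)]" and g=G1 and e=True and v="[]", simplified])
  apply (rule be_bf[where u="[(G2,False)]" and v="[(G1,False)]", simplified])
  apply (rule be_del[where u="[]" and g=G2 and e=False and v="[(G1,True),(G2,True),(G1,False)]", simplified])
  apply (rule braid_eq.refl)
  done

lemma FA31: "grp (abs_braid3 [(G2,False),(G1,True),(G2,True)]) - linA bsA (unitL 14) \<in> C3_ideal"
  using BA14 abs_eqI[OF chA31] by simp

lemma EA19: "grp (abs_braid3 [(G2,True),(G2,True),(G1,True),(G2,True)]) - linA bsA vA19 \<in> C3_ideal"
proof (rule step[where pre="[]" and cp="lone" and post="[(lpal, [(G2,True),(G1,True),(G2,True)]), (lpbe, [(G1,True),(G2,True)]), (lpga, [(G2,False),(G1,True),(G2,True)])]" and xss="[(unitL 13), (unitL 9), (unitL 14)]"])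
  show "relA ([] @ (lone, [(G2,True),(G2,True),(G1,True),(G2,True)]) # [(lpal, [(G2,True),(G1,True),(G2,True)]), (lpbe, [(G1,True),(G2,True)]), (lpga, [(G2,False),(G1,True),(G2,True)])]) \<in> C3_ideal"
    by (rule I_eq[OF inst_quad[of "[]" "[(G1,True),(G2,True)]" G2]]) (simp add: inst_def quadL_def)
  show "list_all2 (\<lambda>cw xs. grp (abs_braid3 (snd cw)) - linA bsA xs \<in> C3_ideal) ([] @ [(lpal, [(G2,True),(G1,True),(G2,True)]), (lpbe, [(G1,True),(G2,True)]), (lpga, [(G2,False),(G1,True),(G2,True)])]) [(unitL 13), (unitL 9), (unitL 14)]"
    using FA28 BA9 FA31 by simp
  show "ev lone \<noteq> 0" by (simp add: ev_lone)
  show "stepchk ([] @ [(lpal, [(G2,True),(G1,True),(G2,True)]), (lpbe, [(G1,True),(G2,True)]), (lpga, [(G2,False),(G1,True),(G2,True)])]) [(unitL 13), (unitL 9), (unitL 14)] lone vA19" by code_simp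
qed

lemma chA32: "braid_eq [(G2,True),(G1,True),(G1,True),(G1,False)] [(G2,True),(G1,True)]"
  apply (rule be_del[where u="[(G2,True),(G1,True)]" and g=G1 and e=True and v="[]", simplified])
  apply (rule braid_eq.refl)
  done

lemma FA32: "grp (abs_braid3 [(G2,True),(G1,True),(G1,True),(G1,False)]) - linA bsA (unitL 5) \<in> C3_ideal"
  using BA5 abs_eqI[OF chA32] by simp

lemma chA33: "braid_eq [(G2,True),(G1,True),(G1,False)] [(G2,True)]"
  apply (rule be_del[where u="[(G2,True)]" and g=G1 and e=True and v="[]", simplified])
  apply (rule braid_eq.refl)
  done

lemma FA33: "grp (abs_braid3 [(G2,True),(G1,True),(G1,False)]) - linA bsA (unitL 3) \<in> C3_ideal"
  using BA3 abs_eqI[OF chA33] by simp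

lemma EA20: "grp (abs_braid3 [(G2,True),(G1,False),(G1,False)]) - linA bsA vA20 \<in> C3_ideal"
proof (rule step[where pre="[(lone, [(G2,True),(G1,True),(G1,True),(G1,False)]), (lpal, [(G2,True),(G1,True),(G1,False)]), (lpbe, [(G2,True),(G1,False)])]" and cp="lpga" and post="[]" and xss="[(unitL 5), (unitL 3), (unitL 6)]"])
  show "relA ([(lone, [(G2,True),(G1,True),(G1,True),(G1,False)]), (lpal, [(G2,True),(G1,True),(G1,False)]), (lpbe, [(G2,True),(G1,False)])] @ (lpga, [(G2,True),(G1,False),(G1,False)]) # []) \<in> C3_ideal"
    by (rule I_eq[OF inst_quad[of "[(G2,True)]" "[(G1,False)]" G1]]) (simp add: inst_def quadL_def)
  show "list_all2 (\<lambda>cw xs. grp (abs_braid3 (snd cw)) - linA bsA xs \<in> C3_ideal) ([(lone, [(G2,True),(G1,True),(G1,True),(G1,False)]), (lpal, [(G2,True),(G1,True),(G1,False)]), (lpbe, [(G2,True),(G1,False)])] @ []) [(unitL 5), (unitL 3), (unitL 6)]"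
    using FA32 FA33 BA6 by simp
  show "ev lpga \<noteq> 0" by (rule lpga_nz)
  show "stepchk ([(lone, [(G2,True),(G1,True),(G1,True),(G1,False)]), (lpal, [(G2,True),(G1,True),(G1,False)]), (lpbe, [(G2,True),(G1,False)])] @ []) [(unitL 5), (unitL 3), (unitL 6)] lpga vA20" by code_simp
qed

lemma chA34: "braid_eq [(G1,True),(G1,True),(G1,False)] [(G1,True)]"
  apply (rule be_del[where u="[(G1,True)]" and g=G1 and e=True and v="[]", simplified])
  apply (rule braid_eq.refl)
  done

lemma FA34: "grp (abs_braid3 [(G1,True),(G1,True),(G1,False)]) - linA bsA (unitL 1) \<in> C3_ideal"
  using BA1 abs_eqI[OF chA34] by simp

lemma chA35: "braid_eq [(G1,True),(G1,False)] []"
  apply (rule be_del[where u="[]" and g=G1 and e=True and v="[]", simplified])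
  apply (rule braid_eq.refl)
  done

lemma FA35: "grp (abs_braid3 [(G1,True),(G1,False)]) - linA bsA (unitL 0) \<in> C3_ideal"
  using BA0 abs_eqI[OF chA35] by simp

lemma EA21: "grp (abs_braid3 [(G1,False),(G1,False)]) - linA bsA vA21 \<in> C3_ideal"
proof (rule step[where pre="[(lone, [(G1,True),(G1,True),(G1,False)]), (lpal, [(G1,True),(G1,False)]), (lpbe, [(G1,False)])]" and cp="lpga" and post="[]" and xss="[(unitL 1), (unitL 0), (unitL 2)]"])
  show "relA ([(lone, [(G1,True),(G1,True),(G1,False)]), (lpal, [(G1,True),(G1,False)]), (lpbe, [(G1,False)])] @ (lpga, [(G1,False),(G1,False)]) # []) \<in> C3_ideal"
    by (rule I_eq[OF inst_quad[of "[]" "[(G1,False)]" G1]]) (simp add: inst_def quadL_def)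
  show "list_all2 (\<lambda>cw xs. grp (abs_braid3 (snd cw)) - linA bsA xs \<in> C3_ideal) ([(lone, [(G1,True),(G1,True),(G1,False)]), (lpal, [(G1,True),(G1,False)]), (lpbe, [(G1,False)])] @ []) [(unitL 1), (unitL 0), (unitL 2)]"
    using FA34 FA35 BA2 by simp
  show "ev lpga \<noteq> 0" by (rule lpga_nz)
  show "stepchk ([(lone, [(G1,True),(G1,True),(G1,False)]), (lpal, [(G1,True),(G1,False)]), (lpbe, [(G1,False)])] @ []) [(unitL 1), (unitL 0), (unitL 2)] lpga vA21" by code_simp
qed

lemma chA36: "braid_eq [(G2,False),(G1,True),(G1,True),(G1,False)] [(G2,False),(G1,True)]"
  apply (rule be_del[where u="[(G2,False),(G1,True)]" and g=G1 and e=True and v="[]", simplified])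
  apply (rule braid_eq.refl)
  done

lemma FA36: "grp (abs_braid3 [(G2,False),(G1,True),(G1,True),(G1,False)]) - linA bsA (unitL 7) \<in> C3_ideal"
  using BA7 abs_eqI[OF chA36] by simp

lemma chA37: "braid_eq [(G2,False),(G1,True),(G1,False)] [(G2,False)]"
  apply (rule be_del[where u="[(G2,False)]" and g=G1 and e=True and v="[]", simplified])
  apply (rule braid_eq.refl)
  done

lemma FA37: "grp (abs_braid3 [(G2,False),(G1,True),(G1,False)]) - linA bsA (unitL 4) \<in> C3_ideal"
  using BA4 abs_eqI[OF chA37] by simp

lemma EA22: "grp (abs_braid3 [(G2,False),(G1,False),(G1,False)]) - linA bsA vA22 \<in> C3_ideal"
proof (rule step[where pre="[(lone, [(G2,False),(G1,True),(G1,True),(G1,False)]), (lpal, [(G2,False),(G1,True),(G1,False)]), (lpbe, [(G2,False),(G1,False)])]" and cp="lpga" and post="[]" and xss="[(unitL 7), (unitL 4), (unitL 8)]"])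
  show "relA ([(lone, [(G2,False),(G1,True),(G1,True),(G1,False)]), (lpal, [(G2,False),(G1,True),(G1,False)]), (lpbe, [(G2,False),(G1,False)])] @ (lpga, [(G2,False),(G1,False),(G1,False)]) # []) \<in> C3_ideal"
    by (rule I_eq[OF inst_quad[of "[(G2,False)]" "[(G1,False)]" G1]]) (simp add: inst_def quadL_def)
  show "list_all2 (\<lambda>cw xs. grp (abs_braid3 (snd cw)) - linA bsA xs \<in> C3_ideal) ([(lone, [(G2,False),(G1,True),(G1,True),(G1,False)]), (lpal, [(G2,False),(G1,True),(G1,False)]), (lpbe, [(G2,False),(G1,False)])] @ []) [(unitL 7), (unitL 4), (unitL 8)]"
    using FA36 FA37 BA8 by simp
  show "ev lpga \<noteq> 0" by (rule lpga_nz)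
  show "stepchk ([(lone, [(G2,False),(G1,True),(G1,True),(G1,False)]), (lpal, [(G2,False),(G1,True),(G1,False)]), (lpbe, [(G2,False),(G1,False)])] @ []) [(unitL 7), (unitL 4), (unitL 8)] lpga vA22" by code_simp
qed

lemma EA23: "grp (abs_braid3 [(G2,True),(G2,True),(G1,False),(G1,False)]) - linA bsA vA23 \<in> C3_ideal"
proof (rule step[where pre="[]" and cp="lone" and post="[(lpal, [(G2,True),(G1,False),(G1,False)]), (lpbe, [(G1,False),(G1,False)]), (lpga, [(G2,False),(G1,False),(G1,False)])]" and xss="[vA20, vA21, vA22]"])
  show "relA ([] @ (lone, [(G2,True),(G2,True),(G1,False),(G1,False)]) # [(lpal, [(G2,True),(G1,False),(G1,False)]), (lpbe, [(G1,False),(G1,False)]), (lpga, [(G2,False),(G1,False),(G1,False)])]) \<in> C3_ideal"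
    by (rule I_eq[OF inst_quad[of "[]" "[(G1,False),(G1,False)]" G2]]) (simp add: inst_def quadL_def)
  show "list_all2 (\<lambda>cw xs. grp (abs_braid3 (snd cw)) - linA bsA xs \<in> C3_ideal) ([] @ [(lpal, [(G2,True),(G1,False),(G1,False)]), (lpbe, [(G1,False),(G1,False)]), (lpga, [(G2,False),(G1,False),(G1,False)])]) [vA20, vA21, vA22]"
    using EA20 EA21 EA22 by simp
  show "ev lone \<noteq> 0" by (simp add: ev_lone)
  show "stepchk ([] @ [(lpal, [(G2,True),(G1,False),(G1,False)]), (lpbe, [(G1,False),(G1,False)]), (lpga, [(G2,False),(G1,False),(G1,False)])]) [vA20, vA21, vA22] lone vA23" by code_simp
qed

lemma chA38: "braid_eq [(G2,True),(G1,False),(G2,True),(G1,True),(G1,False)] [(G2,True),(G1,False),(G2,True)]"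
  apply (rule be_del[where u="[(G2,True),(G1,False),(G2,True)]" and g=G1 and e=True and v="[]", simplified])
  apply (rule braid_eq.refl)
  done

lemma FA38: "grp (abs_braid3 [(G2,True),(G1,False),(G2,True),(G1,True),(G1,False)]) - linA bsA vA18 \<in> C3_ideal"
  using EA18 abs_eqI[OF chA38] by simp

lemma chA39: "braid_eq [(G2,True),(G1,True),(G2,True),(G1,False),(G1,False)] [(G1,True),(G2,True),(G1,False)]"
  apply (rule be_bb[where u="[]" and v="[(G1,False),(G1,False)]", simplified])
  apply (rule be_del[where u="[(G1,True),(G2,True)]" and g=G1 and e=True and v="[(G1,False)]", simplified])
  apply (rule braid_eq.refl)
  done

lemma FA39: "grp (abs_braid3 [(G2,True),(G1,True),(G2,True),(G1,False),(G1,False)]) - linA bsA (unitL 14) \<in> C3_ideal"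
  using BA14 abs_eqI[OF chA39] by simp

lemma chA40: "braid_eq [(G2,True),(G1,False),(G2,False),(G1,True),(G1,False)] [(G1,False),(G2,False),(G1,True)]"
  apply (rule be_del[where u="[(G2,True),(G1,False),(G2,False)]" and g=G1 and e=True and v="[]", simplified])
  apply (rule be_ins[where u="[]" and g=G1 and e=False and v="[(G2,True),(G1,False),(G2,False)]", simplified])
  apply (rule be_ins[where u="[(G1,False)]" and g=G2 and e=False and v="[(G1,True),(G2,True),(G1,False),(G2,False)]", simplified])
  apply (rule be_bb[where u="[(G1,False),(G2,False)]" and v="[(G1,False),(G2,False)]", simplified])
  apply (rule be_del[where u="[(G1,False),(G2,False),(G1,True),(G2,True)]" and g=G1 and e=True and v="[(G2,False)]", simplified])
  apply (rule be_del[where u="[(G1,False),(G2,False),(G1,True)]" and g=G2 and e=True and v="[]", simplified])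
  apply (rule braid_eq.refl)
  done

lemma FA40: "grp (abs_braid3 [(G2,True),(G1,False),(G2,False),(G1,True),(G1,False)]) - linA bsA (unitL 16) \<in> C3_ideal"
  using BA16 abs_eqI[OF chA40] by simp

lemma chA41: "braid_eq [(G2,True),(G1,True),(G2,False),(G1,False),(G1,False)] [(G1,False),(G2,True),(G1,False)]"
  apply (rule be_ins[where u="[]" and g=G1 and e=False and v="[(G2,True),(G1,True),(G2,False),(G1,False),(G1,False)]", simplified])
  apply (rule be_bf[where u="[(G1,False)]" and v="[(G2,False),(G1,False),(G1,False)]", simplified])
  apply (rule be_del[where u="[(G1,False),(G2,True),(G1,True)]" and g=G2 and e=True and v="[(G1,False),(G1,False)]", simplified])
  apply (rule be_del[where u="[(G1,False),(G2,True)]" and g=G1 and e=True and v="[(G1,False)]", simplified])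
  apply (rule braid_eq.refl)
  done

lemma FA41: "grp (abs_braid3 [(G2,True),(G1,True),(G2,False),(G1,False),(G1,False)]) - linA bsA (unitL 18) \<in> C3_ideal"
  using BA18 abs_eqI[OF chA41] by simp

lemma chA42: "braid_eq [(G2,True),(G1,False),(G2,False),(G1,False)] [(G1,False),(G2,False)]"
  apply (rule be_ins[where u="[]" and g=G1 and e=False and v="[(G2,True),(G1,False),(G2,False),(G1,False)]", simplified])
  apply (rule be_ins[where u="[(G1,False)]" and g=G2 and e=False and v="[(G1,True),(G2,True),(G1,False),(G2,False),(G1,False)]", simplified])
  apply (rule be_bb[where u="[(G1,False),(G2,False)]" and v="[(G1,False),(G2,False),(G1,False)]", simplified])
  apply (rule be_del[where u="[(G1,False),(G2,False),(G1,True),(G2,True)]" and g=G1 and e=True and v="[(G2,False),(G1,False)]", simplified])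
  apply (rule be_del[where u="[(G1,False),(G2,False),(G1,True)]" and g=G2 and e=True and v="[(G1,False)]", simplified])
  apply (rule be_del[where u="[(G1,False),(G2,False)]" and g=G1 and e=True and v="[]", simplified])
  apply (rule braid_eq.refl)
  done

lemma FA42: "grp (abs_braid3 [(G2,True),(G1,False),(G2,False),(G1,False)]) - linA bsA (unitL 12) \<in> C3_ideal"
  using BA12 abs_eqI[OF chA42] by simp

lemma chA43: "braid_eq [(G2,True),(G2,True),(G1,True),(G1,False)] [(G2,True),(G2,True)]"
  apply (rule be_del[where u="[(G2,True),(G2,True)]" and g=G1 and e=True and v="[]", simplified])
  apply (rule braid_eq.refl)
  done

lemma FA43: "grp (abs_braid3 [(G2,True),(G2,True),(G1,True),(G1,False)]) - linA bsA vA13 \<in> C3_ideal"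
  using EA13 abs_eqI[OF chA43] by simp

lemma chA44: "braid_eq [(G2,True),(G2,False),(G1,True),(G1,False)] []"
  apply (rule be_del[where u="[]" and g=G2 and e=True and v="[(G1,True),(G1,False)]", simplified])
  apply (rule be_del[where u="[]" and g=G1 and e=True and v="[]", simplified])
  apply (rule braid_eq.refl)
  done

lemma FA44: "grp (abs_braid3 [(G2,True),(G2,False),(G1,True),(G1,False)]) - linA bsA (unitL 0) \<in> C3_ideal"
  using BA0 abs_eqI[OF chA44] by simp

lemma chA45: "braid_eq [(G2,True),(G2,False),(G1,False),(G1,False)] [(G1,False),(G1,False)]"
  apply (rule be_del[where u="[]" and g=G2 and e=True and v="[(G1,False),(G1,False)]", simplified])
  apply (rule braid_eq.refl)
  done

lemma FA45: "grp (abs_braid3 [(G2,True),(G2,False),(G1,False),(G1,False)]) - linA bsA vA21 \<in> C3_ideal"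
  using EA21 abs_eqI[OF chA45] by simp

lemma EA24: "grp (abs_braid3 [(G2,True),(G1,False),(G2,True),(G1,False)]) - linA bsA vA24 \<in> C3_ideal"
proof (rule step[where pre="[(lone, [(G2,True),(G1,False),(G2,True),(G1,True),(G1,False)]), (lmone, [(G2,True),(G1,True),(G2,True),(G1,False),(G1,False)]), (lmone, [(G2,True),(G1,False),(G2,False),(G1,True),(G1,False)]), (lone, [(G2,True),(G1,True),(G2,False),(G1,False),(G1,False)]), (lmone, [(G2,True),(G1,True),(G2,True),(G1,False)]), (lone, [(G2,True),(G1,True),(G2,False),(G1,False)])]" and cp="lone" and post="[(lmone, [(G2,True),(G1,False),(G2,False),(G1,False)]), (lone, [(G2,True),(G2,True),(G1,True),(G1,False)]), (lmone, [(G2,True),(G2,True),(G1,False),(G1,False)]), (lmone, [(G2,True),(G2,False),(G1,True),(G1,False)]), (lone, [(G2,True),(G2,False),(G1,False),(G1,False)])]" and xss="[vA18, (unitL 14), (unitL 16), (unitL 18), (unitL 9), (unitL 10), (unitL 12), vA13, vA23, (unitL 0), vA21]"])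
  show "relA ([(lone, [(G2,True),(G1,False),(G2,True),(G1,True),(G1,False)]), (lmone, [(G2,True),(G1,True),(G2,True),(G1,False),(G1,False)]), (lmone, [(G2,True),(G1,False),(G2,False),(G1,True),(G1,False)]), (lone, [(G2,True),(G1,True),(G2,False),(G1,False),(G1,False)]), (lmone, [(G2,True),(G1,True),(G2,True),(G1,False)]), (lone, [(G2,True),(G1,True),(G2,False),(G1,False)])] @ (lone, [(G2,True),(G1,False),(G2,True),(G1,False)]) # [(lmone, [(G2,True),(G1,False),(G2,False),(G1,False)]), (lone, [(G2,True),(G2,True),(G1,True),(G1,False)]), (lmone, [(G2,True),(G2,True),(G1,False),(G1,False)]), (lmone, [(G2,True),(G2,False),(G1,True),(G1,False)]), (lone, [(G2,True),(G2,False),(G1,False),(G1,False)])]) \<in> C3_ideal"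
    by (rule I_eq[OF inst_cub[of "[(G2,True)]" "[(G1,False)]"]]) (simp add: inst_def cub12L_def)
  show "list_all2 (\<lambda>cw xs. grp (abs_braid3 (snd cw)) - linA bsA xs \<in> C3_ideal) ([(lone, [(G2,True),(G1,False),(G2,True),(G1,True),(G1,False)]), (lmone, [(G2,True),(G1,True),(G2,True),(G1,False),(G1,False)]), (lmone, [(G2,True),(G1,False),(G2,False),(G1,True),(G1,False)]), (lone, [(G2,True),(G1,True),(G2,False),(G1,False),(G1,False)]), (lmone, [(G2,True),(G1,True),(G2,True),(G1,False)]), (lone, [(G2,True),(G1,True),(G2,False),(G1,False)])] @ [(lmone, [(G2,True),(G1,False),(G2,False),(G1,False)]), (lone, [(G2,True),(G2,True),(G1,True),(G1,False)]), (lmone, [(G2,True),(G2,True),(G1,False),(G1,False)]), (lmone, [(G2,True),(G2,False),(G1,True),(G1,False)]), (lone, [(G2,True),(G2,False),(G1,False),(G1,False)])]) [vA18, (unitL 14), (unitL 16), (unitL 18), (unitL 9), (unitL 10), (unitL 12), vA13, vA23, (unitL 0), vA21]"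
    using FA38 FA39 FA40 FA41 FA25 FA27 FA42 FA43 EA23 FA44 FA45 by simp
  show "ev lone \<noteq> 0" by (simp add: ev_lone)
  show "stepchk ([(lone, [(G2,True),(G1,False),(G2,True),(G1,True),(G1,False)]), (lmone, [(G2,True),(G1,True),(G2,True),(G1,False),(G1,False)]), (lmone, [(G2,True),(G1,False),(G2,False),(G1,True),(G1,False)]), (lone, [(G2,True),(G1,True),(G2,False),(G1,False),(G1,False)]), (lmone, [(G2,True),(G1,True),(G2,True),(G1,False)]), (lone, [(G2,True),(G1,True),(G2,False),(G1,False)])] @ [(lmone, [(G2,True),(G1,False),(G2,False),(G1,False)]), (lone, [(G2,True),(G2,True),(G1,True),(G1,False)]), (lmone, [(G2,True),(G2,True),(G1,False),(G1,False)]), (lmone, [(G2,True),(G2,False),(G1,True),(G1,False)]), (lone, [(G2,True),(G2,False),(G1,False),(G1,False)])]) [vA18, (unitL 14), (unitL 16), (unitL 18), (unitL 9), (unitL 10), (unitL 12), vA13, vA23, (unitL 0), vA21] lone vA24" by code_simp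
qed

lemma TA_a_0: "grp (abs_braid3 ((G1,True) # bsA ! 0)) - linA bsA (CA G1 True ! 0) \<in> C3_ideal"
proof -
  have "CA G1 True ! 0 = (unitL 1)" by code_simp
  moreover have "(G1,True) # bsA ! 0 = [(G1,True)]" by (simp add: bsA_def)
  ultimately show ?thesis using BA1 by simp
qed

lemma TA_a_1: "grp (abs_braid3 ((G1,True) # bsA ! 1)) - linA bsA (CA G1 True ! 1) \<in> C3_ideal"
proof -
  have "CA G1 True ! 1 = vA0" by code_simp
  moreover have "(G1,True) # bsA ! 1 = [(G1,True),(G1,True)]" by (simp add: bsA_def)
  ultimately show ?thesis using EA0 by simp
qed

lemma TA_a_2: "grp (abs_braid3 ((G1,True) # bsA ! 2)) - linA bsA (CA G1 True ! 2) \<in> C3_ideal"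
proof -
  have "CA G1 True ! 2 = (unitL 0)" by code_simp
  moreover have "(G1,True) # bsA ! 2 = [(G1,True),(G1,False)]" by (simp add: bsA_def)
  ultimately show ?thesis using FA35 by simp
qed

lemma TA_a_3: "grp (abs_braid3 ((G1,True) # bsA ! 3)) - linA bsA (CA G1 True ! 3) \<in> C3_ideal"
proof -
  have "CA G1 True ! 3 = (unitL 9)" by code_simp
  moreover have "(G1,True) # bsA ! 3 = [(G1,True),(G2,True)]" by (simp add: bsA_def)
  ultimately show ?thesis using BA9 by simp
qed

lemma TA_a_4: "grp (abs_braid3 ((G1,True) # bsA ! 4)) - linA bsA (CA G1 True ! 4) \<in> C3_ideal"
proof -
  have "CA G1 True ! 4 = (unitL 11)" by code_simp
  moreover have "(G1,True) # bsA ! 4 = [(G1,True),(G2,False)]" by (simp add: bsA_def)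
  ultimately show ?thesis using BA11 by simp
qed

lemma TA_a_5: "grp (abs_braid3 ((G1,True) # bsA ! 5)) - linA bsA (CA G1 True ! 5) \<in> C3_ideal"
proof -
  have "CA G1 True ! 5 = (unitL 13)" by code_simp
  moreover have "(G1,True) # bsA ! 5 = [(G1,True),(G2,True),(G1,True)]" by (simp add: bsA_def)
  ultimately show ?thesis using BA13 by simp
qed

lemma TA_a_6: "grp (abs_braid3 ((G1,True) # bsA ! 6)) - linA bsA (CA G1 True ! 6) \<in> C3_ideal"
proof -
  have "CA G1 True ! 6 = (unitL 14)" by code_simp
  moreover have "(G1,True) # bsA ! 6 = [(G1,True),(G2,True),(G1,False)]" by (simp add: bsA_def)
  ultimately show ?thesis using BA14 by simp
qed

lemma TA_a_7: "grp (abs_braid3 ((G1,True) # bsA ! 7)) - linA bsA (CA G1 True ! 7) \<in> C3_ideal"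
proof -
  have "CA G1 True ! 7 = vA5" by code_simp
  moreover have "(G1,True) # bsA ! 7 = [(G1,True),(G2,False),(G1,True)]" by (simp add: bsA_def)
  ultimately show ?thesis using EA5 by simp
qed

lemma TA_a_8: "grp (abs_braid3 ((G1,True) # bsA ! 8)) - linA bsA (CA G1 True ! 8) \<in> C3_ideal"
proof -
  have "CA G1 True ! 8 = (unitL 15)" by code_simp
  moreover have "(G1,True) # bsA ! 8 = [(G1,True),(G2,False),(G1,False)]" by (simp add: bsA_def)
  ultimately show ?thesis using BA15 by simp
qed

lemma TA_a_9: "grp (abs_braid3 ((G1,True) # bsA ! 9)) - linA bsA (CA G1 True ! 9) \<in> C3_ideal"
proof -
  have "CA G1 True ! 9 = vA3" by code_simp
  moreover have "(G1,True) # bsA ! 9 = [(G1,True),(G1,True),(G2,True)]" by (simp add: bsA_def)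
  ultimately show ?thesis using EA3 by simp
qed

lemma TA_a_10: "grp (abs_braid3 ((G1,True) # bsA ! 10)) - linA bsA (CA G1 True ! 10) \<in> C3_ideal"
proof -
  have "CA G1 True ! 10 = (unitL 3)" by code_simp
  moreover have "(G1,True) # bsA ! 10 = [(G1,True),(G1,False),(G2,True)]" by (simp add: bsA_def)
  ultimately show ?thesis using FA3 by simp
qed

lemma TA_a_11: "grp (abs_braid3 ((G1,True) # bsA ! 11)) - linA bsA (CA G1 True ! 11) \<in> C3_ideal"
proof -
  have "CA G1 True ! 11 = vA4" by code_simp
  moreover have "(G1,True) # bsA ! 11 = [(G1,True),(G1,True),(G2,False)]" by (simp add: bsA_def)
  ultimately show ?thesis using EA4 by simp
qed

lemma TA_a_12: "grp (abs_braid3 ((G1,True) # bsA ! 12)) - linA bsA (CA G1 True ! 12) \<in> C3_ideal"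
proof -
  have "CA G1 True ! 12 = (unitL 4)" by code_simp
  moreover have "(G1,True) # bsA ! 12 = [(G1,True),(G1,False),(G2,False)]" by (simp add: bsA_def)
  ultimately show ?thesis using FA4 by simp
qed

lemma TA_a_13: "grp (abs_braid3 ((G1,True) # bsA ! 13)) - linA bsA (CA G1 True ! 13) \<in> C3_ideal"
proof -
  have "CA G1 True ! 13 = vA7" by code_simp
  moreover have "(G1,True) # bsA ! 13 = [(G1,True),(G1,True),(G2,True),(G1,True)]" by (simp add: bsA_def)
  ultimately show ?thesis using EA7 by simp
qed

lemma TA_a_14: "grp (abs_braid3 ((G1,True) # bsA ! 14)) - linA bsA (CA G1 True ! 14) \<in> C3_ideal"
proof -
  have "CA G1 True ! 14 = vA1" by code_simp
  moreover have "(G1,True) # bsA ! 14 = [(G1,True),(G1,True),(G2,True),(G1,False)]" by (simp add: bsA_def)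
  ultimately show ?thesis using EA1 by simp
qed

lemma TA_a_15: "grp (abs_braid3 ((G1,True) # bsA ! 15)) - linA bsA (CA G1 True ! 15) \<in> C3_ideal"
proof -
  have "CA G1 True ! 15 = vA2" by code_simp
  moreover have "(G1,True) # bsA ! 15 = [(G1,True),(G1,True),(G2,False),(G1,False)]" by (simp add: bsA_def)
  ultimately show ?thesis using EA2 by simp
qed

lemma TA_a_16: "grp (abs_braid3 ((G1,True) # bsA ! 16)) - linA bsA (CA G1 True ! 16) \<in> C3_ideal"
proof -
  have "CA G1 True ! 16 = (unitL 7)" by code_simp
  moreover have "(G1,True) # bsA ! 16 = [(G1,True),(G1,False),(G2,False),(G1,True)]" by (simp add: bsA_def)
  ultimately show ?thesis using FA2 by simp
qed

lemma chA46: "braid_eq [(G1,True),(G1,False),(G2,False),(G1,False)] [(G2,False),(G1,False)]"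
  apply (rule be_del[where u="[]" and g=G1 and e=True and v="[(G2,False),(G1,False)]", simplified])
  apply (rule braid_eq.refl)
  done

lemma FA46: "grp (abs_braid3 [(G1,True),(G1,False),(G2,False),(G1,False)]) - linA bsA (unitL 8) \<in> C3_ideal"
  using BA8 abs_eqI[OF chA46] by simp

lemma TA_a_17: "grp (abs_braid3 ((G1,True) # bsA ! 17)) - linA bsA (CA G1 True ! 17) \<in> C3_ideal"
proof -
  have "CA G1 True ! 17 = (unitL 8)" by code_simp
  moreover have "(G1,True) # bsA ! 17 = [(G1,True),(G1,False),(G2,False),(G1,False)]" by (simp add: bsA_def)
  ultimately show ?thesis using FA46 by simp
qed

lemma chA47: "braid_eq [(G1,True),(G1,False),(G2,True),(G1,False)] [(G2,True),(G1,False)]"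
  apply (rule be_del[where u="[]" and g=G1 and e=True and v="[(G2,True),(G1,False)]", simplified])
  apply (rule braid_eq.refl)
  done

lemma FA47: "grp (abs_braid3 [(G1,True),(G1,False),(G2,True),(G1,False)]) - linA bsA (unitL 6) \<in> C3_ideal"
  using BA6 abs_eqI[OF chA47] by simp

lemma TA_a_18: "grp (abs_braid3 ((G1,True) # bsA ! 18)) - linA bsA (CA G1 True ! 18) \<in> C3_ideal"
proof -
  have "CA G1 True ! 18 = (unitL 6)" by code_simp
  moreover have "(G1,True) # bsA ! 18 = [(G1,True),(G1,False),(G2,True),(G1,False)]" by (simp add: bsA_def)
  ultimately show ?thesis using FA47 by simp
qed

lemma TA_a_19: "grp (abs_braid3 ((G1,True) # bsA ! 19)) - linA bsA (CA G1 True ! 19) \<in> C3_ideal"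
proof -
  have "CA G1 True ! 19 = vA12" by code_simp
  moreover have "(G1,True) # bsA ! 19 = [(G1,True),(G2,False),(G1,True),(G2,False)]" by (simp add: bsA_def)
  ultimately show ?thesis using EA12 by simp
qed

lemma TA_b_0: "grp (abs_braid3 ((G2,True) # bsA ! 0)) - linA bsA (CA G2 True ! 0) \<in> C3_ideal"
proof -
  have "CA G2 True ! 0 = (unitL 3)" by code_simp
  moreover have "(G2,True) # bsA ! 0 = [(G2,True)]" by (simp add: bsA_def)
  ultimately show ?thesis using BA3 by simp
qed

lemma TA_b_1: "grp (abs_braid3 ((G2,True) # bsA ! 1)) - linA bsA (CA G2 True ! 1) \<in> C3_ideal"
proof -
  have "CA G2 True ! 1 = (unitL 5)" by code_simp
  moreover have "(G2,True) # bsA ! 1 = [(G2,True),(G1,True)]" by (simp add: bsA_def)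
  ultimately show ?thesis using BA5 by simp
qed

lemma TA_b_2: "grp (abs_braid3 ((G2,True) # bsA ! 2)) - linA bsA (CA G2 True ! 2) \<in> C3_ideal"
proof -
  have "CA G2 True ! 2 = (unitL 6)" by code_simp
  moreover have "(G2,True) # bsA ! 2 = [(G2,True),(G1,False)]" by (simp add: bsA_def)
  ultimately show ?thesis using BA6 by simp
qed

lemma TA_b_3: "grp (abs_braid3 ((G2,True) # bsA ! 3)) - linA bsA (CA G2 True ! 3) \<in> C3_ideal"
proof -
  have "CA G2 True ! 3 = vA13" by code_simp
  moreover have "(G2,True) # bsA ! 3 = [(G2,True),(G2,True)]" by (simp add: bsA_def)
  ultimately show ?thesis using EA13 by simp
qed

lemma TA_b_4: "grp (abs_braid3 ((G2,True) # bsA ! 4)) - linA bsA (CA G2 True ! 4) \<in> C3_ideal"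
proof -
  have "CA G2 True ! 4 = (unitL 0)" by code_simp
  moreover have "(G2,True) # bsA ! 4 = [(G2,True),(G2,False)]" by (simp add: bsA_def)
  ultimately show ?thesis using FA8 by simp
qed

lemma TA_b_5: "grp (abs_braid3 ((G2,True) # bsA ! 5)) - linA bsA (CA G2 True ! 5) \<in> C3_ideal"
proof -
  have "CA G2 True ! 5 = vA14" by code_simp
  moreover have "(G2,True) # bsA ! 5 = [(G2,True),(G2,True),(G1,True)]" by (simp add: bsA_def)
  ultimately show ?thesis using EA14 by simp
qed

lemma TA_b_6: "grp (abs_braid3 ((G2,True) # bsA ! 6)) - linA bsA (CA G2 True ! 6) \<in> C3_ideal"
proof -
  have "CA G2 True ! 6 = vA15" by code_simp
  moreover have "(G2,True) # bsA ! 6 = [(G2,True),(G2,True),(G1,False)]" by (simp add: bsA_def)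
  ultimately show ?thesis using EA15 by simp
qed

lemma TA_b_7: "grp (abs_braid3 ((G2,True) # bsA ! 7)) - linA bsA (CA G2 True ! 7) \<in> C3_ideal"
proof -
  have "CA G2 True ! 7 = (unitL 1)" by code_simp
  moreover have "(G2,True) # bsA ! 7 = [(G2,True),(G2,False),(G1,True)]" by (simp add: bsA_def)
  ultimately show ?thesis using FA29 by simp
qed

lemma TA_b_8: "grp (abs_braid3 ((G2,True) # bsA ! 8)) - linA bsA (CA G2 True ! 8) \<in> C3_ideal"
proof -
  have "CA G2 True ! 8 = (unitL 2)" by code_simp
  moreover have "(G2,True) # bsA ! 8 = [(G2,True),(G2,False),(G1,False)]" by (simp add: bsA_def)
  ultimately show ?thesis using FA30 by simp
qed

lemma TA_b_9: "grp (abs_braid3 ((G2,True) # bsA ! 9)) - linA bsA (CA G2 True ! 9) \<in> C3_ideal"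
proof -
  have "CA G2 True ! 9 = (unitL 13)" by code_simp
  moreover have "(G2,True) # bsA ! 9 = [(G2,True),(G1,True),(G2,True)]" by (simp add: bsA_def)
  ultimately show ?thesis using FA28 by simp
qed

lemma TA_b_10: "grp (abs_braid3 ((G2,True) # bsA ! 10)) - linA bsA (CA G2 True ! 10) \<in> C3_ideal"
proof -
  have "CA G2 True ! 10 = vA18" by code_simp
  moreover have "(G2,True) # bsA ! 10 = [(G2,True),(G1,False),(G2,True)]" by (simp add: bsA_def)
  ultimately show ?thesis using EA18 by simp
qed

lemma TA_b_11: "grp (abs_braid3 ((G2,True) # bsA ! 11)) - linA bsA (CA G2 True ! 11) \<in> C3_ideal"
proof -
  have "CA G2 True ! 11 = vA6" by code_simp
  moreover have "(G2,True) # bsA ! 11 = [(G2,True),(G1,True),(G2,False)]" by (simp add: bsA_def)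
  ultimately show ?thesis using FA21 by simp
qed

lemma TA_b_12: "grp (abs_braid3 ((G2,True) # bsA ! 12)) - linA bsA (CA G2 True ! 12) \<in> C3_ideal"
proof -
  have "CA G2 True ! 12 = (unitL 16)" by code_simp
  moreover have "(G2,True) # bsA ! 12 = [(G2,True),(G1,False),(G2,False)]" by (simp add: bsA_def)
  ultimately show ?thesis using FA22 by simp
qed

lemma chA48: "braid_eq [(G2,True),(G1,True),(G2,True),(G1,True)] [(G2,True),(G2,True),(G1,True),(G2,True)]"
  apply (rule be_bf[where u="[(G2,True)]" and v="[]", simplified])
  apply (rule braid_eq.refl)
  done

lemma FA48: "grp (abs_braid3 [(G2,True),(G1,True),(G2,True),(G1,True)]) - linA bsA vA19 \<in> C3_ideal"
  using EA19 abs_eqI[OF chA48] by simp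

lemma TA_b_13: "grp (abs_braid3 ((G2,True) # bsA ! 13)) - linA bsA (CA G2 True ! 13) \<in> C3_ideal"
proof -
  have "CA G2 True ! 13 = vA19" by code_simp
  moreover have "(G2,True) # bsA ! 13 = [(G2,True),(G1,True),(G2,True),(G1,True)]" by (simp add: bsA_def)
  ultimately show ?thesis using FA48 by simp
qed

lemma TA_b_14: "grp (abs_braid3 ((G2,True) # bsA ! 14)) - linA bsA (CA G2 True ! 14) \<in> C3_ideal"
proof -
  have "CA G2 True ! 14 = (unitL 9)" by code_simp
  moreover have "(G2,True) # bsA ! 14 = [(G2,True),(G1,True),(G2,True),(G1,False)]" by (simp add: bsA_def)
  ultimately show ?thesis using FA25 by simp
qed

lemma TA_b_15: "grp (abs_braid3 ((G2,True) # bsA ! 15)) - linA bsA (CA G2 True ! 15) \<in> C3_ideal"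
proof -
  have "CA G2 True ! 15 = (unitL 10)" by code_simp
  moreover have "(G2,True) # bsA ! 15 = [(G2,True),(G1,True),(G2,False),(G1,False)]" by (simp add: bsA_def)
  ultimately show ?thesis using FA27 by simp
qed

lemma TA_b_16: "grp (abs_braid3 ((G2,True) # bsA ! 16)) - linA bsA (CA G2 True ! 16) \<in> C3_ideal"
proof -
  have "CA G2 True ! 16 = vA17" by code_simp
  moreover have "(G2,True) # bsA ! 16 = [(G2,True),(G1,False),(G2,False),(G1,True)]" by (simp add: bsA_def)
  ultimately show ?thesis using FA26 by simp
qed

lemma TA_b_17: "grp (abs_braid3 ((G2,True) # bsA ! 17)) - linA bsA (CA G2 True ! 17) \<in> C3_ideal"
proof -
  have "CA G2 True ! 17 = (unitL 12)" by code_simp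
  moreover have "(G2,True) # bsA ! 17 = [(G2,True),(G1,False),(G2,False),(G1,False)]" by (simp add: bsA_def)
  ultimately show ?thesis using FA42 by simp
qed

lemma TA_b_18: "grp (abs_braid3 ((G2,True) # bsA ! 18)) - linA bsA (CA G2 True ! 18) \<in> C3_ideal"
proof -
  have "CA G2 True ! 18 = vA24" by code_simp
  moreover have "(G2,True) # bsA ! 18 = [(G2,True),(G1,False),(G2,True),(G1,False)]" by (simp add: bsA_def)
  ultimately show ?thesis using EA24 by simp
qed

lemma chA49: "braid_eq [(G2,True),(G2,False),(G1,True),(G2,False)] [(G1,True),(G2,False)]"
  apply (rule be_del[where u="[]" and g=G2 and e=True and v="[(G1,True),(G2,False)]", simplified])
  apply (rule braid_eq.refl)
  done

lemma FA49: "grp (abs_braid3 [(G2,True),(G2,False),(G1,True),(G2,False)]) - linA bsA (unitL 11) \<in> C3_ideal"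
  using BA11 abs_eqI[OF chA49] by simp

lemma TA_b_19: "grp (abs_braid3 ((G2,True) # bsA ! 19)) - linA bsA (CA G2 True ! 19) \<in> C3_ideal"
proof -
  have "CA G2 True ! 19 = (unitL 11)" by code_simp
  moreover have "(G2,True) # bsA ! 19 = [(G2,True),(G2,False),(G1,True),(G2,False)]" by (simp add: bsA_def)
  ultimately show ?thesis using FA49 by simp
qed

lemma aBa_A: "\<exists>d. grp (abs_braid3 [(G1,True),(G2,False),(G1,True)]) - linQ bsA d \<in> C3_ideal \<and> d 18 \<noteq> 0"
proof -
  have "vA5 ! 18 = lpga" by code_simp
  then show ?thesis using EA5 lpga_nz by (intro exI[of _ "\<lambda>j. ev (vA5 ! j)"]) (simp add: linA_def)
qed

lemma wfcA: "wfc CA" by code_simp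
lemma chkA1: "chk CA (invL G1 True)" by code_simp
lemma chkA2: "chk CA (invL G1 False)" by code_simp
lemma chkA3: "chk CA (invL G2 True)" by code_simp
lemma chkA4: "chk CA (invL G2 False)" by code_simp
lemma chkA5: "chk CA brL" by code_simp
lemma chkA6: "chk CA (quadL G1)" by code_simp
lemma chkA7: "chk CA (quadL G2)" by code_simp
lemma chkA8: "chk CA cub12L" by code_simp
lemma goodCA: "goodC CA"
  unfolding goodC_def using wfcA chkA1 chkA2 chkA3 chkA4 chkA5 chkA6 chkA7 chkA8 by blast
lemma unitsA: "map (\<lambda>w. RwL CA w (unitL 0)) bsA = units20" by code_simp
lemma len_bsA: "length bsA = 20" by (simp add: bsA_def)
lemma bsA0: "bsA ! 0 = []" by (simp add: bsA_def)

lemma all20: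
  assumes "P 0" "P 1" "P 2" "P 3" "P 4" "P 5" "P 6" "P 7" "P 8" "P 9" "P 10" "P 11" "P 12" "P 13"
    "P 14" "P 15" "P 16" "P 17" "P 18" "P 19"
  shows "\<forall>i<(20::nat). P i"
proof (intro allI impI)
  fix i :: nat assume "i < 20"
  then have "i = 0 \<or> i = 1 \<or> i = 2 \<or> i = 3 \<or> i = 4 \<or> i = 5 \<or> i = 6 \<or> i = 7 \<or> i = 8 \<or> i = 9 \<or>
    i = 10 \<or> i = 11 \<or> i = 12 \<or> i = 13 \<or> i = 14 \<or> i = 15 \<or> i = 16 \<or> i = 17 \<or> i = 18 \<or> i = 19" by arith
  then show "P i" using assms by auto
qed

lemma tabA1: "\<forall>i<20. grp (abs_braid3 ((G1,True) # bsA ! i)) - linA bsA (CA G1 True ! i) \<in> C3_ideal"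
  by (rule all20) (rule TA_a_0 TA_a_1 TA_a_2 TA_a_3 TA_a_4 TA_a_5 TA_a_6 TA_a_7 TA_a_8 TA_a_9 TA_a_10
     TA_a_11 TA_a_12 TA_a_13 TA_a_14 TA_a_15 TA_a_16 TA_a_17 TA_a_18 TA_a_19)+
lemma tabA2: "\<forall>i<20. grp (abs_braid3 ((G2,True) # bsA ! i)) - linA bsA (CA G2 True ! i) \<in> C3_ideal"
  by (rule all20) (rule TA_b_0 TA_b_1 TA_b_2 TA_b_3 TA_b_4 TA_b_5 TA_b_6 TA_b_7 TA_b_8 TA_b_9 TA_b_10
     TA_b_11 TA_b_12 TA_b_13 TA_b_14 TA_b_15 TA_b_16 TA_b_17 TA_b_18 TA_b_19)+

lemma spanA: "Sp bsA a" by (rule span_generic[where C=CA, OF tabA1 tabA2 bsA0])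

lemma indA: "linQ bsA c \<in> C3_ideal \<Longrightarrow> \<forall>i<20. c i = 0"
  by (rule indep_generic[OF goodCA len_bsA unitsA]) (simp add: linQ_def)

definition bsB :: "bword list" where "bsB = bsA[18 := [(G1,True),(G2,False),(G1,True)]]"

lemma len_bsB: "length bsB = 20" by (simp add: bsB_def len_bsA)

lemma spanB: "Sp bsB a"
  and indB: "linQ bsB c \<in> C3_ideal \<Longrightarrow> \<forall>i<20. c i = 0"
proof -
  obtain d where d: "grp (abs_braid3 [(G1,True),(G2,False),(G1,True)]) - linQ bsA d \<in> C3_ideal" "d 18 \<noteq> 0"
    using aBa_A by blast
  show "Sp bsB a" unfolding bsB_def by (rule exchange(1)[OF len_bsA d spanA indA])
  show "linQ bsB c \<in> C3_ideal \<Longrightarrow> \<forall>i<20. c i = 0"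
    unfolding bsB_def by (rule exchange(2)[OF len_bsA d spanA indA])
qed

lemma basisA: "\<forall>i<20. C3_basis (sgb G1 * sg G2 * sgb G1) ! i = grp (abs_braid3 (bsA ! i))"
  by (rule all20) (simp_all add: C3_basis_def bsA_def sg_grp sgb_grp grp_app grp_nil)

lemma basisB: "\<forall>i<20. C3_basis (sg G1 * sgb G2 * sg G1) ! i = grp (abs_braid3 (bsB ! i))"
  by (rule all20) (simp_all add: C3_basis_def bsB_def bsA_def sg_grp sgb_grp grp_app grp_nil)

lemma final_generic:
  assumes b: "\<forall>i<20. C3_basis x ! i = grp (abs_braid3 (bs ! i))"
    and sp: "\<And>a. Sp bs a"
    and ind: "\<And>c. linQ bs c \<in> C3_ideal \<Longrightarrow> \<forall>i<20. c i = 0"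
  shows "length (C3_basis x) = 20
    \<and> (\<forall>a :: alg3. \<exists>c :: nat \<Rightarrow> QT.
           a - (\<Sum>i<20. scal (c i) * C3_basis x ! i) \<in> C3_ideal)
    \<and> (\<forall>c :: nat \<Rightarrow> QT.
           (\<Sum>i<20. scal (c i) * C3_basis x ! i) \<in> C3_ideal \<longrightarrow> (\<forall>i<20. c i = 0))"
proof -
  have e: "(\<Sum>i<20. scal (c i) * C3_basis x ! i) = linQ bs c" for c
    unfolding linQ_def by (rule sum.cong) (simp_all add: b)
  have l: "length (C3_basis x) = 20" by (simp add: C3_basis_def)
  show ?thesis using sp ind l unfolding e Sp_def by blast
qed

theorem corollary2p5:
  fixes x :: alg3
  assumes "x = sgb G1 * sg G2 * sgb G1 \<or> x = sg G1 * sgb G2 * sg G1"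
  shows "length (C3_basis x) = 20
    \<and> (\<forall>a :: alg3. \<exists>c :: nat \<Rightarrow> QT.
           a - (\<Sum>i<20. scal (c i) * C3_basis x ! i) \<in> C3_ideal)
    \<and> (\<forall>c :: nat \<Rightarrow> QT.
           (\<Sum>i<20. scal (c i) * C3_basis x ! i) \<in> C3_ideal \<longrightarrow> (\<forall>i<20. c i = 0))"
  using assms
proof
  assume x: "x = sgb G1 * sg G2 * sgb G1"
  show ?thesis using final_generic[OF basisA spanA indA] by (simp add: x)
next
  assume x: "x = sg G1 * sgb G2 * sg G1"
  show ?thesis using final_generic[OF basisB spanB indB] by (simp add: x)
qed

end
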